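(* Let $G$ be a finite group, $\mathbb{F}$ an algebraically closed field of characteristic $p\ge0$, $A=\mathbb{F}G$, and $V$ an $\mathbb{F}G$-module of dimension $n$. For any $p$-regular element $g\in G$, let $\mathbf{s}(g)=(\chi_{S_1}(g),\dots,\chi_{S_{\ell+1}}(g))^T\in\mathbb{C}^{\ell+1}$. Then $\mathbf{s}(g)^TM_V=\chi_V(g)\,\mathbf{s}(g)^T$ and $\mathbf{s}(g)^TL_V=(n-\chi_V(g))\,\mathbf{s}(g)^T$.
   Context: $S_1,\dots,S_{\ell+1}$ are the pairwise non-isomorphic simple $\mathbb{F}G$-modules; modules are finite-dimensional, and $G$ acts diagonally on tensor products. $M_V$ has entries $(M_V)_{i,j}=[S_j\otimes V:S_i]$ (composition multiplicities) and $L_V=nI_{\ell+1}-M_V$. An element is $p$-regular if its order is invertible in $\mathbb{F}$. Writing $\#G=p^aq$ with $\gcd(p,q)=1$ ($q=\#G$ if $p=0$) and fixing an isomorphism $\lambda\mapsto\widehat\lambda$ from $q$-th roots of unity in $\mathbb{F}$ to those in $\mathbb{C}$, the Brauer character of a module $W$ at a $p$-regular $g$ with eigenvalues $\lambda_1,\dots,\lambda_m$ on $W$ is $\chi_W(g)=\sum_i\widehat{\lambda_i}$. *)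

theory Defs
  imports "HOL-Algebra.Multiplicative_Group" "Jordan_Normal_Form.Matrix" "Jordan_Normal_Form.Char_Poly"
    "HOL-Computational_Algebra.Polynomial"
begin

text \<open>A finite-dimensional FG-module of dimension d is given (after choosing a basis)
 by a matrix representation rho : G -> GL_d(F).\<close>
definition is_rep :: "('g, 'm) monoid_scheme \<Rightarrow> nat \<Rightarrow> ('g \<Rightarrow> 'f::field mat) \<Rightarrow> bool" where
  "is_rep G d \<rho> \<longleftrightarrow>
     (\<forall>g\<in>carrier G. \<rho> g \<in> carrier_mat d d) \<and>
     \<rho> \<one>\<^bsub>G\<^esub> = 1\<^sub>m d \<and>
     (\<forall>g\<in>carrier G. \<forall>h\<in>carrier G. \<rho> (g \<otimes>\<^bsub>G\<^esub> h) = \<rho> g * \<rho> h)"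

definition is_subspace :: "nat \<Rightarrow> 'f::field vec set \<Rightarrow> bool" where
  "is_subspace d W \<longleftrightarrow> W \<subseteq> carrier_vec d \<and> 0\<^sub>v d \<in> W \<and>
     (\<forall>v\<in>W. \<forall>w\<in>W. v + w \<in> W) \<and> (\<forall>c. \<forall>v\<in>W. c \<cdot>\<^sub>v v \<in> W)"

definition is_submodule :: "('g, 'm) monoid_scheme \<Rightarrow> nat \<Rightarrow> ('g \<Rightarrow> 'f::field mat) \<Rightarrow> 'f vec set \<Rightarrow> bool" where
  "is_submodule G d \<rho> W \<longleftrightarrow> is_subspace d W \<and> (\<forall>g\<in>carrier G. \<forall>w\<in>W. \<rho> g *\<^sub>v w \<in> W)"

definition is_simple :: "('g, 'm) monoid_scheme \<Rightarrow> nat \<Rightarrow> ('g \<Rightarrow> 'f::field mat) \<Rightarrow> bool" where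
  "is_simple G d \<rho> \<longleftrightarrow> is_rep G d \<rho> \<and> d > 0 \<and>
     (\<forall>W. is_submodule G d \<rho> W \<longrightarrow> W = {0\<^sub>v d} \<or> W = carrier_vec d)"

definition rep_iso :: "('g, 'm) monoid_scheme \<Rightarrow> nat \<Rightarrow> ('g \<Rightarrow> 'f::field mat) \<Rightarrow> nat \<Rightarrow> ('g \<Rightarrow> 'f mat) \<Rightarrow> bool" where
  "rep_iso G d \<rho> e \<sigma> \<longleftrightarrow> d = e \<and>
     (\<exists>P \<in> carrier_mat d d. invertible_mat P \<and> (\<forall>g\<in>carrier G. P * \<rho> g = \<sigma> g * P))"

text \<open>The factor W'/W of submodules W \<subseteq> W' of (d,rho) is isomorphic to the module (e,sigma):
 there is a linear map P : F^d -> F^e mapping W' onto F^e, with kernel (on W') equal to W,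
 and intertwining the actions on W'.\<close>
definition factor_iso :: "('g, 'm) monoid_scheme \<Rightarrow> nat \<Rightarrow> ('g \<Rightarrow> 'f::field mat) \<Rightarrow> 'f vec set \<Rightarrow> 'f vec set
    \<Rightarrow> nat \<Rightarrow> ('g \<Rightarrow> 'f mat) \<Rightarrow> bool" where
  "factor_iso G d \<rho> W W' e \<sigma> \<longleftrightarrow>
     (\<exists>P \<in> carrier_mat e d. (\<lambda>w. P *\<^sub>v w) ` W' = carrier_vec e \<and>
        {w \<in> W'. P *\<^sub>v w = 0\<^sub>v e} = W \<and>
        (\<forall>g\<in>carrier G. \<forall>w\<in>W'. P *\<^sub>v (\<rho> g *\<^sub>v w) = \<sigma> g *\<^sub>v (P *\<^sub>v w)))"

definition is_comp_series :: "('g, 'm) monoid_scheme \<Rightarrow> nat \<Rightarrow> ('g \<Rightarrow> 'f::field mat) \<Rightarrow> nat \<Rightarrow> (nat \<Rightarrow> 'f vec set) \<Rightarrow> bool" where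
  "is_comp_series G d \<rho> k Ws \<longleftrightarrow>
     Ws 0 = {0\<^sub>v d} \<and> Ws k = carrier_vec d \<and>
     (\<forall>i\<le>k. is_submodule G d \<rho> (Ws i)) \<and>
     (\<forall>i<k. Ws i \<subset> Ws (Suc i) \<and>
        (\<forall>U. is_submodule G d \<rho> U \<and> Ws i \<subseteq> U \<and> U \<subseteq> Ws (Suc i) \<longrightarrow> U = Ws i \<or> U = Ws (Suc i)))"

text \<open>Composition multiplicity [W : S] (well defined by Jordan--Hoelder).\<close>
definition comp_mult :: "('g, 'm) monoid_scheme \<Rightarrow> nat \<Rightarrow> ('g \<Rightarrow> 'f::field mat) \<Rightarrow> nat \<Rightarrow> ('g \<Rightarrow> 'f mat) \<Rightarrow> nat" where
  "comp_mult G d \<rho> e \<sigma> = (SOME c. \<exists>k Ws. is_comp_series G d \<rho> k Ws \<and>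
       c = card {i. i < k \<and> factor_iso G d \<rho> (Ws i) (Ws (Suc i)) e \<sigma>})"

definition kron :: "'f::field mat \<Rightarrow> 'f mat \<Rightarrow> 'f mat" where
  "kron A B = mat (dim_row A * dim_row B) (dim_col A * dim_col B)
     (\<lambda>(i, j). A $$ (i div dim_row B, j div dim_col B) * B $$ (i mod dim_row B, j mod dim_col B))"

definition tensor_rep :: "('g \<Rightarrow> 'f::field mat) \<Rightarrow> ('g \<Rightarrow> 'f mat) \<Rightarrow> ('g \<Rightarrow> 'f mat)" where
  "tensor_rep \<rho> \<sigma> = (\<lambda>g. kron (\<rho> g) (\<sigma> g))"

definition p_regular :: "('g, 'm) monoid_scheme \<Rightarrow> 'f::field itself \<Rightarrow> 'g \<Rightarrow> bool" where
  "p_regular G _ g \<longleftrightarrow> g \<in> carrier G \<and> (of_nat (group.ord G g) :: 'f) \<noteq> 0"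

definition p'_part :: "nat \<Rightarrow> nat \<Rightarrow> nat" where
  "p'_part p N = (if p = 0 then N else N div p ^ multiplicity p N)"

definition brauer_char :: "('f::field \<Rightarrow> complex) \<Rightarrow> ('g \<Rightarrow> 'f mat) \<Rightarrow> 'g \<Rightarrow> complex" where
  "brauer_char hat \<rho> g =
     (\<Sum>e\<in>{x. poly (char_poly (\<rho> g)) x = 0}. of_nat (order e (char_poly (\<rho> g))) * hat e)"

definition M_mat :: "('g, 'm) monoid_scheme \<Rightarrow> (nat \<times> ('g \<Rightarrow> 'f::field mat)) list \<Rightarrow> nat \<Rightarrow> ('g \<Rightarrow> 'f mat) \<Rightarrow> nat mat" where
  "M_mat G Ss n V = mat (length Ss) (length Ss)
     (\<lambda>(i, j). comp_mult G (fst (Ss ! j) * n) (tensor_rep (snd (Ss ! j)) V) (fst (Ss ! i)) (snd (Ss ! i)))"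

definition L_mat :: "('g, 'm) monoid_scheme \<Rightarrow> (nat \<times> ('g \<Rightarrow> 'f::field mat)) list \<Rightarrow> nat \<Rightarrow> ('g \<Rightarrow> 'f mat) \<Rightarrow> int mat" where
  "L_mat G Ss n V = of_nat n \<cdot>\<^sub>m 1\<^sub>m (length Ss) - map_mat of_nat (M_mat G Ss n V)"

definition s_vec :: "('f::field \<Rightarrow> complex) \<Rightarrow> (nat \<times> ('g \<Rightarrow> 'f mat)) list \<Rightarrow> 'g \<Rightarrow> complex mat" where
  "s_vec hat Ss g = mat (length Ss) 1 (\<lambda>(i, _). brauer_char hat (snd (Ss ! i)) g)"

end

theory Submission
  imports Defs
begin

lemma mult_mat_vec_index_sum:
  assumes "i < dim_row A" "dim_vec c = dim_col A"
  shows "(A *\<^sub>v c) $ i = (\<Sum>j<dim_col A. A $$ (i,j) * c $ j)"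
  using assms by (auto simp: mult_mat_vec_def scalar_prod_def lessThan_atLeast0 intro!: sum.cong)

definition inj_mat :: "'a::field mat \<Rightarrow> bool" where
  "inj_mat A \<longleftrightarrow> (\<forall>c\<in>carrier_vec (dim_col A). A *\<^sub>v c = 0\<^sub>v (dim_row A) \<longrightarrow> c = 0\<^sub>v (dim_col A))"

lemma inj_mat_le:
  fixes A :: "'a::field mat"
  assumes A: "A \<in> carrier_mat n m" and inj: "inj_mat A"
  shows "m \<le> n"
proof (rule ccontr)
  assume "\<not> m \<le> n" hence nm: "n < m" by simp
  define B where "B = mat m m (\<lambda>(i,j). if i < n then A $$ (i,j) else (0::'a))"
  have B: "B \<in> carrier_mat m m" unfolding B_def by auto
  have "det B \<noteq> 0"
  proof
    assume "det B = 0"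
    then obtain v where v: "v \<in> carrier_vec m" "v \<noteq> 0\<^sub>v m" "B *\<^sub>v v = 0\<^sub>v m"
      using det_0_iff_vec_prod_zero[OF B] by auto
    have "A *\<^sub>v v = 0\<^sub>v n"
    proof (rule eq_vecI)
      fix i assume "i < dim_vec (0\<^sub>v n :: 'a vec)" hence i: "i < n" by simp
      have "(B *\<^sub>v v) $ i = 0" using v(3) i nm by simp
      moreover have "(B *\<^sub>v v) $ i = (A *\<^sub>v v) $ i"
      proof -
        have "(B *\<^sub>v v) $ i = (\<Sum>j<m. B $$ (i,j) * v $ j)"
          using i nm B v(1) by (subst mult_mat_vec_index_sum) auto
        also have "\<dots> = (\<Sum>j<m. A $$ (i,j) * v $ j)" using i nm by (auto simp: B_def)
        also have "\<dots> = (A *\<^sub>v v) $ i" using i A v(1) by (subst mult_mat_vec_index_sum) auto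
        finally show ?thesis .
      qed
      ultimately show "(A *\<^sub>v v) $ i = 0\<^sub>v n $ i" using i by simp
    qed (use A in simp)
    with inj A v show False unfolding inj_mat_def by auto
  qed
  moreover have "det (transpose_mat B) = 0"
  proof -
    have tB: "transpose_mat B \<in> carrier_mat m m" using B by simp
    have "transpose_mat B *\<^sub>v unit_vec m (m-1) = 0\<^sub>v m"
    proof (rule eq_vecI)
      fix i assume "i < dim_vec (0\<^sub>v m :: 'a vec)" hence i: "i < m" by simp
      have "(transpose_mat B *\<^sub>v unit_vec m (m-1)) $ i = (\<Sum>j<m. transpose_mat B $$ (i,j) * unit_vec m (m-1) $ j)"
        using i tB by (subst mult_mat_vec_index_sum) auto
      also have "\<dots> = (\<Sum>j<m. if j = m - 1 then transpose_mat B $$ (i,j) else 0)"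
        by (rule sum.cong, auto simp: unit_vec_def)
      also have "\<dots> = transpose_mat B $$ (i, m-1)" using nm by (simp add: sum.delta)
      also have "\<dots> = 0" using i nm by (simp add: B_def)
      finally show "(transpose_mat B *\<^sub>v unit_vec m (m-1)) $ i = 0\<^sub>v m $ i" using i by simp
    qed (use B in simp)
    moreover have "unit_vec m (m-1) \<noteq> (0\<^sub>v m :: 'a vec)"
    proof
      assume "unit_vec m (m-1) = (0\<^sub>v m :: 'a vec)"
      hence "unit_vec m (m-1) $ (m-1) = (0\<^sub>v m :: 'a vec) $ (m-1)" by simp
      thus False using nm by simp
    qed
    ultimately show ?thesis using det_0_iff_vec_prod_zero[OF tB] unit_vec_carrier[of m "m-1"] by blast
  qed
  ultimately show False using B by (simp add: det_transpose)
qed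

lemma sum_lessThan_add_split:
  "(\<Sum>j<a+b. f j) = (\<Sum>j<a. f j) + (\<Sum>j<b. f (a + j))" for a b :: nat
  by (induction b) (auto simp: add.assoc)

lemma mat_of_cols_append_mult:
  assumes xs: "set xs \<subseteq> carrier_vec d" and ys: "set ys \<subseteq> carrier_vec d"
    and c: "c \<in> carrier_vec (length xs + length ys)"
  shows "mat_of_cols d (xs @ ys) *\<^sub>v c =
    mat_of_cols d xs *\<^sub>v vec (length xs) (\<lambda>i. c $ i) + mat_of_cols d ys *\<^sub>v vec (length ys) (\<lambda>i. c $ (length xs + i))"
proof (rule eq_vecI)
  fix i assume "i < dim_vec (mat_of_cols d xs *\<^sub>v vec (length xs) (\<lambda>i. c $ i) + mat_of_cols d ys *\<^sub>v vec (length ys) (\<lambda>i. c $ (length xs + i)))"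
  hence i: "i < d" by simp
  have "(mat_of_cols d (xs @ ys) *\<^sub>v c) $ i = (\<Sum>j<length xs + length ys. (xs@ys) ! j $ i * c $ j)"
    using i c by (subst mult_mat_vec_index_sum) (auto simp: mat_of_cols_def)
  also have "\<dots> = (\<Sum>j<length xs. xs ! j $ i * c $ j) + (\<Sum>j<length ys. ys ! j $ i * c $ (length xs + j))"
    by (subst sum_lessThan_add_split) (auto simp: nth_append intro!: sum.cong)
  also have "(\<Sum>j<length xs. xs ! j $ i * c $ j) = (mat_of_cols d xs *\<^sub>v vec (length xs) (\<lambda>i. c $ i)) $ i"
    using i by (subst mult_mat_vec_index_sum) (auto simp: mat_of_cols_def)
  also have "(\<Sum>j<length ys. ys ! j $ i * c $ (length xs + j)) = (mat_of_cols d ys *\<^sub>v vec (length ys) (\<lambda>i. c $ (length xs + i))) $ i"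
    using i by (subst mult_mat_vec_index_sum) (auto simp: mat_of_cols_def)
  finally show "(mat_of_cols d (xs @ ys) *\<^sub>v c) $ i = (mat_of_cols d xs *\<^sub>v vec (length xs) (\<lambda>i. c $ i) + mat_of_cols d ys *\<^sub>v vec (length ys) (\<lambda>i. c $ (length xs + i))) $ i"
    using i by simp
qed simp

lemma mat_of_cols_single_mult:
  fixes v :: "'a::field vec"
  assumes "v \<in> carrier_vec d" "c \<in> carrier_vec 1"
  shows "mat_of_cols d [v] *\<^sub>v c = (c $ 0) \<cdot>\<^sub>v v"
proof (rule eq_vecI)
  fix i assume "i < dim_vec (c $ 0 \<cdot>\<^sub>v v)" hence i: "i < d" using assms by simp
  show "(mat_of_cols d [v] *\<^sub>v c) $ i = (c $ 0 \<cdot>\<^sub>v v) $ i"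
    using i assms by (simp add: mult_mat_vec_def scalar_prod_def mat_of_cols_def mult.commute)
qed (use assms in simp)

lemma mat_of_cols_Nil_mult: "c \<in> carrier_vec 0 \<Longrightarrow> mat_of_cols d [] *\<^sub>v c = 0\<^sub>v d"
  by (rule eq_vecI) (auto simp: mult_mat_vec_def scalar_prod_def mat_of_cols_def)

lemma mat_of_cols_Cons_mult:
  fixes v :: "'a::field vec"
  assumes "v \<in> carrier_vec d" "set bs \<subseteq> carrier_vec d" "c \<in> carrier_vec (Suc (length bs))"
  shows "mat_of_cols d (v # bs) *\<^sub>v c = (c $ 0) \<cdot>\<^sub>v v + mat_of_cols d bs *\<^sub>v vec (length bs) (\<lambda>i. c $ (Suc i))"
proof -
  have "mat_of_cols d [v] *\<^sub>v vec (Suc 0) (($) c) = (vec (Suc 0) (($) c) $ 0) \<cdot>\<^sub>v v"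
    using assms by (intro mat_of_cols_single_mult) auto
  then show ?thesis using mat_of_cols_append_mult[of "[v]" d bs c] assms by simp
qed

lemma mat_of_cols_mult_carrier[simp]: "mat_of_cols d bs *\<^sub>v c \<in> carrier_vec d"
  unfolding carrier_vec_def mat_of_cols_def by simp

lemma subspace_lincomb:
  assumes W: "is_subspace d W" and bs: "set bs \<subseteq> W" and c: "c \<in> carrier_vec (length bs)"
  shows "mat_of_cols d bs *\<^sub>v c \<in> W"
  using bs c
proof (induction bs arbitrary: c)
  case Nil
  then show ?case using W by (simp add: mat_of_cols_Nil_mult is_subspace_def)
next
  case (Cons v bs)
  have Wc: "W \<subseteq> carrier_vec d" using W by (simp add: is_subspace_def)
  have "mat_of_cols d bs *\<^sub>v vec (length bs) (\<lambda>i. c $ (Suc i)) \<in> W" using Cons by auto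
  moreover have "(c $ 0) \<cdot>\<^sub>v v \<in> W" using W Cons.prems by (auto simp: is_subspace_def)
  ultimately have "(c $ 0) \<cdot>\<^sub>v v + mat_of_cols d bs *\<^sub>v vec (length bs) (\<lambda>i. c $ (Suc i)) \<in> W"
    using W by (auto simp: is_subspace_def)
  then show ?case using Cons.prems Wc by (subst mat_of_cols_Cons_mult) auto
qed

definition img :: "nat \<Rightarrow> 'a::field vec list \<Rightarrow> 'a vec set" where
  "img d bs = {mat_of_cols d bs *\<^sub>v c | c. c \<in> carrier_vec (length bs)}"

definition indep :: "nat \<Rightarrow> 'a::field vec list \<Rightarrow> bool" where
  "indep d bs \<longleftrightarrow> set bs \<subseteq> carrier_vec d \<and> inj_mat (mat_of_cols d bs)"

lemma indep_length: "indep d bs \<Longrightarrow> length bs \<le> d"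
  unfolding indep_def using inj_mat_le[of "mat_of_cols d bs" d "length bs"] by auto

lemma img_subspace_sub: "is_subspace d W \<Longrightarrow> set bs \<subseteq> W \<Longrightarrow> img d bs \<subseteq> W"
  unfolding img_def using subspace_lincomb by blast

lemma indep_snoc:
  fixes bs :: "'a::field vec list"
  assumes ind: "indep d bs" and v: "v \<in> carrier_vec d" and nv: "v \<notin> img d bs"
  shows "indep d (bs @ [v])"
proof -
  have bsc: "set bs \<subseteq> carrier_vec d" using ind by (simp add: indep_def)
  have inj: "inj_mat (mat_of_cols d bs)" using ind by (simp add: indep_def)
  { fix c :: "'a vec" assume c: "c \<in> carrier_vec (length bs + 1)"
      and z: "mat_of_cols d (bs @ [v]) *\<^sub>v c = 0\<^sub>v d"
    define c1 where "c1 = vec (length bs) (\<lambda>i. c $ i)"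
    have eq: "mat_of_cols d bs *\<^sub>v c1 + (c $ length bs) \<cdot>\<^sub>v v = 0\<^sub>v d"
      using z mat_of_cols_append_mult[of bs d "[v]" c] bsc v c
      by (simp add: mat_of_cols_single_mult c1_def)
    have cm: "c $ length bs = 0"
    proof (rule ccontr)
      assume ne: "c $ length bs \<noteq> 0"
      define c2 where "c2 = (- inverse (c $ length bs)) \<cdot>\<^sub>v c1"
      have "mat_of_cols d bs *\<^sub>v c2 = (- inverse (c $ length bs)) \<cdot>\<^sub>v (mat_of_cols d bs *\<^sub>v c1)"
        unfolding c2_def by (rule mult_mat_vec) (auto simp: c1_def)
      also have "mat_of_cols d bs *\<^sub>v c1 = - ((c $ length bs) \<cdot>\<^sub>v v)"
      proof -
        have "mat_of_cols d bs *\<^sub>v c1 = mat_of_cols d bs *\<^sub>v c1 + (c $ length bs) \<cdot>\<^sub>v v + - ((c $ length bs) \<cdot>\<^sub>v v)"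
          using v by auto
        also have "\<dots> = - ((c $ length bs) \<cdot>\<^sub>v v)" using eq v by auto
        finally show ?thesis .
      qed
      also have "(- inverse (c $ length bs)) \<cdot>\<^sub>v - ((c $ length bs) \<cdot>\<^sub>v v) = v"
        using ne v by (auto simp: smult_smult_assoc)
      finally have "v \<in> img d bs" unfolding img_def c2_def c1_def by force
      with nv show False by simp
    qed
    have "(0::'a) \<cdot>\<^sub>v v = 0\<^sub>v d" using v by auto
    hence "mat_of_cols d bs *\<^sub>v c1 = 0\<^sub>v d" using eq cm v by auto
    hence "c1 = 0\<^sub>v (length bs)" using inj unfolding inj_mat_def c1_def by auto
    have "c = 0\<^sub>v (length bs + 1)"
    proof (rule eq_vecI)
      fix i assume "i < dim_vec (0\<^sub>v (length bs + 1) :: 'a vec)"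
      hence "i < length bs \<or> i = length bs" by auto
      thus "c $ i = 0\<^sub>v (length bs + 1) $ i"
      proof
        assume "i < length bs"
        hence "c1 $ i = c $ i" unfolding c1_def by simp
        thus ?thesis using \<open>c1 = 0\<^sub>v (length bs)\<close> \<open>i < length bs\<close> by auto
      qed (use cm in auto)
    qed (use c in auto)
  }
  thus ?thesis using bsc v unfolding indep_def inj_mat_def by auto
qed

lemma indep_extend:
  fixes bs :: "'a::field vec list"
  assumes Y: "is_subspace d Y" and ind: "indep d bs" and bsY: "set bs \<subseteq> Y"
  shows "\<exists>ys. set ys \<subseteq> Y \<and> indep d (bs @ ys) \<and> img d (bs @ ys) = Y"
  using ind bsY
proof (induction "d - length bs" arbitrary: bs rule: less_induct)
  case less
  show ?case
  proof (cases "Y \<subseteq> img d bs")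
    case True
    then show ?thesis using img_subspace_sub[OF Y less.prems(2)] less.prems by (intro exI[of _ "[]"]) auto
  next
    case False
    then obtain v where v: "v \<in> Y" "v \<notin> img d bs" by auto
    have vc: "v \<in> carrier_vec d" using v Y by (auto simp: is_subspace_def)
    have ind': "indep d (bs @ [v])" by (rule indep_snoc[OF less.prems(1) vc v(2)])
    have "length (bs @ [v]) \<le> d" by (rule indep_length[OF ind'])
    hence "d - length (bs @ [v]) < d - length bs" by simp
    from less.hyps[OF this ind'] less.prems(2) v(1) obtain ys where
      "set ys \<subseteq> Y" "indep d (bs @ [v] @ ys)" "img d (bs @ [v] @ ys) = Y" by auto
    thus ?thesis using v(1) by (intro exI[of _ "v # ys"]) auto
  qed
qed


lemma mat_vec_zero_right[simp]: "A *\<^sub>v 0\<^sub>v (dim_col A) = 0\<^sub>v (dim_row A)"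
  by (rule eq_vecI) (auto simp: mult_mat_vec_def scalar_prod_def)

lemma mult_mat_index_vec: "i < dim_row A \<Longrightarrow> j < dim_col B \<Longrightarrow> (A * B) $$ (i,j) = (A *\<^sub>v col B j) $ i"
  by (simp add: index_mult_mat)

lemma right_inverse_exists:
  fixes A :: "'a::field mat"
  assumes A: "A \<in> carrier_mat n m" and surj: "\<forall>y\<in>carrier_vec n. \<exists>x\<in>carrier_vec m. A *\<^sub>v x = y"
  shows "\<exists>B\<in>carrier_mat m n. A * B = 1\<^sub>m n"
proof -
  define pre where "pre j = (SOME x. x \<in> carrier_vec m \<and> A *\<^sub>v x = unit_vec n j)" for j
  have pre: "pre j \<in> carrier_vec m \<and> A *\<^sub>v pre j = unit_vec n j" for j
    unfolding pre_def by (rule someI_ex) (use surj in auto)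
  define B where "B = mat_of_cols m (map pre [0..<n])"
  have B: "B \<in> carrier_mat m n" unfolding B_def using mat_of_cols_carrier(1)[of m "map pre [0..<n]"] by simp
  have colB: "j < n \<Longrightarrow> col B j = pre j" for j
    unfolding B_def using pre by (subst col_mat_of_cols) auto
  have "A * B = 1\<^sub>m n"
  proof (rule eq_matI)
    fix i j assume i: "i < dim_row (1\<^sub>m n :: 'a mat)" and j: "j < dim_col (1\<^sub>m n :: 'a mat)"
    have "(A * B) $$ (i,j) = (A *\<^sub>v pre j) $ i" using i j A B colB by (simp add: mult_mat_index_vec)
    also have "\<dots> = unit_vec n j $ i" using pre by simp
    finally show "(A * B) $$ (i,j) = 1\<^sub>m n $$ (i,j)" using i j by (simp add: unit_vec_def)
  qed (use A B in auto)
  thus ?thesis using B by blast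
qed

lemma right_inverse_inj:
  fixes A :: "'a::field mat"
  assumes A: "A \<in> carrier_mat n m" and B: "B \<in> carrier_mat m n" and AB: "A * B = 1\<^sub>m n"
  shows "inj_mat B"
  unfolding inj_mat_def
proof (intro ballI impI)
  fix c assume c: "c \<in> carrier_vec (dim_col B)" and z: "B *\<^sub>v c = 0\<^sub>v (dim_row B)"
  have "c = (A * B) *\<^sub>v c" using AB c B by simp
  also have "\<dots> = A *\<^sub>v (B *\<^sub>v c)" using A B c by (simp add: assoc_mult_mat_vec)
  also have "\<dots> = 0\<^sub>v n" using z A B by (metis carrier_matD mat_vec_zero_right)
  finally show "c = 0\<^sub>v (dim_col B)" using B by simp
qed

lemma surj_le:
  fixes A :: "'a::field mat"
  assumes A: "A \<in> carrier_mat n m" and surj: "\<forall>y\<in>carrier_vec n. \<exists>x\<in>carrier_vec m. A *\<^sub>v x = y"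
  shows "n \<le> m"
proof -
  obtain B where B: "B \<in> carrier_mat m n" "A * B = 1\<^sub>m n" using right_inverse_exists[OF A surj] by blast
  show ?thesis using inj_mat_le[OF B(1) right_inverse_inj[OF A B]] .
qed

lemma inj_square_inverse:
  fixes T :: "'a::field mat"
  assumes T: "T \<in> carrier_mat n n" and inj: "inj_mat T"
  shows "\<exists>Ti\<in>carrier_mat n n. T * Ti = 1\<^sub>m n \<and> Ti * T = 1\<^sub>m n"
proof -
  have "det T \<noteq> 0" using det_0_iff_vec_prod_zero[OF T] inj T unfolding inj_mat_def by auto
  define Ti where "Ti = inverse (det T) \<cdot>\<^sub>m adj_mat T"
  have Ti: "Ti \<in> carrier_mat n n" unfolding Ti_def using adj_mat(1)[OF T] by simp
  have "T * Ti = inverse (det T) \<cdot>\<^sub>m (T * adj_mat T)"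
    unfolding Ti_def using T adj_mat(1)[OF T] by (simp add: mult_smult_distrib)
  also have "\<dots> = 1\<^sub>m n" using adj_mat(2)[OF T] \<open>det T \<noteq> 0\<close> by (intro eq_matI) auto
  finally have 1: "T * Ti = 1\<^sub>m n" .
  have "Ti * T = inverse (det T) \<cdot>\<^sub>m (adj_mat T * T)"
    unfolding Ti_def using T adj_mat(1)[OF T] by (simp add: mult_smult_assoc_mat)
  also have "\<dots> = 1\<^sub>m n" using adj_mat(3)[OF T] \<open>det T \<noteq> 0\<close> by (intro eq_matI) auto
  finally show ?thesis using 1 Ti by blast
qed

lemma set_in_img:
  fixes bs :: "'a::field vec list"
  assumes "set bs \<subseteq> carrier_vec d"
  shows "set bs \<subseteq> img d bs"
proof
  fix v assume "v \<in> set bs"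
  then obtain j where j: "j < length bs" "bs ! j = v" by (auto simp: in_set_conv_nth)
  have "mat_of_cols d bs *\<^sub>v unit_vec (length bs) j = col (mat_of_cols d bs) j"
    using j by (intro eq_vecI) (auto simp: mult_mat_vec_def)
  also have "\<dots> = v" using j assms by (subst col_mat_of_cols) auto
  finally show "v \<in> img d bs" unfolding img_def by force
qed

lemma indep_Nil: "indep d ([] :: 'a::field vec list)"
  unfolding indep_def inj_mat_def by (auto simp: mat_of_cols_def)

lemma flag_basis:
  fixes Xs :: "nat \<Rightarrow> 'a::field vec set"
  assumes sub: "\<forall>i\<le>k. is_subspace d (Xs i)" and mono: "\<forall>i<k. Xs i \<subseteq> Xs (Suc i)"
  shows "\<exists>bs a. indep d bs \<and> (\<forall>i\<le>k. a i \<le> length bs \<and> img d (take (a i) bs) = Xs i)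
            \<and> (\<forall>i<k. a i \<le> a (Suc i)) \<and> a k = length bs"
  using sub mono
proof (induction k)
  case 0
  obtain ys where ys: "set ys \<subseteq> Xs 0" "indep d ys" "img d ys = Xs 0"
    using indep_extend[of d "Xs 0" "[]"] 0 indep_Nil by auto
  show ?case by (rule exI[of _ ys], rule exI[of _ "\<lambda>_. length ys"]) (use ys in auto)
next
  case (Suc k)
  from Suc obtain bs a where bs: "indep d bs" "\<forall>i\<le>k. a i \<le> length bs \<and> img d (take (a i) bs) = Xs i"
    "\<forall>i<k. a i \<le> a (Suc i)" "a k = length bs" by auto
  have "set bs \<subseteq> img d bs" using bs(1) set_in_img[of bs d] by (auto simp: indep_def)
  also have "img d bs = Xs k" using bs(2,4) by auto
  also have "\<dots> \<subseteq> Xs (Suc k)" using Suc.prems by auto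
  finally have bsX: "set bs \<subseteq> Xs (Suc k)" .
  obtain ys where ys: "set ys \<subseteq> Xs (Suc k)" "indep d (bs @ ys)" "img d (bs @ ys) = Xs (Suc k)"
    using indep_extend[of d "Xs (Suc k)" bs] Suc.prems bs(1) bsX by auto
  define a' where "a' = a(Suc k := length (bs @ ys))"
  have 1: "\<forall>i\<le>Suc k. a' i \<le> length (bs @ ys) \<and> img d (take (a' i) (bs @ ys)) = Xs i"
  proof (intro allI impI)
    fix i assume "i \<le> Suc k"
    then consider "i \<le> k" | "i = Suc k" by linarith
    then show "a' i \<le> length (bs @ ys) \<and> img d (take (a' i) (bs @ ys)) = Xs i"
    proof cases
      case 1 thus ?thesis using bs(2) by (auto simp: a'_def)
    qed (use ys in \<open>auto simp: a'_def\<close>)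
  qed
  have 2: "\<forall>i<Suc k. a' i \<le> a' (Suc i)"
  proof (intro allI impI)
    fix i assume "i < Suc k"
    show "a' i \<le> a' (Suc i)"
    proof (cases "i < k")
      case True thus ?thesis using bs(3) by (auto simp: a'_def)
    next
      case False hence "i = k" using \<open>i < Suc k\<close> by simp
      thus ?thesis using bs(4) by (auto simp: a'_def)
    qed
  qed
  show ?case using 1 2 ys by (intro exI[of _ "bs @ ys"] exI[of _ a']) (auto simp: a'_def)
qed

definition coordsub :: "nat \<Rightarrow> 'a::field mat \<Rightarrow> nat \<Rightarrow> 'a vec set" where
  "coordsub d Ti a = {v \<in> carrier_vec d. \<forall>k. a \<le> k \<longrightarrow> k < d \<longrightarrow> (Ti *\<^sub>v v) $ k = 0}"

lemma img_take_coordsub: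
  fixes bs :: "'a::field vec list"
  assumes bsc: "set bs \<subseteq> carrier_vec d" and len: "length bs = d"
    and Ti: "Ti \<in> carrier_mat d d" and inv1: "mat_of_cols d bs * Ti = 1\<^sub>m d" and inv2: "Ti * mat_of_cols d bs = 1\<^sub>m d"
    and a: "a \<le> d"
  shows "img d (take a bs) = coordsub d Ti a"
proof -
  let ?T = "mat_of_cols d bs"
  have T: "?T \<in> carrier_mat d d" using len mat_of_cols_carrier(1)[of d bs] by simp
  have tk: "set (take a bs) \<subseteq> carrier_vec d" using bsc by (meson set_take_subset subset_trans)
  have dr: "set (drop a bs) \<subseteq> carrier_vec d" using bsc by (meson set_drop_subset subset_trans)
  have lt: "length (take a bs) = a" and ld: "length (drop a bs) = d - a" using len a by auto
  have split: "?T *\<^sub>v w = mat_of_cols d (take a bs) *\<^sub>v vec a (\<lambda>i. w $ i) + mat_of_cols d (drop a bs) *\<^sub>v vec (d - a) (\<lambda>i. w $ (a + i))"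
    if w: "w \<in> carrier_vec d" for w
    using mat_of_cols_append_mult[OF tk dr, of w] w lt ld a by simp
  have TiT: "Ti *\<^sub>v (?T *\<^sub>v w) = w" if "w \<in> carrier_vec d" for w
    using that Ti T inv2 by (metis assoc_mult_mat_vec one_mult_mat_vec)
  have TTi: "?T *\<^sub>v (Ti *\<^sub>v v) = v" if "v \<in> carrier_vec d" for v
    using that Ti T inv1 by (metis assoc_mult_mat_vec one_mult_mat_vec)
  show ?thesis
  proof (intro equalityI subsetI)
    fix v assume "v \<in> img d (take a bs)"
    then obtain c where c: "c \<in> carrier_vec a" "v = mat_of_cols d (take a bs) *\<^sub>v c" unfolding img_def using lt by auto
    define w where "w = vec d (\<lambda>k. if k < a then c $ k else 0)"
    have w: "w \<in> carrier_vec d" unfolding w_def by simp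
    have "vec a (\<lambda>i. w $ i) = c" using c(1) a by (intro eq_vecI) (auto simp: w_def)
    moreover have "vec (d - a) (\<lambda>i. w $ (a + i)) = 0\<^sub>v (d - a)" by (intro eq_vecI) (auto simp: w_def)
    ultimately have "?T *\<^sub>v w = v" using split[OF w] c ld
      by (metis (no_types, lifting) mat_of_cols_carrier(2,3) mat_of_cols_mult_carrier mat_vec_zero_right right_zero_vec)
    hence "Ti *\<^sub>v v = w" using TiT w by auto
    thus "v \<in> coordsub d Ti a" unfolding coordsub_def using c by (auto simp: w_def)
  next
    fix v assume v: "v \<in> coordsub d Ti a"
    define w where "w = Ti *\<^sub>v v"
    have vc: "v \<in> carrier_vec d" using v by (simp add: coordsub_def)
    have w: "w \<in> carrier_vec d" unfolding w_def using Ti vc by simp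
    have "vec (d - a) (\<lambda>i. w $ (a + i)) = 0\<^sub>v (d - a)"
      using v unfolding coordsub_def w_def by (intro eq_vecI) auto
    hence "v = mat_of_cols d (take a bs) *\<^sub>v vec a (\<lambda>i. w $ i)"
      using split[OF w] TTi[OF vc] ld unfolding w_def
      by (metis (no_types, lifting) mat_of_cols_carrier(2,3) mat_of_cols_mult_carrier mat_vec_zero_right right_zero_vec)
    thus "v \<in> img d (take a bs)" unfolding img_def using lt by auto
  qed
qed


theorem adapted_T:
  fixes Xs :: "nat \<Rightarrow> 'a::field vec set"
  assumes sub: "\<forall>i\<le>k. is_subspace d (Xs i)" and mono: "\<forall>i<k. Xs i \<subseteq> Xs (Suc i)"
    and top: "Xs k = carrier_vec d"
  shows "\<exists>T Ti a. T \<in> carrier_mat d d \<and> Ti \<in> carrier_mat d d \<and> T * Ti = 1\<^sub>m d \<and> Ti * T = 1\<^sub>m d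
     \<and> (\<forall>i\<le>k. a i \<le> d \<and> Xs i = coordsub d Ti (a i)) \<and> (\<forall>i<k. a i \<le> a (Suc i)) \<and> a k = d"
proof -
  obtain bs a where bs: "indep d bs" "\<forall>i\<le>k. a i \<le> length bs \<and> img d (take (a i) bs) = Xs i"
    "\<forall>i<k. a i \<le> a (Suc i)" "a k = length bs"
    using flag_basis[OF sub mono] by blast
  have bsc: "set bs \<subseteq> carrier_vec d" and inj: "inj_mat (mat_of_cols d bs)" using bs(1) by (auto simp: indep_def)
  have "img d bs = carrier_vec d" using bs(2,4) top by (metis order_refl take_all)
  have surj: "\<forall>y\<in>carrier_vec d. \<exists>x\<in>carrier_vec (length bs). mat_of_cols d bs *\<^sub>v x = y"
  proof
    fix y :: "'a vec" assume "y \<in> carrier_vec d"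
    hence "y \<in> img d bs" using \<open>img d bs = carrier_vec d\<close> by simp
    thus "\<exists>x\<in>carrier_vec (length bs). mat_of_cols d bs *\<^sub>v x = y" unfolding img_def by auto
  qed
  have "d \<le> length bs" using surj_le[OF mat_of_cols_carrier(1) surj] .
  moreover have "length bs \<le> d" using indep_length[OF bs(1)] .
  ultimately have len: "length bs = d" by simp
  have T: "mat_of_cols d bs \<in> carrier_mat d d" using mat_of_cols_carrier(1)[of d bs] len by simp
  obtain Ti where Ti: "Ti \<in> carrier_mat d d" "mat_of_cols d bs * Ti = 1\<^sub>m d" "Ti * mat_of_cols d bs = 1\<^sub>m d"
    using inj_square_inverse[OF T inj] by blast
  have "\<forall>i\<le>k. a i \<le> d \<and> Xs i = coordsub d Ti (a i)"
    using bs(2) img_take_coordsub[OF bsc len Ti] len by auto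
  thus ?thesis using T Ti bs(3,4) len by blast
qed

lemma coordsub_mono: "a \<le> b \<Longrightarrow> coordsub d Ti a \<subseteq> coordsub d Ti b"
  unfolding coordsub_def by auto

lemma coordsub_top: "coordsub d Ti d = carrier_vec d"
  unfolding coordsub_def by auto

lemma coordsub_zero:
  fixes T :: "'a::field mat"
  assumes "T \<in> carrier_mat d d" "Ti \<in> carrier_mat d d" "T * Ti = 1\<^sub>m d"
  shows "coordsub d Ti 0 = {0\<^sub>v d}"
proof (intro equalityI subsetI)
  fix v assume v: "v \<in> coordsub d Ti 0"
  hence vc: "v \<in> carrier_vec d" and z: "Ti *\<^sub>v v = 0\<^sub>v d"
    unfolding coordsub_def using assms by (auto intro!: eq_vecI)
  have "v = T *\<^sub>v (Ti *\<^sub>v v)" using assms vc by (metis assoc_mult_mat_vec one_mult_mat_vec)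
  also have "\<dots> = 0\<^sub>v d" using z assms by (metis carrier_matD mat_vec_zero_right)
  finally show "v \<in> {0\<^sub>v d}" by simp
next
  fix v assume "v \<in> {0\<^sub>v d :: 'a vec}"
  thus "v \<in> coordsub d Ti 0" unfolding coordsub_def using assms
    by (auto simp: mult_mat_vec_def scalar_prod_def)
qed

definition blk :: "'a mat \<Rightarrow> nat \<Rightarrow> nat \<Rightarrow> 'a mat" where
  "blk M a b = mat (b - a) (b - a) (\<lambda>(i,j). M $$ (a + i, a + j))"

lemma blk_carrier[simp]: "blk M a b \<in> carrier_mat (b - a) (b - a)"
  unfolding blk_def by simp

lemma blk_full: "M \<in> carrier_mat d d \<Longrightarrow> blk M 0 d = M"
  unfolding blk_def by (intro eq_matI) auto

lemma det_blk_split: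
  fixes N :: "'a::idom mat"
  assumes abc: "a \<le> c" "c \<le> b"
    and z: "\<And>i j. c \<le> i \<Longrightarrow> i < b \<Longrightarrow> a \<le> j \<Longrightarrow> j < c \<Longrightarrow> N $$ (i,j) = 0"
  shows "det (blk N a b) = det (blk N a c) * det (blk N c b)"
proof -
  define U where "U = mat (c - a) (b - c) (\<lambda>(i,j). N $$ (a + i, c + j))"
  have "blk N a b = four_block_mat (blk N a c) U (0\<^sub>m (b - c) (c - a)) (blk N c b)"
  proof (rule eq_matI)
    fix i j assume i: "i < dim_row (four_block_mat (blk N a c) U (0\<^sub>m (b - c) (c - a)) (blk N c b))"
      and j: "j < dim_col (four_block_mat (blk N a c) U (0\<^sub>m (b - c) (c - a)) (blk N c b))"
    hence i': "i < b - a" and j': "j < b - a" using abc by (auto simp: four_block_mat_def blk_def Let_def)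
    show "blk N a b $$ (i, j) = four_block_mat (blk N a c) U (0\<^sub>m (b - c) (c - a)) (blk N c b) $$ (i, j)"
      using i' j' abc z[of "a + i" "a + j"] by (auto simp: four_block_mat_def blk_def U_def Let_def add.commute)
  qed (use abc in \<open>auto simp: four_block_mat_def blk_def Let_def\<close>)
  moreover have "det (four_block_mat (blk N a c) U (0\<^sub>m (b - c) (c - a)) (blk N c b)) = det (blk N a c) * det (blk N c b)"
    by (rule det_four_block_mat_lower_left_zero) (auto simp: U_def)
  ultimately show ?thesis by simp
qed

lemma char_poly_matrix_blk:
  fixes M :: "'a::comm_ring_1 mat"
  assumes "b \<le> dim_row M" "b \<le> dim_col M"
  shows "char_poly_matrix (blk M a b) = blk (char_poly_matrix M) a b"
  using assms by (intro eq_matI) (auto simp: char_poly_matrix_def blk_def)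

lemma char_poly_blk_split:
  fixes M :: "'a::idom mat"
  assumes M: "M \<in> carrier_mat d d" and abc: "a \<le> c" "c \<le> b" "b \<le> d"
    and z: "\<And>i j. c \<le> i \<Longrightarrow> i < b \<Longrightarrow> a \<le> j \<Longrightarrow> j < c \<Longrightarrow> M $$ (i,j) = 0"
  shows "char_poly (blk M a b) = char_poly (blk M a c) * char_poly (blk M c b)"
proof -
  let ?N = "char_poly_matrix M"
  have zN: "?N $$ (i,j) = 0" if "c \<le> i" "i < b" "a \<le> j" "j < c" for i j
    using that z[OF that] M abc by (auto simp: char_poly_matrix_def)
  show ?thesis unfolding char_poly_def
    using det_blk_split[of a c b ?N, OF abc(1,2) zN] M abc
    by (simp add: char_poly_matrix_blk)
qed

lemma char_poly_blocks:
  fixes M :: "'a::idom mat"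
  assumes M: "M \<in> carrier_mat d d" and a0: "a 0 = 0" and mono: "\<forall>t<k. a t \<le> a (Suc t)" and ak: "a k \<le> d"
    and z: "\<And>t i j. t \<le> k \<Longrightarrow> a t \<le> i \<Longrightarrow> i < d \<Longrightarrow> j < a t \<Longrightarrow> M $$ (i,j) = 0"
  shows "char_poly (blk M 0 (a k)) = (\<Prod>t<k. char_poly (blk M (a t) (a (Suc t))))"
  using mono ak z
proof (induction k)
  case 0
  have "blk M 0 0 = (1\<^sub>m 0 :: 'a mat)" by (intro eq_matI) (auto simp: blk_def)
  then show ?case using a0 by (simp add: char_poly_def char_poly_matrix_def det_def)
next
  case (Suc k)
  have m: "\<forall>t<k. a t \<le> a (Suc t)" using Suc.prems by auto
  have le: "a k \<le> a (Suc k)" using Suc.prems by auto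
  have ak: "a k \<le> d" using le Suc.prems(2) by linarith
  have ih: "char_poly (blk M 0 (a k)) = (\<Prod>t<k. char_poly (blk M (a t) (a (Suc t))))"
  proof (rule Suc.IH[OF m ak])
    fix t i j assume "t \<le> k" "a t \<le> i" "i < d" "j < a t"
    thus "M $$ (i,j) = 0" using Suc.prems(3)[of t i j] by auto
  qed
  have "char_poly (blk M 0 (a (Suc k))) = char_poly (blk M 0 (a k)) * char_poly (blk M (a k) (a (Suc k)))"
    by (rule char_poly_blk_split[OF M _ le Suc.prems(2)]) (use Suc.prems(3)[of k] Suc.prems(2) in auto)
  then show ?case using ih by simp
qed


definition rcar :: "('g, 'm) monoid_scheme \<Rightarrow> nat \<Rightarrow> ('g \<Rightarrow> 'f::field mat) \<Rightarrow> bool" where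
  "rcar G d \<rho> \<longleftrightarrow> (\<forall>g\<in>carrier G. \<rho> g \<in> carrier_mat d d)"

lemma triple_assoc_vec:
  fixes A :: "'a::field mat"
  assumes "A \<in> carrier_mat d d" "B \<in> carrier_mat d d" "C \<in> carrier_mat d d" "u \<in> carrier_vec d"
  shows "(A * B * C) *\<^sub>v u = A *\<^sub>v (B *\<^sub>v (C *\<^sub>v u))"
proof -
  have "(A * B * C) *\<^sub>v u = (A * B) *\<^sub>v (C *\<^sub>v u)" using assms by (intro assoc_mult_mat_vec) auto
  also have "\<dots> = A *\<^sub>v (B *\<^sub>v (C *\<^sub>v u))" using assms by (intro assoc_mult_mat_vec) auto
  finally show ?thesis .
qed

lemma mat_vec_unit_index:
  fixes A :: "'a::field mat"
  assumes "A \<in> carrier_mat n m" "k < m" "i < n"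
  shows "(A *\<^sub>v unit_vec m k) $ i = A $$ (i,k)"
proof -
  have "(A *\<^sub>v unit_vec m k) $ i = (\<Sum>j<m. A $$ (i,j) * unit_vec m k $ j)"
    using assms by (subst mult_mat_vec_index_sum) auto
  also have "\<dots> = (\<Sum>j<m. if j = k then A $$ (i,j) else 0)" by (rule sum.cong) (auto simp: unit_vec_def)
  also have "\<dots> = A $$ (i,k)" using assms by (simp add: sum.delta)
  finally show ?thesis .
qed

lemma mat_eq_by_vec:
  fixes A B :: "'a::field mat"
  assumes A: "A \<in> carrier_mat n m" and B: "B \<in> carrier_mat n m"
    and eq: "\<And>x. x \<in> carrier_vec m \<Longrightarrow> A *\<^sub>v x = B *\<^sub>v x"
  shows "A = B"
proof (rule eq_matI)
  fix i j assume i: "i < dim_row B" and j: "j < dim_col B"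
  have "A $$ (i,j) = (A *\<^sub>v unit_vec m j) $ i" using A B i j by (simp add: mat_vec_unit_index)
  also have "\<dots> = (B *\<^sub>v unit_vec m j) $ i" using eq[of "unit_vec m j"] by simp
  also have "\<dots> = B $$ (i,j)" using B i j by (simp add: mat_vec_unit_index)
  finally show "A $$ (i,j) = B $$ (i,j)" .
qed (use A B in auto)

lemma sum_support_interval:
  fixes f :: "nat \<Rightarrow> 'a::comm_monoid_add"
  assumes "a \<le> b" "b \<le> d" and z: "\<And>k. k < d \<Longrightarrow> (k < a \<or> b \<le> k) \<Longrightarrow> f k = 0"
  shows "(\<Sum>k<d. f k) = (\<Sum>j<b-a. f (a + j))"
proof -
  have d: "d = a + ((b - a) + (d - b))" using assms by simp
  have "(\<Sum>k<d. f k) = (\<Sum>k<a. f k) + ((\<Sum>j<b-a. f (a + j)) + (\<Sum>j<d-b. f (a + (b - a) + j)))"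
    by (subst d, subst sum_lessThan_add_split, subst sum_lessThan_add_split) (simp add: add.assoc)
  also have "(\<Sum>k<a. f k) = 0" using z assms by (intro sum.neutral) auto
  also have "(\<Sum>j<d-b. f (a + (b - a) + j)) = 0" using z assms by (intro sum.neutral) auto
  finally show ?thesis by simp
qed

locale adapted =
  fixes d :: nat and T Ti :: "'f::field mat"
  assumes T: "T \<in> carrier_mat d d" and Ti: "Ti \<in> carrier_mat d d"
    and TTi: "T * Ti = 1\<^sub>m d" and TiT: "Ti * T = 1\<^sub>m d"
begin

lemma TiT_vec: "w \<in> carrier_vec d \<Longrightarrow> Ti *\<^sub>v (T *\<^sub>v w) = w"
  using T Ti TiT by (metis assoc_mult_mat_vec one_mult_mat_vec)

lemma TTi_vec: "w \<in> carrier_vec d \<Longrightarrow> T *\<^sub>v (Ti *\<^sub>v w) = w"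
  using T Ti TTi by (metis assoc_mult_mat_vec one_mult_mat_vec)

definition Pm :: "nat \<Rightarrow> nat \<Rightarrow> 'f mat" where
  "Pm a b = mat (b - a) d (\<lambda>(i,j). Ti $$ (a + i, j))"

lemma Pm_carrier: "Pm a b \<in> carrier_mat (b - a) d" unfolding Pm_def by simp

lemma Pm_mult_carrier[simp]: "Pm a b *\<^sub>v w \<in> carrier_vec (b - a)"
  by (rule carrier_vecI) (simp add: Pm_def)

lemma Pm_index: "w \<in> carrier_vec d \<Longrightarrow> i < b - a \<Longrightarrow> b \<le> d \<Longrightarrow> (Pm a b *\<^sub>v w) $ i = (Ti *\<^sub>v w) $ (a + i)"
proof -
  assume w: "w \<in> carrier_vec d" and i: "i < b - a" and b: "b \<le> d"
  have "(Pm a b *\<^sub>v w) $ i = (\<Sum>j<d. Pm a b $$ (i,j) * w $ j)"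
    using w i Pm_carrier[of a b] by (subst mult_mat_vec_index_sum) auto
  also have "\<dots> = (\<Sum>j<d. Ti $$ (a + i,j) * w $ j)" using i by (intro sum.cong) (auto simp: Pm_def)
  also have "\<dots> = (Ti *\<^sub>v w) $ (a + i)" using w i b Ti by (subst mult_mat_vec_index_sum) auto
  finally show ?thesis .
qed

lemma zero_block:
  assumes A: "A \<in> carrier_mat d d" and inv: "\<forall>x\<in>coordsub d Ti a. A *\<^sub>v x \<in> coordsub d Ti a"
    and k: "k < a" and i: "a \<le> i" "i < d"
  shows "(Ti * A * T) $$ (i,k) = 0"
proof -
  have kd: "k < d" using k i by simp
  have "(Ti * A * T) $$ (i,k) = ((Ti * A * T) *\<^sub>v unit_vec d k) $ i"
    using T Ti A kd i by (simp add: mat_vec_unit_index)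
  also have "(Ti * A * T) *\<^sub>v unit_vec d k = Ti *\<^sub>v (A *\<^sub>v (T *\<^sub>v unit_vec d k))"
    using T Ti A kd by (intro triple_assoc_vec) auto
  also have "T *\<^sub>v unit_vec d k \<in> coordsub d Ti a"
    unfolding coordsub_def using TiT_vec[of "unit_vec d k"] T k by (auto simp: unit_vec_def)
  hence "A *\<^sub>v (T *\<^sub>v unit_vec d k) \<in> coordsub d Ti a" using inv by blast
  hence "(Ti *\<^sub>v (A *\<^sub>v (T *\<^sub>v unit_vec d k))) $ i = 0" unfolding coordsub_def using i by blast
  finally show ?thesis .
qed

lemma fi_from_T:
  assumes r: "rcar G d \<rho>" and ab: "a \<le> b" "b \<le> d"
    and invX: "\<forall>g\<in>carrier G. \<forall>x\<in>coordsub d Ti a. \<rho> g *\<^sub>v x \<in> coordsub d Ti a"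
    and invY: "\<forall>g\<in>carrier G. \<forall>x\<in>coordsub d Ti b. \<rho> g *\<^sub>v x \<in> coordsub d Ti b"
  shows "factor_iso G d \<rho> (coordsub d Ti a) (coordsub d Ti b) (b - a) (\<lambda>g. blk (Ti * \<rho> g * T) a b)"
  unfolding factor_iso_def
proof (intro bexI[of _ "Pm a b"] conjI)
  let ?P = "Pm a b"
  show "?P \<in> carrier_mat (b - a) d" by (rule Pm_carrier)
  show "(\<lambda>w. ?P *\<^sub>v w) ` coordsub d Ti b = carrier_vec (b - a)"
  proof (intro equalityI subsetI)
    fix x assume "x \<in> (\<lambda>w. ?P *\<^sub>v w) ` coordsub d Ti b"
    thus "x \<in> carrier_vec (b - a)" by auto
  next
    fix x :: "'f vec" assume x: "x \<in> carrier_vec (b - a)"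
    define c where "c = vec d (\<lambda>k. if a \<le> k \<and> k < b then x $ (k - a) else 0)"
    have c: "c \<in> carrier_vec d" unfolding c_def by simp
    have "Ti *\<^sub>v (T *\<^sub>v c) = c" by (rule TiT_vec[OF c])
    hence w: "T *\<^sub>v c \<in> coordsub d Ti b" unfolding coordsub_def using T by (auto simp: c_def)
    have "?P *\<^sub>v (T *\<^sub>v c) = x"
    proof (rule eq_vecI)
      fix i assume "i < dim_vec x" hence i: "i < b - a" using x by simp
      have "(?P *\<^sub>v (T *\<^sub>v c)) $ i = (Ti *\<^sub>v (T *\<^sub>v c)) $ (a + i)"
        using T i ab c by (intro Pm_index) auto
      also have "\<dots> = x $ i" using TiT_vec[OF c] i ab by (simp add: c_def)
      finally show "(?P *\<^sub>v (T *\<^sub>v c)) $ i = x $ i" .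
    qed (use x Pm_carrier in auto)
    thus "x \<in> (\<lambda>w. ?P *\<^sub>v w) ` coordsub d Ti b" using w by force
  qed
  show "{w \<in> coordsub d Ti b. ?P *\<^sub>v w = 0\<^sub>v (b - a)} = coordsub d Ti a"
  proof (intro equalityI subsetI)
    fix w assume "w \<in> {w \<in> coordsub d Ti b. ?P *\<^sub>v w = 0\<^sub>v (b - a)}"
    hence wY: "w \<in> coordsub d Ti b" and z: "?P *\<^sub>v w = 0\<^sub>v (b - a)" by auto
    have wc: "w \<in> carrier_vec d" using wY by (simp add: coordsub_def)
    show "w \<in> coordsub d Ti a" unfolding coordsub_def
    proof (intro CollectI conjI allI impI)
      fix k assume k: "a \<le> k" "k < d"
      show "(Ti *\<^sub>v w) $ k = 0"
      proof (cases "k < b")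
        case True
        have "(?P *\<^sub>v w) $ (k - a) = (Ti *\<^sub>v w) $ (a + (k - a))"
          using wc True k ab by (intro Pm_index) auto
        thus ?thesis using z True k by simp
      next
        case False thus ?thesis using wY k unfolding coordsub_def by auto
      qed
    qed (rule wc)
  next
    fix w assume wX: "w \<in> coordsub d Ti a"
    have wc: "w \<in> carrier_vec d" using wX by (simp add: coordsub_def)
    have wY: "w \<in> coordsub d Ti b" using wX coordsub_mono[OF ab(1)] by blast
    have "?P *\<^sub>v w = 0\<^sub>v (b - a)"
    proof (rule eq_vecI)
      fix i assume "i < dim_vec (0\<^sub>v (b - a) :: 'f vec)" hence i: "i < b - a" by simp
      have "(?P *\<^sub>v w) $ i = (Ti *\<^sub>v w) $ (a + i)" using wc i ab by (intro Pm_index) auto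
      also have "\<dots> = 0" using wX i ab unfolding coordsub_def by auto
      finally show "(?P *\<^sub>v w) $ i = 0\<^sub>v (b - a) $ i" using i by simp
    qed (use Pm_carrier in auto)
    thus "w \<in> {w \<in> coordsub d Ti b. ?P *\<^sub>v w = 0\<^sub>v (b - a)}" using wY by simp
  qed
  show "\<forall>g\<in>carrier G. \<forall>w\<in>coordsub d Ti b. ?P *\<^sub>v (\<rho> g *\<^sub>v w) = blk (Ti * \<rho> g * T) a b *\<^sub>v (?P *\<^sub>v w)"
  proof (intro ballI)
    fix g w assume g: "g \<in> carrier G" and wY: "w \<in> coordsub d Ti b"
    have A: "\<rho> g \<in> carrier_mat d d" using r g by (simp add: rcar_def)
    have wc: "w \<in> carrier_vec d" using wY by (simp add: coordsub_def)
    define M where "M = Ti * \<rho> g * T"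
    have M: "M \<in> carrier_mat d d" unfolding M_def using T Ti A by simp
    define c where "c = Ti *\<^sub>v w"
    have c: "c \<in> carrier_vec d" unfolding c_def using Ti wc by simp
    have cz: "c $ k = 0" if "b \<le> k" "k < d" for k using wY that unfolding coordsub_def c_def by auto
    have Mz: "M $$ (i,k) = 0" if "k < a" "a \<le> i" "i < d" for i k
      unfolding M_def by (rule zero_block[OF A _ that]) (use invX g in auto)
    have key: "Ti *\<^sub>v (\<rho> g *\<^sub>v w) = M *\<^sub>v c"
    proof -
      have "w = T *\<^sub>v c" unfolding c_def using TTi_vec[OF wc] by simp
      hence "Ti *\<^sub>v (\<rho> g *\<^sub>v w) = Ti *\<^sub>v (\<rho> g *\<^sub>v (T *\<^sub>v c))" by simp
      also have "\<dots> = M *\<^sub>v c" unfolding M_def using T Ti A c by (intro triple_assoc_vec[symmetric]) auto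
      finally show ?thesis .
    qed
    show "?P *\<^sub>v (\<rho> g *\<^sub>v w) = blk M a b *\<^sub>v (?P *\<^sub>v w)" unfolding M_def[symmetric]
    proof (rule eq_vecI)
      fix i assume "i < dim_vec (blk M a b *\<^sub>v (?P *\<^sub>v w))" hence i: "i < b - a" by (simp add: blk_def)
      have rw: "\<rho> g *\<^sub>v w \<in> carrier_vec d" using A wc by simp
      have "(?P *\<^sub>v (\<rho> g *\<^sub>v w)) $ i = (M *\<^sub>v c) $ (a + i)"
        using Pm_index[OF rw i ab(2)] key by simp
      also have "\<dots> = (\<Sum>k<d. M $$ (a + i, k) * c $ k)"
        using M c i ab by (subst mult_mat_vec_index_sum) auto
      also have "\<dots> = (\<Sum>j<b - a. M $$ (a + i, a + j) * c $ (a + j))"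
        by (rule sum_support_interval[OF ab]) (use Mz cz i ab in auto)
      also have "\<dots> = (\<Sum>j<b - a. blk M a b $$ (i, j) * (?P *\<^sub>v w) $ j)"
        using i ab wc by (intro sum.cong) (auto simp: blk_def Pm_index c_def)
      also have "\<dots> = (blk M a b *\<^sub>v (?P *\<^sub>v w)) $ i"
        using i Pm_carrier wc by (subst mult_mat_vec_index_sum) (auto simp: blk_def)
      finally show "(?P *\<^sub>v (\<rho> g *\<^sub>v w)) $ i = (blk M a b *\<^sub>v (?P *\<^sub>v w)) $ i" .
    qed (use Pm_carrier in \<open>auto simp: blk_def\<close>)
  qed
qed

end


lemma mat_vec_carrier_gen[simp]: "P \<in> carrier_mat e d \<Longrightarrow> P *\<^sub>v w \<in> carrier_vec e"
  by (rule carrier_vecI) auto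

lemma subspace_carrier: "is_subspace d W \<Longrightarrow> W \<subseteq> carrier_vec d"
  by (simp add: is_subspace_def)

lemma subspace_minus:
  fixes v w :: "'a::field vec"
  assumes W: "is_subspace d W" and v: "v \<in> W" and w: "w \<in> W"
  shows "v - w \<in> W"
proof -
  have c: "v \<in> carrier_vec d" "w \<in> carrier_vec d" using W v w by (auto simp: is_subspace_def)
  have "v - w = v + (-1) \<cdot>\<^sub>v w" using c by (intro eq_vecI) auto
  moreover have "(-1) \<cdot>\<^sub>v w \<in> W" using W w by (simp add: is_subspace_def)
  ultimately show ?thesis using W v by (simp add: is_subspace_def)
qed

lemma fi_restrict:
  fixes \<rho> :: "'g \<Rightarrow> 'a::field mat"
  assumes fi: "factor_iso G d \<rho> W Y e \<sigma>" and UY: "U \<subseteq> Y" and Yc: "Y \<subseteq> carrier_vec d"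
    and span: "\<forall>y\<in>Y. \<exists>u\<in>U. \<exists>w\<in>W. y = u + w"
  shows "factor_iso G d \<rho> (U \<inter> W) U e \<sigma>"
proof -
  obtain P where P: "P \<in> carrier_mat e d" "(\<lambda>w. P *\<^sub>v w) ` Y = carrier_vec e"
    "{w \<in> Y. P *\<^sub>v w = 0\<^sub>v e} = W" "\<forall>g\<in>carrier G. \<forall>w\<in>Y. P *\<^sub>v (\<rho> g *\<^sub>v w) = \<sigma> g *\<^sub>v (P *\<^sub>v w)"
    using fi unfolding factor_iso_def by blast
  have img: "(\<lambda>w. P *\<^sub>v w) ` U = carrier_vec e"
  proof (intro equalityI subsetI)
    fix x assume "x \<in> (\<lambda>w. P *\<^sub>v w) ` U" thus "x \<in> carrier_vec e" using P(1) by auto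
  next
    fix x :: "'a vec" assume "x \<in> carrier_vec e"
    then obtain y where y: "y \<in> Y" "x = P *\<^sub>v y" using P(2) by (metis imageE)
    obtain u w where uw: "u \<in> U" "w \<in> W" "y = u + w" using span y by blast
    have wY: "w \<in> Y" and Pw: "P *\<^sub>v w = 0\<^sub>v e" using uw(2) P(3) by auto
    have uc: "u \<in> carrier_vec d" and wc: "w \<in> carrier_vec d" using uw UY Yc wY by auto
    have "x = P *\<^sub>v u + P *\<^sub>v w" using y uw P(1) uc wc by (simp add: mult_add_distrib_mat_vec)
    also have "\<dots> = P *\<^sub>v u" using Pw P(1) uc by simp
    finally show "x \<in> (\<lambda>w. P *\<^sub>v w) ` U" using uw by blast
  qed
  have ker: "{w \<in> U. P *\<^sub>v w = 0\<^sub>v e} = U \<inter> W" using P(3) UY by blast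
  show ?thesis unfolding factor_iso_def using P(1,4) img ker UY by blast
qed

lemma preimage_right_inverse:
  fixes P :: "'a::field mat"
  assumes P: "P \<in> carrier_mat e d" and Y: "is_subspace d Y" and surj: "(\<lambda>w. P *\<^sub>v w) ` Y = carrier_vec e"
  shows "\<exists>B\<in>carrier_mat d e. P * B = 1\<^sub>m e \<and> (\<forall>c\<in>carrier_vec e. B *\<^sub>v c \<in> Y)"
proof -
  define pre where "pre j = (SOME x. x \<in> Y \<and> P *\<^sub>v x = unit_vec e j)" for j
  have pre: "pre j \<in> Y \<and> P *\<^sub>v pre j = unit_vec e j" for j
  proof -
    have "unit_vec e j \<in> (\<lambda>w. P *\<^sub>v w) ` Y" using surj by simp
    then obtain x where "x \<in> Y" "P *\<^sub>v x = unit_vec e j" by auto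
    thus ?thesis unfolding pre_def using someI[of "\<lambda>x. x \<in> Y \<and> P *\<^sub>v x = unit_vec e j" x] by blast
  qed
  have Yc: "Y \<subseteq> carrier_vec d" using Y by (simp add: is_subspace_def)
  define B where "B = mat_of_cols d (map pre [0..<e])"
  have B: "B \<in> carrier_mat d e" unfolding B_def using mat_of_cols_carrier(1)[of d "map pre [0..<e]"] by simp
  have colB: "j < e \<Longrightarrow> col B j = pre j" for j
    unfolding B_def using pre Yc by (subst col_mat_of_cols) auto
  have "P * B = 1\<^sub>m e"
  proof (rule eq_matI)
    fix i j assume i: "i < dim_row (1\<^sub>m e :: 'a mat)" and j: "j < dim_col (1\<^sub>m e :: 'a mat)"
    have "(P * B) $$ (i,j) = (P *\<^sub>v pre j) $ i" using i j P B colB by (simp add: mult_mat_index_vec)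
    also have "\<dots> = unit_vec e j $ i" using pre by simp
    finally show "(P * B) $$ (i,j) = 1\<^sub>m e $$ (i,j)" using i j by (simp add: unit_vec_def)
  qed (use P B in auto)
  moreover have "\<forall>c\<in>carrier_vec e. B *\<^sub>v c \<in> Y"
    unfolding B_def using pre by (intro ballI subspace_lincomb[OF Y]) auto
  ultimately show ?thesis using B by blast
qed

lemma fi_map:
  fixes P1 P2 :: "'a::field mat"
  assumes P1: "P1 \<in> carrier_mat e1 d" and P2: "P2 \<in> carrier_mat e2 d" and Y: "is_subspace d Y"
    and surj1: "(\<lambda>w. P1 *\<^sub>v w) ` Y = carrier_vec e1"
    and ker1: "{w \<in> Y. P1 *\<^sub>v w = 0\<^sub>v e1} = X" and ker2: "{w \<in> Y. P2 *\<^sub>v w = 0\<^sub>v e2} = X"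
  shows "\<exists>R\<in>carrier_mat e2 e1. \<forall>w\<in>Y. R *\<^sub>v (P1 *\<^sub>v w) = P2 *\<^sub>v w"
proof -
  obtain B where B: "B \<in> carrier_mat d e1" "P1 * B = 1\<^sub>m e1" "\<forall>c\<in>carrier_vec e1. B *\<^sub>v c \<in> Y"
    using preimage_right_inverse[OF P1 Y surj1] by blast
  have Yc: "Y \<subseteq> carrier_vec d" using Y by (simp add: is_subspace_def)
  have "\<forall>w\<in>Y. (P2 * B) *\<^sub>v (P1 *\<^sub>v w) = P2 *\<^sub>v w"
  proof
    fix w assume w: "w \<in> Y"
    have wc: "w \<in> carrier_vec d" using w Yc by auto
    define c where "c = P1 *\<^sub>v w"
    have c: "c \<in> carrier_vec e1" unfolding c_def using P1 wc by simp
    define u where "u = B *\<^sub>v c"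
    have u: "u \<in> Y" unfolding u_def using B c by auto
    have uc: "u \<in> carrier_vec d" using u Yc by auto
    have "P1 *\<^sub>v u = c" unfolding u_def using B P1 c by (metis assoc_mult_mat_vec one_mult_mat_vec)
    hence "P1 *\<^sub>v (w - u) = 0\<^sub>v e1" using P1 wc uc unfolding c_def by (simp add: mult_minus_distrib_mat_vec)
    moreover have "w - u \<in> Y" by (rule subspace_minus[OF Y w u])
    ultimately have "w - u \<in> X" using ker1 by blast
    hence "P2 *\<^sub>v (w - u) = 0\<^sub>v e2" using ker2 by blast
    hence eq0: "P2 *\<^sub>v w - P2 *\<^sub>v u = 0\<^sub>v e2" using P2 wc uc by (simp add: mult_minus_distrib_mat_vec)
    have "P2 *\<^sub>v w = P2 *\<^sub>v u"
    proof (rule eq_vecI)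
      fix i assume i: "i < dim_vec (P2 *\<^sub>v u)"
      hence "(P2 *\<^sub>v w - P2 *\<^sub>v u) $ i = 0" using eq0 P2 by simp
      thus "(P2 *\<^sub>v w) $ i = (P2 *\<^sub>v u) $ i" using i P2 by simp
    qed (use P2 in simp)
    also have "\<dots> = (P2 * B) *\<^sub>v c" unfolding u_def using P2 B c by (simp add: assoc_mult_mat_vec)
    finally show "(P2 * B) *\<^sub>v (P1 *\<^sub>v w) = P2 *\<^sub>v w" unfolding c_def by simp
  qed
  moreover have "P2 * B \<in> carrier_mat e2 e1" using P2 B by simp
  ultimately show ?thesis by blast
qed

lemma fi_iso:
  fixes \<rho> :: "'g \<Rightarrow> 'a::field mat"
  assumes f1: "factor_iso G d \<rho> X Y e1 \<sigma>1" and f2: "factor_iso G d \<rho> X Y e2 \<sigma>2"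
    and c1: "rcar G e1 \<sigma>1" and c2: "rcar G e2 \<sigma>2" and r: "rcar G d \<rho>"
    and Y: "is_submodule G d \<rho> Y"
  shows "rep_iso G e1 \<sigma>1 e2 \<sigma>2"
proof -
  have Ys: "is_subspace d Y" and Yinv: "\<forall>g\<in>carrier G. \<forall>w\<in>Y. \<rho> g *\<^sub>v w \<in> Y"
    using Y by (auto simp: is_submodule_def)
  have Yc: "Y \<subseteq> carrier_vec d" using Ys by (simp add: is_subspace_def)
  obtain P1 where P1: "P1 \<in> carrier_mat e1 d" "(\<lambda>w. P1 *\<^sub>v w) ` Y = carrier_vec e1"
    "{w \<in> Y. P1 *\<^sub>v w = 0\<^sub>v e1} = X" "\<forall>g\<in>carrier G. \<forall>w\<in>Y. P1 *\<^sub>v (\<rho> g *\<^sub>v w) = \<sigma>1 g *\<^sub>v (P1 *\<^sub>v w)"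
    using f1 unfolding factor_iso_def by blast
  obtain P2 where P2: "P2 \<in> carrier_mat e2 d" "(\<lambda>w. P2 *\<^sub>v w) ` Y = carrier_vec e2"
    "{w \<in> Y. P2 *\<^sub>v w = 0\<^sub>v e2} = X" "\<forall>g\<in>carrier G. \<forall>w\<in>Y. P2 *\<^sub>v (\<rho> g *\<^sub>v w) = \<sigma>2 g *\<^sub>v (P2 *\<^sub>v w)"
    using f2 unfolding factor_iso_def by blast
  obtain R where R: "R \<in> carrier_mat e2 e1" "\<forall>w\<in>Y. R *\<^sub>v (P1 *\<^sub>v w) = P2 *\<^sub>v w"
    using fi_map[OF P1(1) P2(1) Ys P1(2) P1(3) P2(3)] by blast
  obtain R' where R': "R' \<in> carrier_mat e1 e2" "\<forall>w\<in>Y. R' *\<^sub>v (P2 *\<^sub>v w) = P1 *\<^sub>v w"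
    using fi_map[OF P2(1) P1(1) Ys P2(2) P2(3) P1(3)] by blast
  have pre1: "\<exists>w\<in>Y. x = P1 *\<^sub>v w" if "x \<in> carrier_vec e1" for x using P1(2) that by (metis imageE)
  have pre2: "\<exists>w\<in>Y. x = P2 *\<^sub>v w" if "x \<in> carrier_vec e2" for x using P2(2) that by (metis imageE)
  have RR': "R * R' = 1\<^sub>m e2"
  proof (rule mat_eq_by_vec)
    fix x :: "'a vec" assume x: "x \<in> carrier_vec e2"
    then obtain w where w: "w \<in> Y" "x = P2 *\<^sub>v w" using pre2 by blast
    have "(R * R') *\<^sub>v x = R *\<^sub>v (R' *\<^sub>v x)" using R(1) R'(1) x by (simp add: assoc_mult_mat_vec)
    also have "\<dots> = x" using w R R' by simp
    finally show "(R * R') *\<^sub>v x = 1\<^sub>m e2 *\<^sub>v x" using x by simp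
  qed (use R R' in auto)
  have R'R: "R' * R = 1\<^sub>m e1"
  proof (rule mat_eq_by_vec)
    fix x :: "'a vec" assume x: "x \<in> carrier_vec e1"
    then obtain w where w: "w \<in> Y" "x = P1 *\<^sub>v w" using pre1 by blast
    have "(R' * R) *\<^sub>v x = R' *\<^sub>v (R *\<^sub>v x)" using R(1) R'(1) x by (simp add: assoc_mult_mat_vec)
    also have "\<dots> = x" using w R R' by simp
    finally show "(R' * R) *\<^sub>v x = 1\<^sub>m e1 *\<^sub>v x" using x by simp
  qed (use R R' in auto)
  have "e2 \<le> e1" using inj_mat_le[OF R'(1) right_inverse_inj[OF R(1) R'(1) RR']] .
  moreover have "e1 \<le> e2" using inj_mat_le[OF R(1) right_inverse_inj[OF R'(1) R(1) R'R]] .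
  ultimately have e: "e1 = e2" by simp
  have inv: "invertible_mat R"
    unfolding invertible_mat_def inverts_mat_def using R(1) R'(1) RR' R'R e
    by (intro conjI exI[of _ R']) auto
  have comm: "\<forall>g\<in>carrier G. R * \<sigma>1 g = \<sigma>2 g * R"
  proof
    fix g assume g: "g \<in> carrier G"
    have s1: "\<sigma>1 g \<in> carrier_mat e1 e1" and s2: "\<sigma>2 g \<in> carrier_mat e2 e2" and rg: "\<rho> g \<in> carrier_mat d d"
      using c1 c2 r g by (auto simp: rcar_def)
    show "R * \<sigma>1 g = \<sigma>2 g * R"
    proof (rule mat_eq_by_vec)
      fix x :: "'a vec" assume x: "x \<in> carrier_vec e1"
      then obtain w where w: "w \<in> Y" "x = P1 *\<^sub>v w" using pre1 by blast
      have gw: "\<rho> g *\<^sub>v w \<in> Y" using Yinv g w by blast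
      have "(R * \<sigma>1 g) *\<^sub>v x = R *\<^sub>v (\<sigma>1 g *\<^sub>v (P1 *\<^sub>v w))" using R(1) s1 x w by (simp add: assoc_mult_mat_vec)
      also have "\<dots> = R *\<^sub>v (P1 *\<^sub>v (\<rho> g *\<^sub>v w))" using P1(4) g w by simp
      also have "\<dots> = P2 *\<^sub>v (\<rho> g *\<^sub>v w)" using R(2) gw by simp
      also have "\<dots> = \<sigma>2 g *\<^sub>v (P2 *\<^sub>v w)" using P2(4) g w by simp
      also have "\<dots> = \<sigma>2 g *\<^sub>v (R *\<^sub>v x)" using R(2) w by simp
      also have "\<dots> = (\<sigma>2 g * R) *\<^sub>v x" using R(1) s2 x by (simp add: assoc_mult_mat_vec)
      finally show "(R * \<sigma>1 g) *\<^sub>v x = (\<sigma>2 g * R) *\<^sub>v x" .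
    qed (use R s1 s2 e in auto)
  qed
  show ?thesis unfolding rep_iso_def using e R(1) inv comm by auto
qed

lemma fi_compose:
  fixes \<rho> :: "'g \<Rightarrow> 'a::field mat"
  assumes fi: "factor_iso G d \<rho> X Y e \<sigma>" and iso: "rep_iso G e \<sigma> e' \<sigma>'"
    and c: "rcar G e \<sigma>" and c': "rcar G e' \<sigma>'" and Yc: "Y \<subseteq> carrier_vec d" and r: "rcar G d \<rho>"
  shows "factor_iso G d \<rho> X Y e' \<sigma>'"
proof -
  obtain P where P: "P \<in> carrier_mat e d" "(\<lambda>w. P *\<^sub>v w) ` Y = carrier_vec e"
    "{w \<in> Y. P *\<^sub>v w = 0\<^sub>v e} = X" "\<forall>g\<in>carrier G. \<forall>w\<in>Y. P *\<^sub>v (\<rho> g *\<^sub>v w) = \<sigma> g *\<^sub>v (P *\<^sub>v w)"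
    using fi unfolding factor_iso_def by blast
  obtain Q where e: "e = e'" and Q: "Q \<in> carrier_mat e e" "invertible_mat Q" "\<forall>g\<in>carrier G. Q * \<sigma> g = \<sigma>' g * Q"
    using iso unfolding rep_iso_def by blast
  obtain Q' where Q'0: "Q * Q' = 1\<^sub>m e" "Q' * Q = 1\<^sub>m (dim_row Q')"
    using Q(1,2) unfolding invertible_mat_def inverts_mat_def by auto
  have "dim_col (Q' * Q) = e" using Q(1) by simp
  hence "dim_row Q' = e" using Q'0(2) by (metis index_one_mat(3))
  hence Q': "Q * Q' = 1\<^sub>m e" "Q' * Q = 1\<^sub>m e" using Q'0 by auto
  have Q'c: "Q' \<in> carrier_mat e e"
    using Q(1) Q' by (metis carrier_matD(1,2) carrier_matI index_mult_mat(2,3) index_one_mat(2,3))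
  have QP: "(Q * P) *\<^sub>v w = Q *\<^sub>v (P *\<^sub>v w)" if "w \<in> Y" for w
    using that Yc Q(1) P(1) by (intro assoc_mult_mat_vec) auto
  show ?thesis unfolding factor_iso_def
  proof (intro bexI[of _ "Q * P"] conjI)
    show "Q * P \<in> carrier_mat e' d" using Q(1) P(1) e by simp
    show "(\<lambda>w. (Q * P) *\<^sub>v w) ` Y = carrier_vec e'"
    proof (intro equalityI subsetI)
      fix x assume "x \<in> (\<lambda>w. (Q * P) *\<^sub>v w) ` Y"
      moreover have "Q * P \<in> carrier_mat e' d" using Q(1) P(1) e by simp
      ultimately show "x \<in> carrier_vec e'" by auto
    next
      fix x :: "'a vec" assume x: "x \<in> carrier_vec e'"
      have "Q' *\<^sub>v x \<in> carrier_vec e" using Q'c by simp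
      then obtain w where w: "w \<in> Y" "Q' *\<^sub>v x = P *\<^sub>v w" using P(2) by (metis imageE)
      have "(Q * P) *\<^sub>v w = Q *\<^sub>v (Q' *\<^sub>v x)" using QP[OF w(1)] w(2) by simp
      also have "\<dots> = x" using Q(1) Q'c Q'(1) x e by (metis assoc_mult_mat_vec one_mult_mat_vec)
      finally show "x \<in> (\<lambda>w. (Q * P) *\<^sub>v w) ` Y" using w(1) by force
    qed
    show "{w \<in> Y. (Q * P) *\<^sub>v w = 0\<^sub>v e'} = X"
    proof -
      have "(Q * P) *\<^sub>v w = 0\<^sub>v e' \<longleftrightarrow> P *\<^sub>v w = 0\<^sub>v e" if w: "w \<in> Y" for w
      proof
        assume "(Q * P) *\<^sub>v w = 0\<^sub>v e'"
        hence "Q' *\<^sub>v (Q *\<^sub>v (P *\<^sub>v w)) = Q' *\<^sub>v 0\<^sub>v e" using QP[OF w] e by simp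
        moreover have "Q' *\<^sub>v (Q *\<^sub>v (P *\<^sub>v w)) = P *\<^sub>v w"
          using Q(1) Q'c Q'(2) P(1) by (metis assoc_mult_mat_vec mat_vec_carrier_gen one_mult_mat_vec)
        moreover have "Q' *\<^sub>v 0\<^sub>v e = 0\<^sub>v e" using Q'c by (metis carrier_matD(1,2) mat_vec_zero_right)
        ultimately show "P *\<^sub>v w = 0\<^sub>v e" by simp
      next
        assume "P *\<^sub>v w = 0\<^sub>v e"
        thus "(Q * P) *\<^sub>v w = 0\<^sub>v e'" using QP[OF w] Q(1) e by (metis carrier_matD(1,2) mat_vec_zero_right)
      qed
      thus ?thesis using P(3) by blast
    qed
    show "\<forall>g\<in>carrier G. \<forall>w\<in>Y. (Q * P) *\<^sub>v (\<rho> g *\<^sub>v w) = \<sigma>' g *\<^sub>v ((Q * P) *\<^sub>v w)"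
    proof (intro ballI)
      fix g w assume g: "g \<in> carrier G" and w: "w \<in> Y"
      have s: "\<sigma> g \<in> carrier_mat e e" and s': "\<sigma>' g \<in> carrier_mat e e" using c c' g e by (auto simp: rcar_def)
      have wc: "w \<in> carrier_vec d" using w Yc by auto
      have rg: "\<rho> g \<in> carrier_mat d d" using r g by (simp add: rcar_def)
      have "(Q * P) *\<^sub>v (\<rho> g *\<^sub>v w) = Q *\<^sub>v (P *\<^sub>v (\<rho> g *\<^sub>v w))"
        using Q(1) P(1) rg wc by (intro assoc_mult_mat_vec) auto
      also have "\<dots> = Q *\<^sub>v (\<sigma> g *\<^sub>v (P *\<^sub>v w))" using P(4) g w by simp
      also have "\<dots> = (Q * \<sigma> g) *\<^sub>v (P *\<^sub>v w)" using Q(1) s P(1) by (intro assoc_mult_mat_vec[symmetric]) auto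
      also have "\<dots> = (\<sigma>' g * Q) *\<^sub>v (P *\<^sub>v w)" using Q(3) g by simp
      also have "\<dots> = \<sigma>' g *\<^sub>v ((Q * P) *\<^sub>v w)" using Q(1) s' P(1) QP[OF w] by (simp add: assoc_mult_mat_vec)
      finally show "(Q * P) *\<^sub>v (\<rho> g *\<^sub>v w) = \<sigma>' g *\<^sub>v ((Q * P) *\<^sub>v w)" .
    qed
  qed
qed

lemma fi_rep:
  fixes \<rho> :: "'g \<Rightarrow> 'a::field mat"
  assumes G: "monoid G" and fi: "factor_iso G d \<rho> X Y e \<sigma>" and c: "rcar G e \<sigma>" and r: "rcar G d \<rho>"
    and rep: "is_rep G d \<rho>" and Y: "is_submodule G d \<rho> Y"
  shows "is_rep G e \<sigma>"
proof -
  have Ys: "is_subspace d Y" and Yinv: "\<forall>g\<in>carrier G. \<forall>w\<in>Y. \<rho> g *\<^sub>v w \<in> Y"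
    using Y by (auto simp: is_submodule_def)
  have Yc: "Y \<subseteq> carrier_vec d" using Ys by (simp add: is_subspace_def)
  obtain P where P: "P \<in> carrier_mat e d" "(\<lambda>w. P *\<^sub>v w) ` Y = carrier_vec e"
    "{w \<in> Y. P *\<^sub>v w = 0\<^sub>v e} = X" "\<forall>g\<in>carrier G. \<forall>w\<in>Y. P *\<^sub>v (\<rho> g *\<^sub>v w) = \<sigma> g *\<^sub>v (P *\<^sub>v w)"
    using fi unfolding factor_iso_def by blast
  have pre: "\<exists>w\<in>Y. x = P *\<^sub>v w" if "x \<in> carrier_vec e" for x using P(2) that by (metis imageE)
  have one: "\<one>\<^bsub>G\<^esub> \<in> carrier G" using G by (simp add: monoid.one_closed)
  have "\<sigma> \<one>\<^bsub>G\<^esub> = 1\<^sub>m e"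
  proof (rule mat_eq_by_vec)
    fix x :: "'a vec" assume x: "x \<in> carrier_vec e"
    then obtain w where w: "w \<in> Y" "x = P *\<^sub>v w" using pre by blast
    have "\<sigma> \<one>\<^bsub>G\<^esub> *\<^sub>v x = P *\<^sub>v (\<rho> \<one>\<^bsub>G\<^esub> *\<^sub>v w)" using P(4) one w by simp
    also have "\<dots> = P *\<^sub>v w" using rep w Yc by (auto simp: is_rep_def)
    finally show "\<sigma> \<one>\<^bsub>G\<^esub> *\<^sub>v x = 1\<^sub>m e *\<^sub>v x" using w x by simp
  qed (use c one in \<open>auto simp: rcar_def\<close>)
  moreover have "\<sigma> (g \<otimes>\<^bsub>G\<^esub> h) = \<sigma> g * \<sigma> h" if g: "g \<in> carrier G" and h: "h \<in> carrier G" for g h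
  proof (rule mat_eq_by_vec)
    have gh: "g \<otimes>\<^bsub>G\<^esub> h \<in> carrier G" using G g h by (simp add: monoid.m_closed)
    show "\<sigma> (g \<otimes>\<^bsub>G\<^esub> h) \<in> carrier_mat e e" using c gh by (simp add: rcar_def)
    show "\<sigma> g * \<sigma> h \<in> carrier_mat e e" using c g h unfolding rcar_def by (meson mult_carrier_mat)
    fix x :: "'a vec" assume x: "x \<in> carrier_vec e"
    then obtain w where w: "w \<in> Y" "x = P *\<^sub>v w" using pre by blast
    have wc: "w \<in> carrier_vec d" using w Yc by auto
    have hw: "\<rho> h *\<^sub>v w \<in> Y" using Yinv h w by blast
    have rg: "\<rho> g \<in> carrier_mat d d" and rh: "\<rho> h \<in> carrier_mat d d" using r g h by (auto simp: rcar_def)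
    have sg: "\<sigma> g \<in> carrier_mat e e" and sh: "\<sigma> h \<in> carrier_mat e e" using c g h by (auto simp: rcar_def)
    have "\<sigma> (g \<otimes>\<^bsub>G\<^esub> h) *\<^sub>v x = P *\<^sub>v (\<rho> (g \<otimes>\<^bsub>G\<^esub> h) *\<^sub>v w)" using P(4) gh w by simp
    also have "\<rho> (g \<otimes>\<^bsub>G\<^esub> h) *\<^sub>v w = \<rho> g *\<^sub>v (\<rho> h *\<^sub>v w)"
      using rep g h rg rh wc by (simp add: is_rep_def assoc_mult_mat_vec[of _ d d _ d])
    also have "P *\<^sub>v (\<rho> g *\<^sub>v (\<rho> h *\<^sub>v w)) = \<sigma> g *\<^sub>v (P *\<^sub>v (\<rho> h *\<^sub>v w))" using P(4) g hw by simp
    also have "\<dots> = \<sigma> g *\<^sub>v (\<sigma> h *\<^sub>v x)" using P(4) h w by simp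
    also have "\<dots> = (\<sigma> g * \<sigma> h) *\<^sub>v x" using sg sh x by (simp add: assoc_mult_mat_vec)
    finally show "\<sigma> (g \<otimes>\<^bsub>G\<^esub> h) *\<^sub>v x = (\<sigma> g * \<sigma> h) *\<^sub>v x" .
  qed
  ultimately show ?thesis using c unfolding is_rep_def rcar_def by blast
qed

lemma fi_simple:
  fixes \<rho> :: "'g \<Rightarrow> 'a::field mat"
  assumes G: "monoid G" and fi: "factor_iso G d \<rho> X Y e \<sigma>" and c: "rcar G e \<sigma>" and r: "rcar G d \<rho>"
    and rep: "is_rep G d \<rho>" and Y: "is_submodule G d \<rho> Y" and X: "is_submodule G d \<rho> X"
    and strict: "X \<subset> Y"
    and max: "\<forall>U. is_submodule G d \<rho> U \<and> X \<subseteq> U \<and> U \<subseteq> Y \<longrightarrow> U = X \<or> U = Y"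
  shows "is_simple G e \<sigma>"
proof -
  have Ys: "is_subspace d Y" and Yinv: "\<forall>g\<in>carrier G. \<forall>w\<in>Y. \<rho> g *\<^sub>v w \<in> Y"
    using Y by (auto simp: is_submodule_def)
  have Yc: "Y \<subseteq> carrier_vec d" using Ys by (simp add: is_subspace_def)
  obtain P where P: "P \<in> carrier_mat e d" "(\<lambda>w. P *\<^sub>v w) ` Y = carrier_vec e"
    "{w \<in> Y. P *\<^sub>v w = 0\<^sub>v e} = X" "\<forall>g\<in>carrier G. \<forall>w\<in>Y. P *\<^sub>v (\<rho> g *\<^sub>v w) = \<sigma> g *\<^sub>v (P *\<^sub>v w)"
    using fi unfolding factor_iso_def by blast
  have isrep: "is_rep G e \<sigma>" by (rule fi_rep[OF G fi c r rep Y])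
  have epos: "e > 0"
  proof (rule ccontr)
    assume "\<not> e > 0" hence e0: "e = 0" by simp
    have "Y \<subseteq> X"
    proof
      fix w assume w: "w \<in> Y"
      have "P *\<^sub>v w = 0\<^sub>v e" using P(1) e0 by (intro eq_vecI) auto
      thus "w \<in> X" using P(3) w by blast
    qed
    thus False using strict by blast
  qed
  have "\<forall>Z. is_submodule G e \<sigma> Z \<longrightarrow> Z = {0\<^sub>v e} \<or> Z = carrier_vec e"
  proof (intro allI impI)
    fix Z assume Z: "is_submodule G e \<sigma> Z"
    have Zs: "is_subspace e Z" and Zinv: "\<forall>g\<in>carrier G. \<forall>z\<in>Z. \<sigma> g *\<^sub>v z \<in> Z"
      using Z by (auto simp: is_submodule_def)
    define U where "U = {w \<in> Y. P *\<^sub>v w \<in> Z}"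
    have Us: "is_subspace d U" unfolding is_subspace_def
    proof (intro conjI ballI allI)
      show "U \<subseteq> carrier_vec d" using Yc by (auto simp: U_def)
      have "0\<^sub>v d \<in> Y" using Ys by (simp add: is_subspace_def)
      moreover have "P *\<^sub>v 0\<^sub>v d = 0\<^sub>v e" using P(1) by (metis carrier_matD(1,2) mat_vec_zero_right)
      ultimately show "0\<^sub>v d \<in> U" using Zs by (simp add: U_def is_subspace_def)
    next
      fix v w assume v: "v \<in> U" and w: "w \<in> U"
      have vc: "v \<in> carrier_vec d" and wc: "w \<in> carrier_vec d" using v w Yc by (auto simp: U_def)
      have "P *\<^sub>v (v + w) = P *\<^sub>v v + P *\<^sub>v w" using P(1) vc wc by (simp add: mult_add_distrib_mat_vec)
      thus "v + w \<in> U" using v w Ys Zs by (auto simp: U_def is_subspace_def)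
    next
      fix a :: 'a and v assume v: "v \<in> U"
      have vc: "v \<in> carrier_vec d" using v Yc by (auto simp: U_def)
      have "P *\<^sub>v (a \<cdot>\<^sub>v v) = a \<cdot>\<^sub>v (P *\<^sub>v v)" using P(1) vc by (simp add: mult_mat_vec)
      thus "a \<cdot>\<^sub>v v \<in> U" using v Ys Zs by (auto simp: U_def is_subspace_def)
    qed
    have Um: "is_submodule G d \<rho> U" unfolding is_submodule_def
    proof (intro conjI Us ballI)
      fix g w assume g: "g \<in> carrier G" and w: "w \<in> U"
      have "P *\<^sub>v (\<rho> g *\<^sub>v w) = \<sigma> g *\<^sub>v (P *\<^sub>v w)" using P(4) g w by (auto simp: U_def)
      thus "\<rho> g *\<^sub>v w \<in> U" using w g Yinv Zinv by (auto simp: U_def)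
    qed
    have XU: "X \<subseteq> U" using P(3) Zs by (auto simp: U_def is_subspace_def)
    have UY: "U \<subseteq> Y" by (auto simp: U_def)
    from max Um XU UY have "U = X \<or> U = Y" by blast
    thus "Z = {0\<^sub>v e} \<or> Z = carrier_vec e"
    proof
      assume UX: "U = X"
      have "Z \<subseteq> {0\<^sub>v e}"
      proof
        fix z assume z: "z \<in> Z"
        have "z \<in> carrier_vec e" using z Zs by (auto simp: is_subspace_def)
        then obtain w where w: "w \<in> Y" "z = P *\<^sub>v w" using P(2) by (metis imageE)
        hence "w \<in> U" using z by (simp add: U_def)
        hence "w \<in> X" using UX by simp
        thus "z \<in> {0\<^sub>v e}" using P(3) w by auto
      qed
      moreover have "0\<^sub>v e \<in> Z" using Zs by (simp add: is_subspace_def)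
      ultimately show ?thesis by auto
    next
      assume UY: "U = Y"
      have "carrier_vec e \<subseteq> Z"
      proof
        fix z :: "'a vec" assume "z \<in> carrier_vec e"
        then obtain w where w: "w \<in> Y" "z = P *\<^sub>v w" using P(2) by (metis imageE)
        hence "w \<in> U" using UY by simp
        thus "z \<in> Z" using w by (simp add: U_def)
      qed
      moreover have "Z \<subseteq> carrier_vec e" using Zs by (simp add: is_subspace_def)
      ultimately show ?thesis by auto
    qed
  qed
  thus ?thesis unfolding is_simple_def using isrep epos by blast
qed


lemma carrier_subspace: "is_subspace d (carrier_vec d :: 'a::field vec set)"
  unfolding is_subspace_def by auto

lemma submodule_subspace: "is_submodule G d \<rho> W \<Longrightarrow> is_subspace d W"
  by (simp add: is_submodule_def)

lemma fi_exists:
  fixes \<rho> :: "'g \<Rightarrow> 'a::field mat"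
  assumes r: "rcar G d \<rho>" and X: "is_submodule G d \<rho> X" and Y: "is_submodule G d \<rho> Y" and XY: "X \<subseteq> Y"
  shows "\<exists>e \<sigma>. factor_iso G d \<rho> X Y e \<sigma> \<and> rcar G e \<sigma>"
proof -
  define Xs where "Xs i = (if i = 0 then X else if i = 1 then Y else carrier_vec d)" for i :: nat
  have sub: "\<forall>i\<le>2. is_subspace d (Xs i)"
    using X Y carrier_subspace by (auto simp: Xs_def is_submodule_def)
  have Yc: "Y \<subseteq> carrier_vec d" using Y by (auto simp: is_submodule_def is_subspace_def)
  have mono: "\<forall>i<2. Xs i \<subseteq> Xs (Suc i)" using XY Yc by (auto simp: Xs_def less_2_cases_iff)
  obtain T Ti a where Ta: "T \<in> carrier_mat d d" "Ti \<in> carrier_mat d d" "T * Ti = 1\<^sub>m d" "Ti * T = 1\<^sub>m d"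
    "\<forall>i\<le>2. a i \<le> d \<and> Xs i = coordsub d Ti (a i)" "\<forall>i<2. a i \<le> a (Suc i)" "a 2 = d"
    using adapted_T[OF sub mono] by (auto simp: Xs_def)
  interpret adapted d T Ti using Ta by unfold_locales auto
  have X': "X = coordsub d Ti (a 0)" and Y': "Y = coordsub d Ti (a 1)" using Ta(5) by (auto simp: Xs_def dest: spec[of _ 0] spec[of _ 1])
  have ab: "a 0 \<le> a 1" "a 1 \<le> d" using Ta(5,6) by auto
  have "factor_iso G d \<rho> (coordsub d Ti (a 0)) (coordsub d Ti (a 1)) (a 1 - a 0) (\<lambda>g. blk (Ti * \<rho> g * T) (a 0) (a 1))"
    by (rule fi_from_T[OF r ab]) (use X Y X' Y' in \<open>auto simp: is_submodule_def\<close>)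
  moreover have "rcar G (a 1 - a 0) (\<lambda>g. blk (Ti * \<rho> g * T) (a 0) (a 1))" by (simp add: rcar_def)
  ultimately show ?thesis using X' Y' by auto
qed

definition mu :: "nat \<Rightarrow> 'a::field vec set \<Rightarrow> nat" where
  "mu d W = Max {length bs | bs. indep d bs \<and> set bs \<subseteq> W}"

lemma mu_set_finite: "finite {length bs | bs. indep d bs \<and> set bs \<subseteq> (W :: 'a::field vec set)}"
proof (rule finite_subset[of _ "{..d}"])
  show "{length bs | bs. indep d bs \<and> set bs \<subseteq> W} \<subseteq> {..d}"
  proof
    fix n assume "n \<in> {length bs | bs. indep d bs \<and> set bs \<subseteq> W}"
    then obtain bs :: "'a vec list" where "n = length bs" "indep d bs" by blast
    thus "n \<in> {..d}" using indep_length by auto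
  qed
qed simp

lemma mu_ge: "indep d bs \<Longrightarrow> set bs \<subseteq> W \<Longrightarrow> length bs \<le> mu d (W :: 'a::field vec set)"
  unfolding mu_def by (rule Max_ge[OF mu_set_finite]) blast

lemma mu_attained: "\<exists>bs. indep d bs \<and> set bs \<subseteq> W \<and> length bs = mu d (W :: 'a::field vec set)"
proof -
  have "{length bs | bs. indep d bs \<and> set bs \<subseteq> W} \<noteq> {}" using indep_Nil[of d] by force
  from Max_in[OF mu_set_finite this] show ?thesis unfolding mu_def by auto
qed

lemma mu_le: "mu d (W :: 'a::field vec set) \<le> d"
proof -
  obtain bs :: "'a vec list" where "indep d bs" "length bs = mu d W" using mu_attained[of d W] by blast
  thus ?thesis using indep_length by metis
qed

lemma mu_strict:
  fixes X Y :: "'a::field vec set"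
  assumes X: "is_subspace d X" and Y: "is_subspace d Y" and XY: "X \<subset> Y"
  shows "mu d X < mu d Y"
proof -
  obtain bs where bs: "indep d bs" "set bs \<subseteq> X" "length bs = mu d X" using mu_attained by blast
  have "X \<subseteq> img d bs"
  proof
    fix x assume x: "x \<in> X"
    show "x \<in> img d bs"
    proof (rule ccontr)
      assume "x \<notin> img d bs"
      hence "indep d (bs @ [x])" using indep_snoc[OF bs(1)] x X by (auto simp: is_subspace_def)
      hence "length (bs @ [x]) \<le> mu d X" by (rule mu_ge) (use bs(2) x in auto)
      thus False using bs(3) by simp
    qed
  qed
  hence imgX: "img d bs = X" using img_subspace_sub[OF X bs(2)] by blast
  obtain y where y: "y \<in> Y" "y \<notin> X" using XY by blast
  have "indep d (bs @ [y])" using indep_snoc[OF bs(1)] y Y imgX by (auto simp: is_subspace_def)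
  hence "length (bs @ [y]) \<le> mu d Y" by (rule mu_ge) (use bs(2) y XY in auto)
  thus ?thesis using bs(3) by simp
qed

definition ser :: "('g, 'm) monoid_scheme \<Rightarrow> nat \<Rightarrow> ('g \<Rightarrow> 'f::field mat) \<Rightarrow> 'f vec set \<Rightarrow> 'f vec set \<Rightarrow> nat \<Rightarrow> (nat \<Rightarrow> 'f vec set) \<Rightarrow> bool" where
  "ser G d \<rho> X Y k Ws \<longleftrightarrow> Ws 0 = X \<and> Ws k = Y \<and> (\<forall>i\<le>k. is_submodule G d \<rho> (Ws i)) \<and>
     (\<forall>i<k. Ws i \<subset> Ws (Suc i) \<and>
        (\<forall>U. is_submodule G d \<rho> U \<and> Ws i \<subseteq> U \<and> U \<subseteq> Ws (Suc i) \<longrightarrow> U = Ws i \<or> U = Ws (Suc i)))"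

lemma comp_ser: "is_comp_series G d \<rho> k Ws \<longleftrightarrow> ser G d \<rho> {0\<^sub>v d} (carrier_vec d) k Ws"
  unfolding is_comp_series_def ser_def by simp

lemma ser_mono: "ser G d \<rho> X Y k Ws \<Longrightarrow> i \<le> j \<Longrightarrow> j \<le> k \<Longrightarrow> Ws i \<subseteq> Ws j"
proof (induction j)
  case 0 thus ?case by simp
next
  case (Suc j)
  show ?case
  proof (cases "i = Suc j")
    case False
    hence "Ws i \<subseteq> Ws j" using Suc by simp
    moreover have "Ws j \<subseteq> Ws (Suc j)"
    proof -
      have "j < k" using Suc.prems by simp
      thus ?thesis using Suc.prems(1) unfolding ser_def by blast
    qed
    ultimately show ?thesis by blast
  qed simp
qed

lemma ser_prefix: "ser G d \<rho> X Y k Ws \<Longrightarrow> m \<le> k \<Longrightarrow> ser G d \<rho> X (Ws m) m Ws"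
  unfolding ser_def by auto

lemma ser_extend:
  assumes s: "ser G d \<rho> X Z k Ws" and Y: "is_submodule G d \<rho> Y" and ZY: "Z \<subset> Y"
    and max: "\<forall>U. is_submodule G d \<rho> U \<and> Z \<subseteq> U \<and> U \<subseteq> Y \<longrightarrow> U = Z \<or> U = Y"
  shows "ser G d \<rho> X Y (Suc k) (Ws(Suc k := Y))"
proof -
  have s': "Ws 0 = X" "Ws k = Z" "\<forall>i\<le>k. is_submodule G d \<rho> (Ws i)"
    "\<forall>i<k. Ws i \<subset> Ws (Suc i) \<and> (\<forall>U. is_submodule G d \<rho> U \<and> Ws i \<subseteq> U \<and> U \<subseteq> Ws (Suc i) \<longrightarrow> U = Ws i \<or> U = Ws (Suc i))"
    using s unfolding ser_def by auto
  let ?W = "Ws(Suc k := Y)"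
  have 1: "?W 0 = X" using s' by simp
  have 2: "?W (Suc k) = Y" by simp
  have 3: "\<forall>i\<le>Suc k. is_submodule G d \<rho> (?W i)"
  proof (intro allI impI)
    fix i assume "i \<le> Suc k"
    thus "is_submodule G d \<rho> (?W i)" using s'(3) Y by (cases "i = Suc k") auto
  qed
  have 4: "\<forall>i<Suc k. ?W i \<subset> ?W (Suc i) \<and> (\<forall>U. is_submodule G d \<rho> U \<and> ?W i \<subseteq> U \<and> U \<subseteq> ?W (Suc i) \<longrightarrow> U = ?W i \<or> U = ?W (Suc i))"
  proof (intro allI impI)
    fix i assume i: "i < Suc k"
    show "?W i \<subset> ?W (Suc i) \<and> (\<forall>U. is_submodule G d \<rho> U \<and> ?W i \<subseteq> U \<and> U \<subseteq> ?W (Suc i) \<longrightarrow> U = ?W i \<or> U = ?W (Suc i))"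
    proof (cases "i = k")
      case True thus ?thesis using s'(2) ZY max by simp
    next
      case False hence "i < k" using i by simp
      thus ?thesis using s'(4) by simp
    qed
  qed
  show ?thesis unfolding ser_def using 1 2 3 4 by blast
qed

lemma ser_exists:
  fixes \<rho> :: "'g \<Rightarrow> 'a::field mat"
  assumes X: "is_submodule G d \<rho> X" and Y: "is_submodule G d \<rho> Y" and XY: "X \<subseteq> Y"
  shows "\<exists>k Ws. ser G d \<rho> X Y k Ws"
  using Y XY
proof (induction "mu d Y" arbitrary: Y rule: less_induct)
  case less
  show ?case
  proof (cases "X = Y")
    case True
    thus ?thesis using X by (intro exI[of _ 0] exI[of _ "\<lambda>_. X"]) (auto simp: ser_def)
  next
    case False
    define S where "S = {Z. is_submodule G d \<rho> Z \<and> X \<subseteq> Z \<and> Z \<subset> Y}"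
    have XS: "X \<in> S" using X False less.prems by (auto simp: S_def)
    have "\<forall>Z. Z \<in> S \<longrightarrow> mu d Z < Suc d" using mu_le by (metis less_Suc_eq_le)
    from ex_has_greatest_nat[of "\<lambda>Z. Z \<in> S", OF XS this]
    obtain Z where Z: "Z \<in> S" "\<forall>Z'. Z' \<in> S \<longrightarrow> mu d Z' \<le> mu d Z" by blast
    have Zm: "is_submodule G d \<rho> Z" and XZ: "X \<subseteq> Z" and ZY: "Z \<subset> Y" using Z(1) by (auto simp: S_def)
    have max: "\<forall>U. is_submodule G d \<rho> U \<and> Z \<subseteq> U \<and> U \<subseteq> Y \<longrightarrow> U = Z \<or> U = Y"
    proof (intro allI impI)
      fix U assume U: "is_submodule G d \<rho> U \<and> Z \<subseteq> U \<and> U \<subseteq> Y"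
      show "U = Z \<or> U = Y"
      proof (rule ccontr)
        assume ne: "\<not> (U = Z \<or> U = Y)"
        hence "U \<in> S" using U XZ by (auto simp: S_def)
        hence "mu d U \<le> mu d Z" using Z(2) by blast
        moreover have "mu d Z < mu d U" using mu_strict[of d Z U] U Zm ne by (auto simp: is_submodule_def)
        ultimately show False by simp
      qed
    qed
    have "mu d Z < mu d Y" using mu_strict[of d Z Y] Zm less.prems ZY by (auto simp: is_submodule_def)
    from less.hyps[OF this Zm XZ] obtain k Ws where "ser G d \<rho> X Z k Ws" by blast
    from ser_extend[OF this less.prems(1) ZY max] show ?thesis by blast
  qed
qed


definition cnt :: "('g, 'm) monoid_scheme \<Rightarrow> nat \<Rightarrow> ('g \<Rightarrow> 'f::field mat) \<Rightarrow> nat \<Rightarrow> (nat \<Rightarrow> 'f vec set) \<Rightarrow> nat \<Rightarrow> ('g \<Rightarrow> 'f mat) \<Rightarrow> nat" where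
  "cnt G d \<rho> k Ws e \<sigma> = card {i. i < k \<and> factor_iso G d \<rho> (Ws i) (Ws (Suc i)) e \<sigma>}"

lemma cnt_0[simp]: "cnt G d \<rho> 0 Ws e \<sigma> = 0"
  unfolding cnt_def by simp

lemma cnt_Suc: "cnt G d \<rho> (Suc k) Ws e \<sigma> = cnt G d \<rho> k Ws e \<sigma> + (if factor_iso G d \<rho> (Ws k) (Ws (Suc k)) e \<sigma> then 1 else 0)"
proof -
  let ?P = "\<lambda>i. factor_iso G d \<rho> (Ws i) (Ws (Suc i)) e \<sigma>"
  have eq: "{i. i < Suc k \<and> ?P i} = {i. i < k \<and> ?P i} \<union> (if ?P k then {k} else {})"
    by (auto simp: less_Suc_eq)
  show ?thesis unfolding cnt_def eq by (auto simp: card_insert_if)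
qed

lemma cnt_cong: "(\<And>i. i \<le> k \<Longrightarrow> Ws i = Ws' i) \<Longrightarrow> cnt G d \<rho> k Ws e \<sigma> = cnt G d \<rho> k Ws' e \<sigma>"
  unfolding cnt_def by (intro arg_cong[where f = card]) auto

definition ssum :: "'a vec set \<Rightarrow> 'a vec set \<Rightarrow> 'a::field vec set" where
  "ssum U W = {u + w | u w. u \<in> U \<and> w \<in> W}"

lemma submodule_inter:
  "is_submodule G d \<rho> U \<Longrightarrow> is_submodule G d \<rho> W \<Longrightarrow> is_submodule G d \<rho> (U \<inter> W)"
  unfolding is_submodule_def is_subspace_def by auto

lemma submodule_sum:
  fixes \<rho> :: "'g \<Rightarrow> 'a::field mat"
  assumes r: "rcar G d \<rho>" and U: "is_submodule G d \<rho> U" and W: "is_submodule G d \<rho> W"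
  shows "is_submodule G d \<rho> (ssum U W)"
proof -
  have Us: "is_subspace d U" and Ws: "is_subspace d W" using U W by (auto simp: is_submodule_def)
  have Uc: "U \<subseteq> carrier_vec d" and Wc: "W \<subseteq> carrier_vec d" using Us Ws by (auto simp: is_subspace_def)
  have sub: "is_subspace d (ssum U W)" unfolding is_subspace_def
  proof (intro conjI ballI allI)
    show "ssum U W \<subseteq> carrier_vec d" using Uc Wc unfolding ssum_def by (auto intro: add_carrier_vec)
    have "0\<^sub>v d = 0\<^sub>v d + (0\<^sub>v d :: 'a vec)" by (intro eq_vecI) auto
    thus "0\<^sub>v d \<in> ssum U W" using Us Ws unfolding ssum_def is_subspace_def by blast
  next
    fix x y assume x: "x \<in> ssum U W" and y: "y \<in> ssum U W"
    then obtain u1 w1 u2 w2 where uw: "x = u1 + w1" "y = u2 + w2" "u1 \<in> U" "w1 \<in> W" "u2 \<in> U" "w2 \<in> W"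
      unfolding ssum_def by blast
    have c: "u1 \<in> carrier_vec d" "w1 \<in> carrier_vec d" "u2 \<in> carrier_vec d" "w2 \<in> carrier_vec d"
      using uw Uc Wc by auto
    have "x + y = (u1 + u2) + (w1 + w2)" unfolding uw using c by (intro eq_vecI) auto
    moreover have "u1 + u2 \<in> U" "w1 + w2 \<in> W" using uw Us Ws by (auto simp: is_subspace_def)
    ultimately show "x + y \<in> ssum U W" unfolding ssum_def by blast
  next
    fix a :: 'a and x assume x: "x \<in> ssum U W"
    then obtain u w where uw: "x = u + w" "u \<in> U" "w \<in> W" unfolding ssum_def by blast
    have c: "u \<in> carrier_vec d" "w \<in> carrier_vec d" using uw Uc Wc by auto
    have "a \<cdot>\<^sub>v x = a \<cdot>\<^sub>v u + a \<cdot>\<^sub>v w" unfolding uw using c by (simp add: smult_add_distrib_vec)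
    moreover have "a \<cdot>\<^sub>v u \<in> U" "a \<cdot>\<^sub>v w \<in> W" using uw Us Ws by (auto simp: is_subspace_def)
    ultimately show "a \<cdot>\<^sub>v x \<in> ssum U W" unfolding ssum_def by blast
  qed
  have "\<forall>g\<in>carrier G. \<forall>x\<in>ssum U W. \<rho> g *\<^sub>v x \<in> ssum U W"
  proof (intro ballI)
    fix g x assume g: "g \<in> carrier G" and x: "x \<in> ssum U W"
    then obtain u w where uw: "x = u + w" "u \<in> U" "w \<in> W" unfolding ssum_def by blast
    have c: "u \<in> carrier_vec d" "w \<in> carrier_vec d" using uw Uc Wc by auto
    have rg: "\<rho> g \<in> carrier_mat d d" using r g by (simp add: rcar_def)
    have "\<rho> g *\<^sub>v x = \<rho> g *\<^sub>v u + \<rho> g *\<^sub>v w" unfolding uw using c rg by (simp add: mult_add_distrib_mat_vec)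
    moreover have "\<rho> g *\<^sub>v u \<in> U" "\<rho> g *\<^sub>v w \<in> W" using uw U W g by (auto simp: is_submodule_def)
    ultimately show "\<rho> g *\<^sub>v x \<in> ssum U W" unfolding ssum_def by blast
  qed
  thus ?thesis using sub by (simp add: is_submodule_def)
qed

lemma ssum_left: "is_subspace d W \<Longrightarrow> U \<subseteq> carrier_vec d \<Longrightarrow> U \<subseteq> ssum U W"
proof
  fix u assume W: "is_subspace d W" and Uc: "U \<subseteq> carrier_vec d" and u: "u \<in> U"
  have "u = u + 0\<^sub>v d" using u Uc by auto
  moreover have "0\<^sub>v d \<in> W" using W by (simp add: is_subspace_def)
  ultimately show "u \<in> ssum U W" using u unfolding ssum_def by blast
qed

lemma ssum_right: "is_subspace d U \<Longrightarrow> W \<subseteq> carrier_vec d \<Longrightarrow> W \<subseteq> ssum U W"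
proof
  fix w assume U: "is_subspace d U" and Wc: "W \<subseteq> carrier_vec d" and w: "w \<in> W"
  have "w = 0\<^sub>v d + w" using w Wc by auto
  moreover have "0\<^sub>v d \<in> U" using U by (simp add: is_subspace_def)
  ultimately show "w \<in> ssum U W" using w unfolding ssum_def by blast
qed

lemma ssum_sub: "is_subspace d Y \<Longrightarrow> U \<subseteq> Y \<Longrightarrow> W \<subseteq> Y \<Longrightarrow> ssum U W \<subseteq> Y"
  unfolding ssum_def is_subspace_def by blast

locale diamond_setup =
  fixes G :: "('g, 'm) monoid_scheme" and d :: nat and \<rho> :: "'g \<Rightarrow> 'a::field mat" and U W Y :: "'a vec set"
  assumes r: "rcar G d \<rho>"
    and U: "is_submodule G d \<rho> U" and W: "is_submodule G d \<rho> W" and Y: "is_submodule G d \<rho> Y"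
    and UY: "U \<subset> Y" and WY: "W \<subset> Y" and UW: "U \<noteq> W"
    and maxU: "\<forall>V. is_submodule G d \<rho> V \<and> U \<subseteq> V \<and> V \<subseteq> Y \<longrightarrow> V = U \<or> V = Y"
    and maxW: "\<forall>V. is_submodule G d \<rho> V \<and> W \<subseteq> V \<and> V \<subseteq> Y \<longrightarrow> V = W \<or> V = Y"
begin

lemma Us: "is_subspace d U" and Ws: "is_subspace d W" and Ys: "is_subspace d Y"
  using U W Y by (auto simp: is_submodule_def)

lemma Uc: "U \<subseteq> carrier_vec d" and Wc: "W \<subseteq> carrier_vec d" and Yc: "Y \<subseteq> carrier_vec d"
  using Us Ws Ys by (auto simp: is_subspace_def)

lemma sum_eq: "ssum U W = Y"
proof -
  have S: "is_submodule G d \<rho> (ssum U W)" by (rule submodule_sum[OF r U W])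
  have "U \<subseteq> ssum U W" by (rule ssum_left[OF Ws Uc])
  moreover have "ssum U W \<subseteq> Y" using ssum_sub[OF Ys] UY WY by blast
  ultimately have "ssum U W = U \<or> ssum U W = Y" using maxU S by blast
  moreover have "ssum U W \<noteq> U"
  proof
    assume "ssum U W = U"
    hence "W \<subseteq> U" using ssum_right[OF Us Wc] by blast
    hence "U = W \<or> U = Y" using maxW U UY by blast
    thus False using UW UY by blast
  qed
  ultimately show ?thesis by blast
qed

lemma span: "\<forall>y\<in>Y. \<exists>u\<in>U. \<exists>w\<in>W. y = u + w"
  using sum_eq unfolding ssum_def by blast

lemma D_step: "U \<inter> W \<subset> U \<and> (\<forall>Z. is_submodule G d \<rho> Z \<and> U \<inter> W \<subseteq> Z \<and> Z \<subseteq> U \<longrightarrow> Z = U \<inter> W \<or> Z = U)"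
proof (intro conjI allI impI)
  show "U \<inter> W \<subset> U"
  proof (rule ccontr)
    assume "\<not> U \<inter> W \<subset> U"
    hence "U \<subseteq> W" by blast
    hence "W = U \<or> W = Y" using maxU W WY by blast
    thus False using UW WY by blast
  qed
next
  fix Z assume Z: "is_submodule G d \<rho> Z \<and> U \<inter> W \<subseteq> Z \<and> Z \<subseteq> U"
  have Zs: "is_subspace d Z" using Z by (simp add: is_submodule_def)
  have Zc: "Z \<subseteq> carrier_vec d" using Zs by (simp add: is_subspace_def)
  have S: "is_submodule G d \<rho> (ssum Z W)" using submodule_sum[OF r _ W] Z by blast
  have "W \<subseteq> ssum Z W" by (rule ssum_right[OF Zs Wc])
  moreover have "ssum Z W \<subseteq> Y" using ssum_sub[OF Ys] Z UY WY by blast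
  ultimately have "ssum Z W = W \<or> ssum Z W = Y" using maxW S by blast
  thus "Z = U \<inter> W \<or> Z = U"
  proof
    assume "ssum Z W = W"
    hence "Z \<subseteq> W" using ssum_left[OF Ws Zc] by blast
    thus ?thesis using Z by blast
  next
    assume SY: "ssum Z W = Y"
    have "U \<subseteq> Z"
    proof
      fix u assume u: "u \<in> U"
      hence "u \<in> ssum Z W" using SY UY by blast
      then obtain z w where zw: "u = z + w" "z \<in> Z" "w \<in> W" unfolding ssum_def by blast
      have c: "z \<in> carrier_vec d" "w \<in> carrier_vec d" using zw Zc Wc by auto
      have "w = u - z" unfolding zw(1) using c by (intro eq_vecI) auto
      moreover have "u - z \<in> U" using subspace_minus[OF Us u] zw(2) Z by blast
      ultimately have "w \<in> Z" using zw(3) Z by blast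
      thus "u \<in> Z" using zw Zs by (auto simp: is_subspace_def)
    qed
    thus ?thesis using Z by blast
  qed
qed

lemma fi_equiv:
  assumes c: "rcar G e \<sigma>"
  shows "factor_iso G d \<rho> (U \<inter> W) U e \<sigma> \<longleftrightarrow> factor_iso G d \<rho> W Y e \<sigma>"
proof
  assume fi: "factor_iso G d \<rho> W Y e \<sigma>"
  show "factor_iso G d \<rho> (U \<inter> W) U e \<sigma>" by (rule fi_restrict[OF fi _ Yc span]) (use UY in blast)
next
  assume fi: "factor_iso G d \<rho> (U \<inter> W) U e \<sigma>"
  obtain e0 \<sigma>0 where f0: "factor_iso G d \<rho> W Y e0 \<sigma>0" "rcar G e0 \<sigma>0"
    using fi_exists[OF r W Y] WY by blast
  have "factor_iso G d \<rho> (U \<inter> W) U e0 \<sigma>0" by (rule fi_restrict[OF f0(1) _ Yc span]) (use UY in blast)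
  hence "rep_iso G e0 \<sigma>0 e \<sigma>" by (rule fi_iso[OF _ fi f0(2) c r U])
  thus "factor_iso G d \<rho> W Y e \<sigma>" by (rule fi_compose[OF f0(1) _ f0(2) c Yc r])
qed

end

lemma diamond_sym: "diamond_setup G d \<rho> U W Y \<Longrightarrow> diamond_setup G d \<rho> W U Y"
  unfolding diamond_setup_def by blast


lemma ser_zero_iff: "ser G d \<rho> X Y k Ws \<Longrightarrow> k = 0 \<longleftrightarrow> X = Y"
proof
  assume s: "ser G d \<rho> X Y k Ws" and "k = 0"
  thus "X = Y" by (auto simp: ser_def)
next
  assume s: "ser G d \<rho> X Y k Ws" and XY: "X = Y"
  show "k = 0"
  proof (rule ccontr)
    assume k: "k \<noteq> 0"
    have "Ws 0 \<subset> Ws 1" using s k by (auto simp: ser_def)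
    moreover have "Ws 1 \<subseteq> Ws k" using ser_mono[OF s, of 1 k] k by simp
    ultimately show False using s XY by (auto simp: ser_def)
  qed
qed

lemma JH:
  fixes \<rho> :: "'g \<Rightarrow> 'a::field mat"
  assumes r: "rcar G d \<rho>"
  shows "ser G d \<rho> X Y k Ws \<Longrightarrow> ser G d \<rho> X Y k' Ws' \<Longrightarrow>
    k = k' \<and> (\<forall>e \<sigma>. rcar G e \<sigma> \<longrightarrow> cnt G d \<rho> k Ws e \<sigma> = cnt G d \<rho> k' Ws' e \<sigma>)"
proof (induction k arbitrary: Y Ws k' Ws' rule: less_induct)
  case (less k)
  note s1 = less.prems(1) and s2 = less.prems(2)
  have kk: "k = 0 \<longleftrightarrow> k' = 0" using ser_zero_iff[OF s1] ser_zero_iff[OF s2] by simp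
  show ?case
  proof (cases "k = 0")
    case True thus ?thesis using kk by simp
  next
    case False
    then obtain m where m: "k = Suc m" by (cases k) auto
    obtain m' where m': "k' = Suc m'" using False kk by (cases k') auto
    define U where "U = Ws m"
    define W where "W = Ws' m'"
    have sU: "ser G d \<rho> X U m Ws" unfolding U_def using ser_prefix[OF s1, of m] m by simp
    have sW: "ser G d \<rho> X W m' Ws'" unfolding W_def using ser_prefix[OF s2, of m'] m' by simp
    have Y1: "Ws (Suc m) = Y" using s1 m by (simp add: ser_def)
    have Y2: "Ws' (Suc m') = Y" using s2 m' by (simp add: ser_def)
    have Um: "is_submodule G d \<rho> U" using s1 m by (simp add: ser_def U_def)
    have Wm: "is_submodule G d \<rho> W" using s2 m' by (simp add: ser_def W_def)
    have Ym: "is_submodule G d \<rho> Y" using s1 m Y1 by (auto simp: ser_def)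
    have stepU: "U \<subset> Y \<and> (\<forall>V. is_submodule G d \<rho> V \<and> U \<subseteq> V \<and> V \<subseteq> Y \<longrightarrow> V = U \<or> V = Y)"
      using s1 m Y1 unfolding ser_def U_def by auto
    have stepW: "W \<subset> Y \<and> (\<forall>V. is_submodule G d \<rho> V \<and> W \<subseteq> V \<and> V \<subseteq> Y \<longrightarrow> V = W \<or> V = Y)"
      using s2 m' Y2 unfolding ser_def W_def by auto
    have cU: "cnt G d \<rho> k Ws e \<sigma> = cnt G d \<rho> m Ws e \<sigma> + (if factor_iso G d \<rho> U Y e \<sigma> then 1 else 0)" for e \<sigma>
      using cnt_Suc[of G d \<rho> m Ws e \<sigma>] m Y1 by (simp add: U_def)
    have cW: "cnt G d \<rho> k' Ws' e \<sigma> = cnt G d \<rho> m' Ws' e \<sigma> + (if factor_iso G d \<rho> W Y e \<sigma> then 1 else 0)" for e \<sigma>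
      using cnt_Suc[of G d \<rho> m' Ws' e \<sigma>] m' Y2 by (simp add: W_def)
    show ?thesis
    proof (cases "U = W")
      case True
      have "m = m' \<and> (\<forall>e \<sigma>. rcar G e \<sigma> \<longrightarrow> cnt G d \<rho> m Ws e \<sigma> = cnt G d \<rho> m' Ws' e \<sigma>)"
      proof -
        have sW': "ser G d \<rho> X U m' Ws'" using sW True by simp
        have "m < k" using m by simp
        from less.IH[OF this sU sW'] show ?thesis .
      qed
      then have mm: "m = m'" and cc: "\<And>e (\<sigma> :: 'g \<Rightarrow> 'a mat). rcar G e \<sigma> \<Longrightarrow> cnt G d \<rho> m Ws e \<sigma> = cnt G d \<rho> m' Ws' e \<sigma>" by auto
      show ?thesis
      proof (intro conjI allI impI)
        show "k = k'" using m m' mm by simp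
        fix e and \<sigma> :: "'g \<Rightarrow> 'a mat" assume "rcar G e \<sigma>"
        thus "cnt G d \<rho> k Ws e \<sigma> = cnt G d \<rho> k' Ws' e \<sigma>" using cU[of e \<sigma>] cW[of e \<sigma>] cc[of e \<sigma>] True by simp
      qed
    next
      case False
      interpret D1: diamond_setup G d \<rho> U W Y
        by unfold_locales (use r Um Wm Ym stepU stepW False in auto)
      interpret D2: diamond_setup G d \<rho> W U Y
        by unfold_locales (use r Um Wm Ym stepU stepW False in auto)
      define D where "D = U \<inter> W"
      have Dm: "is_submodule G d \<rho> D" unfolding D_def by (rule submodule_inter[OF Um Wm])
      have X0: "is_submodule G d \<rho> X" using s1 by (auto simp: ser_def)
      have XU: "X \<subseteq> U" using ser_mono[OF sU, of 0 m] sU by (simp add: ser_def)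
      have XW: "X \<subseteq> W" using ser_mono[OF sW, of 0 m'] sW by (simp add: ser_def)
      obtain j Cs where sC: "ser G d \<rho> X D j Cs" using ser_exists[OF X0 Dm] XU XW D_def by blast
      have Cj: "Cs j = D" using sC by (simp add: ser_def)
      have sC1: "ser G d \<rho> X U (Suc j) (Cs(Suc j := U))"
        by (rule ser_extend[OF sC Um]) (use D1.D_step D_def in auto)
      have sC2: "ser G d \<rho> X W (Suc j) (Cs(Suc j := W))"
        by (rule ser_extend[OF sC Wm]) (use D2.D_step D_def in \<open>auto simp: Int_commute\<close>)
      have IH1: "m = Suc j \<and> (\<forall>e \<sigma>. rcar G e \<sigma> \<longrightarrow> cnt G d \<rho> m Ws e \<sigma> = cnt G d \<rho> (Suc j) (Cs(Suc j := U)) e \<sigma>)"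
        by (rule less.IH[OF _ sU sC1]) (use m in simp)
      have IH2: "Suc j = m' \<and> (\<forall>e \<sigma>. rcar G e \<sigma> \<longrightarrow> cnt G d \<rho> (Suc j) (Cs(Suc j := W)) e \<sigma> = cnt G d \<rho> m' Ws' e \<sigma>)"
        by (rule less.IH[OF _ sC2 sW]) (use m IH1 in simp)
      have C1: "cnt G d \<rho> (Suc j) (Cs(Suc j := U)) e \<sigma> = cnt G d \<rho> j Cs e \<sigma> + (if factor_iso G d \<rho> D U e \<sigma> then 1 else 0)" for e \<sigma>
        using cnt_Suc[of G d \<rho> j "Cs(Suc j := U)" e \<sigma>] cnt_cong[of j "Cs(Suc j := U)" Cs G d \<rho> e \<sigma>] Cj by simp
      have C2: "cnt G d \<rho> (Suc j) (Cs(Suc j := W)) e \<sigma> = cnt G d \<rho> j Cs e \<sigma> + (if factor_iso G d \<rho> D W e \<sigma> then 1 else 0)" for e \<sigma>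
        using cnt_Suc[of G d \<rho> j "Cs(Suc j := W)" e \<sigma>] cnt_cong[of j "Cs(Suc j := W)" Cs G d \<rho> e \<sigma>] Cj by simp
      have "cnt G d \<rho> k Ws e \<sigma> = cnt G d \<rho> k' Ws' e \<sigma>" if c: "rcar G e \<sigma>" for e \<sigma>
      proof -
        have e1: "factor_iso G d \<rho> D U e \<sigma> \<longleftrightarrow> factor_iso G d \<rho> W Y e \<sigma>" using D1.fi_equiv[OF c] D_def by simp
        have e2: "factor_iso G d \<rho> D W e \<sigma> \<longleftrightarrow> factor_iso G d \<rho> U Y e \<sigma>" using D2.fi_equiv[OF c] D_def by (simp add: Int_commute)
        have a1: "cnt G d \<rho> m Ws e \<sigma> = cnt G d \<rho> (Suc j) (Cs(Suc j := U)) e \<sigma>" using IH1 c by blast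
        have a2: "cnt G d \<rho> (Suc j) (Cs(Suc j := W)) e \<sigma> = cnt G d \<rho> m' Ws' e \<sigma>" using IH2 c by blast
        have L: "cnt G d \<rho> k Ws e \<sigma> = cnt G d \<rho> j Cs e \<sigma> + (if factor_iso G d \<rho> D U e \<sigma> then 1 else 0) + (if factor_iso G d \<rho> U Y e \<sigma> then 1 else 0)"
          using cU[of e \<sigma>] a1 C1[of e \<sigma>] by simp
        have R: "cnt G d \<rho> k' Ws' e \<sigma> = cnt G d \<rho> j Cs e \<sigma> + (if factor_iso G d \<rho> D W e \<sigma> then 1 else 0) + (if factor_iso G d \<rho> W Y e \<sigma> then 1 else 0)"
          using cW[of e \<sigma>] a2 C2[of e \<sigma>] by simp
        show ?thesis using L R e1 e2 by auto
      qed
      thus ?thesis using IH1 IH2 m m' by simp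
    qed
  qed
qed


definition bcp :: "('f::field \<Rightarrow> complex) \<Rightarrow> 'f poly \<Rightarrow> complex" where
  "bcp hat p = (\<Sum>e\<in>{x. poly p x = 0}. of_nat (order e p) * hat e)"

lemma brauer_bcp: "brauer_char hat \<rho> g = bcp hat (char_poly (\<rho> g))"
  unfolding brauer_char_def bcp_def ..

lemma bcp_superset:
  assumes p: "p \<noteq> 0" and R: "finite R" "{x. poly p x = 0} \<subseteq> R"
  shows "bcp hat p = (\<Sum>x\<in>R. of_nat (order x p) * hat x)"
  unfolding bcp_def
proof (rule sum.mono_neutral_left[OF R(1) R(2)])
  show "\<forall>i\<in>R - {x. poly p x = 0}. of_nat (order i p) * hat i = 0"
    using p order_root by auto
qed

lemma bcp_mult:
  fixes p q :: "'f::field poly"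
  assumes p: "p \<noteq> 0" and q: "q \<noteq> 0"
  shows "bcp hat (p * q) = bcp hat p + bcp hat q"
proof -
  let ?R = "{x. poly p x = 0} \<union> {x. poly q x = 0}"
  have fin: "finite ?R" using poly_roots_finite[OF p] poly_roots_finite[OF q] by simp
  have pq: "p * q \<noteq> 0" using p q by simp
  have "bcp hat (p * q) = (\<Sum>x\<in>?R. of_nat (order x (p * q)) * hat x)"
    by (rule bcp_superset[OF pq fin]) auto
  also have "\<dots> = (\<Sum>x\<in>?R. of_nat (order x p) * hat x + of_nat (order x q) * hat x)"
    using pq by (intro sum.cong) (auto simp: order_mult algebra_simps)
  also have "\<dots> = (\<Sum>x\<in>?R. of_nat (order x p) * hat x) + (\<Sum>x\<in>?R. of_nat (order x q) * hat x)"
    by (rule sum.distrib)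
  also have "(\<Sum>x\<in>?R. of_nat (order x p) * hat x) = bcp hat p"
    by (rule bcp_superset[OF p fin, symmetric]) auto
  also have "(\<Sum>x\<in>?R. of_nat (order x q) * hat x) = bcp hat q"
    by (rule bcp_superset[OF q fin, symmetric]) auto
  finally show ?thesis .
qed

lemma bcp_linear: "bcp hat [:- c, 1:] = hat c"
proof -
  have "{x. poly [:- c, 1:] x = 0} = {c}" by auto
  thus ?thesis unfolding bcp_def by (simp add: order_linear)
qed

lemma bcp_one: "bcp hat 1 = 0"
  unfolding bcp_def by simp

lemma linear_prod_nonzero: "(\<Prod>i<n. [:- f i, 1:]) \<noteq> (0 :: 'f::field poly)" for n :: nat
proof
  assume "(\<Prod>i<n. [:- f i, 1:]) = (0 :: 'f poly)"
  then obtain i where "[:- f i, 1:] = (0 :: 'f poly)" using prod_zero_iff[of "{..<n}" "\<lambda>i. [:- f i, 1:]"] by auto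
  thus False by simp
qed

lemma bcp_prod: "bcp hat (\<Prod>i<n. [:- f i, 1:]) = (\<Sum>i<n. hat (f i))" for n :: nat
proof (induction n)
  case 0 thus ?case by (simp add: bcp_one)
next
  case (Suc n)
  have "bcp hat (\<Prod>i<Suc n. [:- f i, 1:]) = bcp hat ((\<Prod>i<n. [:- f i, 1:]) * [:- f n, 1:])" by simp
  also have "\<dots> = bcp hat (\<Prod>i<n. [:- f i, 1:]) + bcp hat [:- f n, 1:]"
    by (rule bcp_mult) (auto simp: linear_prod_nonzero)
  finally show ?case using Suc by (simp add: bcp_linear)
qed

lemma char_poly_nonzero: "A \<in> carrier_mat n n \<Longrightarrow> char_poly (A :: 'a::field mat) \<noteq> 0"
  using degree_monic_char_poly[of A n] by (metis leading_coeff_0_iff one_neq_zero)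

lemma bcp_prod_list:
  assumes "\<forall>i<length ps. ps ! i \<noteq> 0"
  shows "bcp hat (prod_list ps) = (\<Sum>i<length ps. bcp hat (ps ! i))"
  using assms
proof (induction ps rule: rev_induct)
  case Nil thus ?case by (simp add: bcp_one)
next
  case (snoc p ps)
  have all: "\<forall>i<length ps. ps ! i \<noteq> 0"
  proof (intro allI impI)
    fix i assume "i < length ps" thus "ps ! i \<noteq> 0" using snoc.prems[rule_format, of i] by (simp add: nth_append)
  qed
  hence nz: "prod_list ps \<noteq> 0" by (auto simp: prod_list_zero_iff in_set_conv_nth)
  have p: "p \<noteq> 0" using snoc.prems[rule_format, of "length ps"] by simp
  have "bcp hat (prod_list (ps @ [p])) = bcp hat (prod_list ps) + bcp hat p"
    using bcp_mult[OF nz p] by (simp add: mult.commute)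
  thus ?case using snoc.IH[OF all] by (simp add: nth_append)
qed

lemma mult_index_sum:
  assumes "i < dim_row A" "j < dim_col B" "dim_col A = dim_row B"
  shows "(A * B) $$ (i,j) = (\<Sum>k<dim_col A. A $$ (i,k) * B $$ (k,j))"
  using assms by (simp add: index_mult_mat scalar_prod_def lessThan_atLeast0)

lemma sum_div_mod:
  "(\<Sum>t<b * e. f (t div e) (t mod e)) = (\<Sum>s<b. \<Sum>u<e. f s u)" for b e :: nat
proof (cases "e = 0")
  case True thus ?thesis by simp
next
  case False
  show ?thesis
  proof (induction b)
    case 0 thus ?case by simp
  next
    case (Suc b)
    have "(\<Sum>t<Suc b * e. f (t div e) (t mod e)) = (\<Sum>t<b * e + e. f (t div e) (t mod e))"
      by (simp add: add.commute)
    also have "\<dots> = (\<Sum>t<b * e. f (t div e) (t mod e)) + (\<Sum>u<e. f ((b * e + u) div e) ((b * e + u) mod e))"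
      by (rule sum_lessThan_add_split)
    also have "(\<Sum>u<e. f ((b * e + u) div e) ((b * e + u) mod e)) = (\<Sum>u<e. f b u)"
      using False by (intro sum.cong) auto
    finally show ?case using Suc by simp
  qed
qed

lemma kron_carrier: "A \<in> carrier_mat a b \<Longrightarrow> B \<in> carrier_mat c e \<Longrightarrow> kron A B \<in> carrier_mat (a * c) (b * e)"
  unfolding kron_def by auto

lemma kron_index:
  assumes "A \<in> carrier_mat a b" "B \<in> carrier_mat c e" "i < a * c" "j < b * e"
  shows "kron A B $$ (i,j) = A $$ (i div c, j div e) * B $$ (i mod c, j mod e)"
  using assms unfolding kron_def by auto

lemma kron_mult:
  fixes A :: "'f::field mat"
  assumes A: "A \<in> carrier_mat a b" and B: "B \<in> carrier_mat c e" and C: "C \<in> carrier_mat b f" and D: "D \<in> carrier_mat e h"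
  shows "kron A B * kron C D = kron (A * C) (B * D)"
proof (rule eq_matI)
  fix i j assume i: "i < dim_row (kron (A * C) (B * D))" and j: "j < dim_col (kron (A * C) (B * D))"
  hence i': "i < a * c" and j': "j < f * h" using A B C D by (auto simp: kron_def)
  have c0: "c > 0" using i' by (cases c) auto
  have h0: "h > 0" using j' by (cases h) auto
  have idc: "i div c < a" using i' c0 by (simp add: less_mult_imp_div_less)
  have jdh: "j div h < f" using j' h0 by (simp add: less_mult_imp_div_less)
  have imc: "i mod c < c" and jmh: "j mod h < h" using c0 h0 by auto
  have "(kron A B * kron C D) $$ (i,j) = (\<Sum>t<b * e. kron A B $$ (i,t) * kron C D $$ (t,j))"
    using kron_carrier[OF A B] kron_carrier[OF C D] i' j' by (subst mult_index_sum) auto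
  also have "\<dots> = (\<Sum>t<b * e. (A $$ (i div c, t div e) * C $$ (t div e, j div h)) * (B $$ (i mod c, t mod e) * D $$ (t mod e, j mod h)))"
  proof (rule sum.cong)
    fix t assume "t \<in> {..<b * e}" hence t: "t < b * e" by simp
    show "kron A B $$ (i,t) * kron C D $$ (t,j) = (A $$ (i div c, t div e) * C $$ (t div e, j div h)) * (B $$ (i mod c, t mod e) * D $$ (t mod e, j mod h))"
      using kron_index[OF A B i' t] kron_index[OF C D t j'] by (simp add: algebra_simps)
  qed simp
  also have "\<dots> = (\<Sum>s<b. \<Sum>u<e. (A $$ (i div c, s) * C $$ (s, j div h)) * (B $$ (i mod c, u) * D $$ (u, j mod h)))"
    by (rule sum_div_mod[where f = "\<lambda>s u. (A $$ (i div c, s) * C $$ (s, j div h)) * (B $$ (i mod c, u) * D $$ (u, j mod h))"])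
  also have "\<dots> = (\<Sum>s<b. A $$ (i div c, s) * C $$ (s, j div h)) * (\<Sum>u<e. B $$ (i mod c, u) * D $$ (u, j mod h))"
    by (simp add: sum_product)
  also have "\<dots> = (A * C) $$ (i div c, j div h) * (B * D) $$ (i mod c, j mod h)"
  proof -
    have "(A * C) $$ (i div c, j div h) = (\<Sum>s<b. A $$ (i div c, s) * C $$ (s, j div h))"
      using A C idc jdh by (subst mult_index_sum) auto
    moreover have "(B * D) $$ (i mod c, j mod h) = (\<Sum>u<e. B $$ (i mod c, u) * D $$ (u, j mod h))"
      using B D imc jmh by (subst mult_index_sum) auto
    ultimately show ?thesis by simp
  qed
  also have "\<dots> = kron (A * C) (B * D) $$ (i,j)"
    using A B C D i' j' by (simp add: kron_index[of "A * C" a f "B * D" c h])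
  finally show "(kron A B * kron C D) $$ (i,j) = kron (A * C) (B * D) $$ (i,j)" .
qed (use A B C D in \<open>auto simp: kron_def\<close>)

lemma kron_one: "kron (1\<^sub>m a) (1\<^sub>m c) = (1\<^sub>m (a * c) :: 'f::field mat)"
proof (rule eq_matI)
  fix i j assume i: "i < dim_row (1\<^sub>m (a * c) :: 'f mat)" and j: "j < dim_col (1\<^sub>m (a * c) :: 'f mat)"
  hence i': "i < a * c" and j': "j < a * c" by auto
  have c0: "c > 0" using i' by (cases c) auto
  have "i div c < a" "j div c < a" using i' j' c0 by (auto simp: less_mult_imp_div_less)
  moreover have "(i div c = j div c \<and> i mod c = j mod c) \<longleftrightarrow> i = j"
    by (metis div_mult_mod_eq)
  ultimately show "kron (1\<^sub>m a) (1\<^sub>m c) $$ (i,j) = (1\<^sub>m (a * c) :: 'f mat) $$ (i,j)"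
    using i' j' c0 by (auto simp: kron_index[of _ a a _ c c])
qed (auto simp: kron_def)

definition utri :: "'a::zero mat \<Rightarrow> bool" where
  "utri U \<longleftrightarrow> (\<forall>i j. j < i \<longrightarrow> i < dim_row U \<longrightarrow> U $$ (i,j) = 0)"

lemma kron_utri:
  fixes U1 U2 :: "'f::field mat"
  assumes U1: "U1 \<in> carrier_mat a a" and U2: "U2 \<in> carrier_mat c c" and t1: "utri U1" and t2: "utri U2"
  shows "utri (kron U1 U2)"
  unfolding utri_def
proof (intro allI impI)
  fix i j assume ji: "j < i" and i: "i < dim_row (kron U1 U2)"
  hence i': "i < a * c" using U1 U2 by (simp add: kron_def)
  have j': "j < a * c" using ji i' by simp
  have c0: "c > 0" using i' by (cases c) auto
  have le: "j div c \<le> i div c" using ji by (simp add: div_le_mono)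
  have ia: "i div c < a" using i' c0 by (simp add: less_mult_imp_div_less)
  show "kron U1 U2 $$ (i,j) = 0"
  proof (cases "j div c < i div c")
    case True
    hence "U1 $$ (i div c, j div c) = 0" using t1 U1 ia unfolding utri_def by auto
    thus ?thesis using kron_index[OF U1 U2 i' j'] by simp
  next
    case False
    hence eq: "j div c = i div c" using le by simp
    have "j mod c < i mod c"
    proof (rule ccontr)
      assume "\<not> j mod c < i mod c"
      hence "i mod c \<le> j mod c" by simp
      hence "i \<le> j" using eq by (metis add_le_cancel_left div_mult_mod_eq)
      thus False using ji by simp
    qed
    hence "U2 $$ (i mod c, j mod c) = 0" using t2 U2 c0 unfolding utri_def by auto
    thus ?thesis using kron_index[OF U1 U2 i' j'] by simp
  qed
qed

lemma utri_upper_triangular: "utri U \<Longrightarrow> upper_triangular U"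
  unfolding utri_def upper_triangular_def by auto

lemma char_poly_utri:
  fixes U :: "'f::field mat"
  assumes U: "U \<in> carrier_mat n n" and t: "utri U"
  shows "char_poly U = (\<Prod>i<n. [:- (U $$ (i,i)), 1:])"
proof -
  have "char_poly U = (\<Prod>a\<leftarrow>diag_mat U. [:- a, 1:])"
    by (rule char_poly_upper_triangular[OF U utri_upper_triangular[OF t]])
  also have "\<dots> = (\<Prod>i\<leftarrow>[0..<n]. [:- (U $$ (i,i)), 1:])"
    using U by (simp add: diag_mat_def o_def)
  also have "\<dots> = (\<Prod>i<n. [:- (U $$ (i,i)), 1:])"
    by (simp add: prod.distinct_set_conv_list[symmetric] atLeast0LessThan)
  finally show ?thesis .
qed


lemma fi_simple_aux:
  fixes \<rho> :: "'g \<Rightarrow> 'a::field mat"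
  assumes fi: "factor_iso G d \<rho> X Y e \<sigma>" and Y: "is_submodule G d \<rho> Y"
    and strict: "X \<subset> Y"
    and max: "\<forall>U. is_submodule G d \<rho> U \<and> X \<subseteq> U \<and> U \<subseteq> Y \<longrightarrow> U = X \<or> U = Y"
  shows "e > 0 \<and> (\<forall>Z. is_submodule G e \<sigma> Z \<longrightarrow> Z = {0\<^sub>v e} \<or> Z = carrier_vec e)"
proof -
  have Ys: "is_subspace d Y" and Yinv: "\<forall>g\<in>carrier G. \<forall>w\<in>Y. \<rho> g *\<^sub>v w \<in> Y"
    using Y by (auto simp: is_submodule_def)
  have Yc: "Y \<subseteq> carrier_vec d" using Ys by (simp add: is_subspace_def)
  obtain P where P: "P \<in> carrier_mat e d" "(\<lambda>w. P *\<^sub>v w) ` Y = carrier_vec e"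
    "{w \<in> Y. P *\<^sub>v w = 0\<^sub>v e} = X" "\<forall>g\<in>carrier G. \<forall>w\<in>Y. P *\<^sub>v (\<rho> g *\<^sub>v w) = \<sigma> g *\<^sub>v (P *\<^sub>v w)"
    using fi unfolding factor_iso_def by blast
  have epos: "e > 0"
  proof (rule ccontr)
    assume "\<not> e > 0" hence e0: "e = 0" by simp
    have "Y \<subseteq> X"
    proof
      fix w assume w: "w \<in> Y"
      have "P *\<^sub>v w = 0\<^sub>v e" using P(1) e0 by (intro eq_vecI) auto
      thus "w \<in> X" using P(3) w by blast
    qed
    thus False using strict by blast
  qed
  have "\<forall>Z. is_submodule G e \<sigma> Z \<longrightarrow> Z = {0\<^sub>v e} \<or> Z = carrier_vec e"
  proof (intro allI impI)
    fix Z assume Z: "is_submodule G e \<sigma> Z"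
    have Zs: "is_subspace e Z" and Zinv: "\<forall>g\<in>carrier G. \<forall>z\<in>Z. \<sigma> g *\<^sub>v z \<in> Z"
      using Z by (auto simp: is_submodule_def)
    define U where "U = {w \<in> Y. P *\<^sub>v w \<in> Z}"
    have Us: "is_subspace d U" unfolding is_subspace_def
    proof (intro conjI ballI allI)
      show "U \<subseteq> carrier_vec d" using Yc by (auto simp: U_def)
      have "0\<^sub>v d \<in> Y" using Ys by (simp add: is_subspace_def)
      moreover have "P *\<^sub>v 0\<^sub>v d = 0\<^sub>v e" using P(1) by (metis carrier_matD(1,2) mat_vec_zero_right)
      ultimately show "0\<^sub>v d \<in> U" using Zs by (simp add: U_def is_subspace_def)
    next
      fix v w assume v: "v \<in> U" and w: "w \<in> U"
      have vc: "v \<in> carrier_vec d" and wc: "w \<in> carrier_vec d" using v w Yc by (auto simp: U_def)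
      have "P *\<^sub>v (v + w) = P *\<^sub>v v + P *\<^sub>v w" using P(1) vc wc by (simp add: mult_add_distrib_mat_vec)
      thus "v + w \<in> U" using v w Ys Zs by (auto simp: U_def is_subspace_def)
    next
      fix a :: 'a and v assume v: "v \<in> U"
      have vc: "v \<in> carrier_vec d" using v Yc by (auto simp: U_def)
      have "P *\<^sub>v (a \<cdot>\<^sub>v v) = a \<cdot>\<^sub>v (P *\<^sub>v v)" using P(1) vc by (simp add: mult_mat_vec)
      thus "a \<cdot>\<^sub>v v \<in> U" using v Ys Zs by (auto simp: U_def is_subspace_def)
    qed
    have Um: "is_submodule G d \<rho> U" unfolding is_submodule_def
    proof (intro conjI Us ballI)
      fix g w assume g: "g \<in> carrier G" and w: "w \<in> U"
      have "P *\<^sub>v (\<rho> g *\<^sub>v w) = \<sigma> g *\<^sub>v (P *\<^sub>v w)" using P(4) g w by (auto simp: U_def)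
      thus "\<rho> g *\<^sub>v w \<in> U" using w g Yinv Zinv by (auto simp: U_def)
    qed
    have XU: "X \<subseteq> U" using P(3) Zs by (auto simp: U_def is_subspace_def)
    have UY: "U \<subseteq> Y" by (auto simp: U_def)
    from max Um XU UY have "U = X \<or> U = Y" by blast
    thus "Z = {0\<^sub>v e} \<or> Z = carrier_vec e"
    proof
      assume UX: "U = X"
      have "Z \<subseteq> {0\<^sub>v e}"
      proof
        fix z assume z: "z \<in> Z"
        have "z \<in> carrier_vec e" using z Zs by (auto simp: is_subspace_def)
        then obtain w where w: "w \<in> Y" "z = P *\<^sub>v w" using P(2) by (metis imageE)
        hence "w \<in> U" using z by (simp add: U_def)
        hence "w \<in> X" using UX by simp
        thus "z \<in> {0\<^sub>v e}" using P(3) w by auto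
      qed
      moreover have "0\<^sub>v e \<in> Z" using Zs by (simp add: is_subspace_def)
      ultimately show ?thesis by auto
    next
      assume UY: "U = Y"
      have "carrier_vec e \<subseteq> Z"
      proof
        fix z :: "'a vec" assume "z \<in> carrier_vec e"
        then obtain w where w: "w \<in> Y" "z = P *\<^sub>v w" using P(2) by (metis imageE)
        hence "w \<in> U" using UY by simp
        thus "z \<in> Z" using w by (simp add: U_def)
      qed
      moreover have "Z \<subseteq> carrier_vec e" using Zs by (simp add: is_subspace_def)
      ultimately show ?thesis by auto
    qed
  qed
  thus ?thesis using epos by blast
qed

lemma dim_one:
  fixes B :: "'f::alg_closed_field mat"
  assumes B: "B \<in> carrier_mat e e" and e: "e > 0"
    and simp: "\<forall>Z. is_submodule G e (\<lambda>_. B) Z \<longrightarrow> Z = {0\<^sub>v e} \<or> Z = carrier_vec e"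
  shows "e = 1"
proof -
  have "degree (char_poly B) = e" using degree_monic_char_poly[OF B] by simp
  then obtain lam where "poly (char_poly B) lam = 0" using alg_closed_imp_poly_has_root[of "char_poly B"] e by auto
  hence "eigenvalue B lam" using eigenvalue_root_char_poly[OF B] by simp
  then obtain x where x: "x \<in> carrier_vec e" "x \<noteq> 0\<^sub>v e" "B *\<^sub>v x = lam \<cdot>\<^sub>v x"
    unfolding eigenvalue_def eigenvector_def using B by auto
  define Z where "Z = {c \<cdot>\<^sub>v x | c. True}"
  have Zs: "is_subspace e Z" unfolding is_subspace_def Z_def
  proof (intro conjI ballI allI)
    show "{c \<cdot>\<^sub>v x |c. True} \<subseteq> carrier_vec e" using x by auto
    have "0\<^sub>v e = 0 \<cdot>\<^sub>v x" using x by auto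
    thus "0\<^sub>v e \<in> {c \<cdot>\<^sub>v x |c. True}" by blast
  next
    fix v w assume "v \<in> {c \<cdot>\<^sub>v x |c. True}" "w \<in> {c \<cdot>\<^sub>v x |c. True}"
    then obtain c1 c2 where "v = c1 \<cdot>\<^sub>v x" "w = c2 \<cdot>\<^sub>v x" by blast
    hence "v + w = (c1 + c2) \<cdot>\<^sub>v x" using x by (simp add: add_smult_distrib_vec)
    thus "v + w \<in> {c \<cdot>\<^sub>v x |c. True}" by blast
  next
    fix a and v :: "'f vec" assume "v \<in> {c \<cdot>\<^sub>v x |c. True}"
    then obtain c1 where "v = c1 \<cdot>\<^sub>v x" by blast
    hence "a \<cdot>\<^sub>v v = (a * c1) \<cdot>\<^sub>v x" by (simp add: smult_smult_assoc)
    thus "a \<cdot>\<^sub>v v \<in> {c \<cdot>\<^sub>v x |c. True}" by blast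
  qed
  have "is_submodule G e (\<lambda>_. B) Z" unfolding is_submodule_def
  proof (intro conjI Zs ballI)
    fix g v assume "v \<in> Z"
    then obtain c where c: "v = c \<cdot>\<^sub>v x" unfolding Z_def by blast
    have "B *\<^sub>v v = c \<cdot>\<^sub>v (B *\<^sub>v x)" unfolding c using B x by (simp add: mult_mat_vec)
    also have "\<dots> = (c * lam) \<cdot>\<^sub>v x" using x by (simp add: smult_smult_assoc)
    finally show "B *\<^sub>v v \<in> Z" unfolding Z_def by blast
  qed
  moreover have "Z \<noteq> {0\<^sub>v e}"
  proof
    assume "Z = {0\<^sub>v e}"
    moreover have "x \<in> Z" unfolding Z_def using x by (intro CollectI exI[of _ 1]) auto
    ultimately show False using x by simp
  qed
  ultimately have Zc: "Z = carrier_vec e" using simp by blast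
  show "e = 1"
  proof (rule ccontr)
    assume "e \<noteq> 1" hence e2: "1 < e" using e by simp
    have "unit_vec e 0 \<in> Z" "unit_vec e 1 \<in> Z" using Zc by auto
    then obtain c0 c1 where c0: "unit_vec e 0 = c0 \<cdot>\<^sub>v x" and c1: "unit_vec e 1 = c1 \<cdot>\<^sub>v x" unfolding Z_def by blast
    have "1 = c0 * x $ 0" using arg_cong[OF c0, of "\<lambda>v. v $ 0"] e x by simp
    moreover have "0 = c0 * x $ 1" using arg_cong[OF c0, of "\<lambda>v. v $ 1"] e2 x by simp
    ultimately have "x $ 1 = 0" by (metis mult_zero_left no_zero_divisors zero_neq_one)
    moreover have "1 = c1 * x $ 1" using arg_cong[OF c1, of "\<lambda>v. v $ 1"] e2 x by simp
    ultimately show False by simp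
  qed
qed

definition G0 :: "unit monoid" where
  "G0 = \<lparr>carrier = UNIV, monoid.mult = (\<lambda>_ _. ()), one = ()\<rparr>"

theorem triangularize:
  fixes A :: "'f::alg_closed_field mat"
  assumes A: "A \<in> carrier_mat n n"
  shows "\<exists>T Ti. T \<in> carrier_mat n n \<and> Ti \<in> carrier_mat n n \<and> T * Ti = 1\<^sub>m n \<and> Ti * T = 1\<^sub>m n \<and> utri (Ti * A * T)"
proof -
  let ?r = "\<lambda>_::unit. A"
  have r: "rcar G0 n ?r" using A by (simp add: rcar_def)
  have sub0: "is_submodule G0 n ?r {0\<^sub>v n}" using A
    unfolding is_submodule_def is_subspace_def by auto
  have subC: "is_submodule G0 n ?r (carrier_vec n)" using A
    unfolding is_submodule_def is_subspace_def by auto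
  obtain k Ws where s: "ser G0 n ?r {0\<^sub>v n} (carrier_vec n) k Ws"
    using ser_exists[OF sub0 subC] by force
  have Wsub: "\<forall>i\<le>k. is_subspace n (Ws i)" using s by (auto simp: ser_def is_submodule_def)
  have Wmono: "\<forall>i<k. Ws i \<subseteq> Ws (Suc i)" using s by (auto simp: ser_def)
  have Wtop: "Ws k = carrier_vec n" using s by (simp add: ser_def)
  obtain T Ti a where Ta: "T \<in> carrier_mat n n" "Ti \<in> carrier_mat n n" "T * Ti = 1\<^sub>m n" "Ti * T = 1\<^sub>m n"
    "\<forall>i\<le>k. a i \<le> n \<and> Ws i = coordsub n Ti (a i)" "\<forall>i<k. a i \<le> a (Suc i)" "a k = n"
    using adapted_T[OF Wsub Wmono Wtop] by blast
  interpret adapted n T Ti using Ta by unfold_locales auto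
  have inv: "\<forall>x\<in>Ws i. A *\<^sub>v x \<in> Ws i" if "i \<le> k" for i
    using s that unfolding ser_def is_submodule_def G0_def by auto
  have a0: "a 0 = 0"
  proof (rule ccontr)
    assume ne: "a 0 \<noteq> 0"
    have "Ws 0 = {0\<^sub>v n}" using s by (simp add: ser_def)
    hence cz: "coordsub n Ti (a 0) = {0\<^sub>v n}" using Ta(5) by auto
    have n0: "0 < n" using ne Ta(5) by (metis le0 le_neq_implies_less less_le_trans neq0_conv)
    have u: "unit_vec n 0 \<in> carrier_vec n" by simp
    have "T *\<^sub>v unit_vec n 0 \<in> coordsub n Ti (a 0)"
      unfolding coordsub_def using TiT_vec[OF u] T ne by (auto simp: unit_vec_def)
    hence "T *\<^sub>v unit_vec n 0 = 0\<^sub>v n" using cz by blast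
    hence "Ti *\<^sub>v (T *\<^sub>v unit_vec n 0) = 0\<^sub>v n" using Ti by (metis carrier_matD(1,2) mat_vec_zero_right)
    hence "unit_vec n 0 = (0\<^sub>v n :: 'f vec)" using TiT_vec[OF u] by simp
    hence "unit_vec n 0 $ 0 = (0\<^sub>v n :: 'f vec) $ 0" by simp
    thus False using n0 by simp
  qed
  have step: "a (Suc t) = Suc (a t)" if t: "t < k" for t
  proof -
    have le: "a t \<le> a (Suc t)" "a (Suc t) \<le> n" using Ta(5,6) t by auto
    have eqs: "Ws t = coordsub n Ti (a t)" "Ws (Suc t) = coordsub n Ti (a (Suc t))" using Ta(5) t by auto
    have fi: "factor_iso G0 n ?r (coordsub n Ti (a t)) (coordsub n Ti (a (Suc t))) (a (Suc t) - a t) (\<lambda>g. blk (Ti * A * T) (a t) (a (Suc t)))"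
    proof (rule fi_from_T[OF r le])
      have i1: "\<forall>x\<in>Ws t. A *\<^sub>v x \<in> Ws t" using inv t by simp
      have i2: "\<forall>x\<in>Ws (Suc t). A *\<^sub>v x \<in> Ws (Suc t)" using inv t by simp
      show "\<forall>g\<in>carrier G0. \<forall>x\<in>coordsub n Ti (a t). ?r g *\<^sub>v x \<in> coordsub n Ti (a t)" using i1 eqs by simp
      show "\<forall>g\<in>carrier G0. \<forall>x\<in>coordsub n Ti (a (Suc t)). ?r g *\<^sub>v x \<in> coordsub n Ti (a (Suc t))" using i2 eqs by simp
    qed
    have Ym: "is_submodule G0 n ?r (Ws (Suc t))" using s t by (simp add: ser_def)
    have st: "Ws t \<subset> Ws (Suc t)" and mx: "\<forall>U. is_submodule G0 n ?r U \<and> Ws t \<subseteq> U \<and> U \<subseteq> Ws (Suc t) \<longrightarrow> U = Ws t \<or> U = Ws (Suc t)"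
      using s t unfolding ser_def by auto
    have aux: "a (Suc t) - a t > 0 \<and> (\<forall>Z. is_submodule G0 (a (Suc t) - a t) (\<lambda>g. blk (Ti * A * T) (a t) (a (Suc t))) Z \<longrightarrow> Z = {0\<^sub>v (a (Suc t) - a t)} \<or> Z = carrier_vec (a (Suc t) - a t))"
      by (rule fi_simple_aux[OF fi]) (use Ym st mx eqs in auto)
    have "a (Suc t) - a t = 1"
      by (rule dim_one[OF blk_carrier]) (use aux in auto)
    thus ?thesis by simp
  qed
  have at: "a t = t" if "t \<le> k" for t using that
  proof (induction t)
    case 0 thus ?case using a0 by simp
  next
    case (Suc t) thus ?case using step[of t] by simp
  qed
  have kn: "k = n" using at[of k] Ta(7) by simp
  have "utri (Ti * A * T)" unfolding utri_def
  proof (intro allI impI)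
    fix i j assume ji: "j < i" and i: "i < dim_row (Ti * A * T)"
    hence i': "i < n" using Ti by simp
    have ik: "i \<le> k" using i' kn by simp
    have "\<forall>x\<in>coordsub n Ti i. A *\<^sub>v x \<in> coordsub n Ti i" using inv[OF ik] Ta(5) ik at[OF ik] by auto
    thus "(Ti * A * T) $$ (i,j) = 0" by (rule zero_block[OF A]) (use ji i' in auto)
  qed
  thus ?thesis using Ta by blast
qed

lemma eigen_pow_one:
  fixes A :: "'f::field mat"
  assumes A: "A \<in> carrier_mat n n" and pow: "A ^\<^sub>m m = 1\<^sub>m n" and root: "poly (char_poly A) lam = 0"
  shows "lam ^ m = 1"
proof -
  have "eigenvalue A lam" using eigenvalue_root_char_poly[OF A] root by simp
  then obtain v where v: "v \<in> carrier_vec n" "v \<noteq> 0\<^sub>v n" "A *\<^sub>v v = lam \<cdot>\<^sub>v v"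
    unfolding eigenvalue_def eigenvector_def using A by auto
  have pw: "(A ^\<^sub>m k) *\<^sub>v v = lam ^ k \<cdot>\<^sub>v v" for k
  proof (induction k)
    case 0 thus ?case using A v by simp
  next
    case (Suc k)
    have Ak: "A ^\<^sub>m k \<in> carrier_mat n n" using A by simp
    have "(A ^\<^sub>m Suc k) *\<^sub>v v = (A ^\<^sub>m k) *\<^sub>v (A *\<^sub>v v)"
      by (simp only: pow_mat.simps) (rule assoc_mult_mat_vec[OF Ak A v(1)])
    also have "\<dots> = lam \<cdot>\<^sub>v ((A ^\<^sub>m k) *\<^sub>v v)" using v Ak by (simp add: mult_mat_vec)
    also have "\<dots> = lam ^ Suc k \<cdot>\<^sub>v v" using Suc by (simp add: smult_smult_assoc mult.commute)
    finally show ?case .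
  qed
  obtain i where i: "i < n" "v $ i \<noteq> 0" using v(1,2) by (metis carrier_vecD eq_vecI index_zero_vec(1,2))
  have "v = lam ^ m \<cdot>\<^sub>v v" using pw[of m] pow v by simp
  hence "v $ i = lam ^ m * v $ i" using i by (metis index_smult_vec(1) carrier_vecD v(1))
  thus ?thesis using i(2) by (metis mult_cancel_right2)
qed


lemma rep_pow:
  fixes \<rho> :: "'g \<Rightarrow> 'a::field mat"
  assumes G: "group G" and rep: "is_rep G d \<rho>" and g: "g \<in> carrier G"
  shows "\<rho> (g [^]\<^bsub>G\<^esub> k) = (\<rho> g) ^\<^sub>m k"
proof (induction k)
  case 0
  have "\<rho> g \<in> carrier_mat d d" using rep g by (simp add: is_rep_def)
  thus ?case using rep by (simp add: is_rep_def)
next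
  case (Suc k)
  have gk: "g [^]\<^bsub>G\<^esub> k \<in> carrier G" using G g by (simp add: group.is_monoid monoid.nat_pow_closed)
  have "\<rho> (g [^]\<^bsub>G\<^esub> Suc k) = \<rho> (g [^]\<^bsub>G\<^esub> k \<otimes>\<^bsub>G\<^esub> g)" using G by (simp add: group.is_monoid monoid.nat_pow_Suc)
  also have "\<dots> = \<rho> (g [^]\<^bsub>G\<^esub> k) * \<rho> g" using rep gk g by (simp add: is_rep_def)
  finally show ?case using Suc by simp
qed

lemma ord_dvd_q:
  fixes G :: "('g, 'm) monoid_scheme"
  assumes G: "group G" and fin: "finite (carrier G)" and reg: "p_regular G TYPE('f::field) g"
  shows "group.ord G g dvd p'_part CHAR('f) (card (carrier G))"
proof -
  have g: "g \<in> carrier G" and nz: "(of_nat (group.ord G g) :: 'f) \<noteq> 0" using reg by (auto simp: p_regular_def)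
  have dN: "group.ord G g dvd card (carrier G)"
    using group.ord_dvd_group_order[OF G g] by (simp add: Coset.order_def)
  show ?thesis
  proof (cases "CHAR('f) = 0")
    case True thus ?thesis using dN by (simp add: p'_part_def)
  next
    case False
    hence p: "prime CHAR('f)" by (simp add: prime_CHAR_semidom)
    have np: "\<not> CHAR('f) dvd group.ord G g" using nz by (simp add: of_nat_eq_0_iff_char_dvd)
    let ?r = "multiplicity CHAR('f) (card (carrier G))"
    have cop: "coprime (group.ord G g) (CHAR('f) ^ ?r)" using prime_imp_power_coprime[OF p np] .
    have "CHAR('f) ^ ?r dvd card (carrier G)" by (rule multiplicity_dvd)
    hence "group.ord G g * CHAR('f) ^ ?r dvd card (carrier G)" by (rule divides_mult[OF dN _ cop])
    then obtain c where c: "card (carrier G) = group.ord G g * CHAR('f) ^ ?r * c" by (auto elim: dvdE)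
    have pp: "CHAR('f) ^ ?r > 0" using p by (simp add: prime_gt_0_nat)
    have c2: "card (carrier G) = CHAR('f) ^ ?r * (group.ord G g * c)" using c by (simp add: ac_simps)
    have "card (carrier G) div CHAR('f) ^ ?r = group.ord G g * c"
      using pp by (subst c2) simp
    hence "group.ord G g dvd card (carrier G) div CHAR('f) ^ ?r" by simp
    thus ?thesis using False by (simp add: p'_part_def)
  qed
qed

lemma root_unity:
  fixes \<rho> :: "'g \<Rightarrow> 'f::field mat"
  assumes G: "group G" and fin: "finite (carrier G)" and reg: "p_regular G TYPE('f) g"
    and rep: "is_rep G d \<rho>" and root: "poly (char_poly (\<rho> g)) lam = 0"
  shows "lam ^ p'_part CHAR('f) (card (carrier G)) = 1"
proof -
  have g: "g \<in> carrier G" using reg by (simp add: p_regular_def)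
  have A: "\<rho> g \<in> carrier_mat d d" using rep g by (simp add: is_rep_def)
  have "(\<rho> g) ^\<^sub>m group.ord G g = \<rho> (g [^]\<^bsub>G\<^esub> group.ord G g)" using rep_pow[OF G rep g] by simp
  also have "\<dots> = 1\<^sub>m d" using group.pow_ord_eq_1[OF G g] rep by (simp add: is_rep_def)
  finally have "lam ^ group.ord G g = 1" using eigen_pow_one[OF A _ root] by simp
  then obtain c where "p'_part CHAR('f) (card (carrier G)) = group.ord G g * c"
    using ord_dvd_q[OF G fin reg] by (auto elim: dvdE)
  thus ?thesis using \<open>lam ^ group.ord G g = 1\<close> by (simp add: power_mult)
qed

lemma similar_char_poly_eq:
  fixes A B P Q :: "'f::field mat"
  assumes A: "A \<in> carrier_mat n n" and B: "B \<in> carrier_mat n n" and P: "P \<in> carrier_mat n n" and Q: "Q \<in> carrier_mat n n"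
    and PQ: "P * Q = 1\<^sub>m n" and QP: "Q * P = 1\<^sub>m n" and eq: "A = P * B * Q"
  shows "char_poly A = char_poly B"
proof -
  have "similar_mat A B" unfolding similar_mat_def similar_mat_wit_def
    using A B P Q PQ QP eq by (intro exI[of _ P] exI[of _ Q]) (auto simp: Let_def)
  thus ?thesis by (rule char_poly_similar)
qed

lemma rep_iso_char_poly:
  fixes \<sigma> \<sigma>' :: "'g \<Rightarrow> 'f::field mat"
  assumes iso: "rep_iso G e \<sigma> e' \<sigma>'" and c: "rcar G e \<sigma>" and c': "rcar G e' \<sigma>'" and g: "g \<in> carrier G"
  shows "char_poly (\<sigma> g) = char_poly (\<sigma>' g)"
proof -
  obtain Q where e: "e = e'" and Q: "Q \<in> carrier_mat e e" "invertible_mat Q" "Q * \<sigma> g = \<sigma>' g * Q"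
    using iso g unfolding rep_iso_def by blast
  obtain Q' where Q'0: "Q * Q' = 1\<^sub>m e" "Q' * Q = 1\<^sub>m (dim_row Q')"
    using Q(1,2) unfolding invertible_mat_def inverts_mat_def by auto
  have "dim_col (Q' * Q) = e" using Q(1) by simp
  hence "dim_row Q' = e" using Q'0(2) by (metis index_one_mat(3))
  moreover have "dim_col Q' = e" using Q'0(1) by (metis index_mult_mat(3) index_one_mat(3))
  ultimately have Q': "Q * Q' = 1\<^sub>m e" "Q' * Q = 1\<^sub>m e" "Q' \<in> carrier_mat e e"
    using Q'0 by (auto intro: carrier_matI)
  have s: "\<sigma> g \<in> carrier_mat e e" and s': "\<sigma>' g \<in> carrier_mat e e" using c c' g e by (auto simp: rcar_def)
  have "\<sigma> g = Q' * \<sigma>' g * Q"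
  proof -
    have "\<sigma> g = (Q' * Q) * \<sigma> g" using Q'(2) s by simp
    also have "\<dots> = Q' * (Q * \<sigma> g)" using Q'(3) Q(1) s by (simp add: assoc_mult_mat)
    also have "\<dots> = Q' * (\<sigma>' g * Q)" using Q(3) by simp
    also have "\<dots> = Q' * \<sigma>' g * Q" using Q'(3) Q(1) s' by (simp add: assoc_mult_mat)
    finally show ?thesis .
  qed
  thus ?thesis by (rule similar_char_poly_eq[OF s s' Q'(3) Q(1) Q'(2) Q'(1)])
qed

lemma tensor_is_rep:
  fixes S V :: "'g \<Rightarrow> 'f::field mat"
  assumes S: "is_rep G e S" and V: "is_rep G n V"
  shows "is_rep G (e * n) (tensor_rep S V)"
  unfolding is_rep_def tensor_rep_def
proof (intro conjI ballI)
  fix g assume g: "g \<in> carrier G"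
  show "kron (S g) (V g) \<in> carrier_mat (e * n) (e * n)"
    using S V g by (intro kron_carrier) (auto simp: is_rep_def)
next
  show "kron (S \<one>\<^bsub>G\<^esub>) (V \<one>\<^bsub>G\<^esub>) = 1\<^sub>m (e * n)" using S V kron_one by (simp add: is_rep_def)
next
  fix g h assume g: "g \<in> carrier G" and h: "h \<in> carrier G"
  have c: "S g \<in> carrier_mat e e" "S h \<in> carrier_mat e e" "V g \<in> carrier_mat n n" "V h \<in> carrier_mat n n"
    using S V g h by (auto simp: is_rep_def)
  show "kron (S (g \<otimes>\<^bsub>G\<^esub> h)) (V (g \<otimes>\<^bsub>G\<^esub> h)) = kron (S g) (V g) * kron (S h) (V h)"
    using S V g h kron_mult[OF c(1) c(3) c(2) c(4)] by (simp add: is_rep_def)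
qed

lemma rep_rcar: "is_rep G d \<rho> \<Longrightarrow> rcar G d \<rho>"
  by (simp add: is_rep_def rcar_def)

lemma comp_mult_eq:
  fixes \<rho> :: "'g \<Rightarrow> 'f::field mat"
  assumes r: "rcar G d \<rho>" and s: "ser G d \<rho> {0\<^sub>v d} (carrier_vec d) k Ws" and c: "rcar G e \<sigma>"
  shows "comp_mult G d \<rho> e \<sigma> = cnt G d \<rho> k Ws e \<sigma>"
proof -
  have ex: "\<exists>c k Ws. is_comp_series G d \<rho> k Ws \<and> c = card {i. i < k \<and> factor_iso G d \<rho> (Ws i) (Ws (Suc i)) e \<sigma>}"
    using s comp_ser by blast
  obtain k' Ws' where kW: "is_comp_series G d \<rho> k' Ws'"
    "comp_mult G d \<rho> e \<sigma> = card {i. i < k' \<and> factor_iso G d \<rho> (Ws' i) (Ws' (Suc i)) e \<sigma>}"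
    using someI_ex[OF ex] unfolding comp_mult_def by blast
  have s': "ser G d \<rho> {0\<^sub>v d} (carrier_vec d) k' Ws'" using kW(1) comp_ser by blast
  have "cnt G d \<rho> k' Ws' e \<sigma> = cnt G d \<rho> k Ws e \<sigma>" using JH[OF r s' s] c by blast
  thus ?thesis using kW(2) by (simp add: cnt_def)
qed


lemma bcp_prod_set:
  fixes p :: "nat \<Rightarrow> 'f::field poly"
  assumes "\<forall>t<k. p t \<noteq> 0"
  shows "bcp hat (\<Prod>t<k. p t) = (\<Sum>t<k. bcp hat (p t))"
  using assms
proof (induction k)
  case 0 thus ?case by (simp add: bcp_one)
next
  case (Suc k)
  have nz: "(\<Prod>t<k. p t) \<noteq> 0" using Suc.prems by (auto simp: prod_zero_iff)
  have "bcp hat (\<Prod>t<Suc k. p t) = bcp hat ((\<Prod>t<k. p t) * p k)" by simp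
  also have "\<dots> = bcp hat (\<Prod>t<k. p t) + bcp hat (p k)" by (rule bcp_mult[OF nz]) (use Suc.prems in auto)
  finally show ?case using Suc by simp
qed

lemma utri_char_root:
  fixes U :: "'f::field mat"
  assumes "A \<in> carrier_mat n n" "char_poly A = (\<Prod>i<n. [:- (U $$ (i,i)), 1:])" "s < n"
  shows "poly (char_poly A) (U $$ (s,s)) = 0"
proof -
  have "poly (\<Prod>i<n. [:- (U $$ (i,i)), 1:]) (U $$ (s,s)) = (\<Prod>i<n. poly [:- (U $$ (i,i)), 1:] (U $$ (s,s)))"
    by (rule poly_prod)
  also have "\<dots> = 0" using assms(3) by (intro prod_zero) auto
  finally show ?thesis using assms(2) by simp
qed

lemma triang_char:
  fixes A :: "'f::alg_closed_field mat"
  assumes A: "A \<in> carrier_mat n n"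
  shows "\<exists>T Ti U. T \<in> carrier_mat n n \<and> Ti \<in> carrier_mat n n \<and> T * Ti = 1\<^sub>m n \<and> Ti * T = 1\<^sub>m n
    \<and> U \<in> carrier_mat n n \<and> utri U \<and> A = T * U * Ti \<and> char_poly A = (\<Prod>i<n. [:- (U $$ (i,i)), 1:])"
proof -
  obtain T Ti where T: "T \<in> carrier_mat n n" "Ti \<in> carrier_mat n n" "T * Ti = 1\<^sub>m n" "Ti * T = 1\<^sub>m n" "utri (Ti * A * T)"
    using triangularize[OF A] by blast
  define U where "U = Ti * A * T"
  have TA: "Ti * A \<in> carrier_mat n n" by (rule mult_carrier_mat[OF T(2) A])
  have U: "U \<in> carrier_mat n n" unfolding U_def by (rule mult_carrier_mat[OF TA T(1)])
  have 1: "U * Ti = Ti * A"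
  proof -
    have "U * Ti = Ti * A * (T * Ti)" unfolding U_def by (rule assoc_mult_mat[OF TA T(1) T(2)])
    also have "\<dots> = Ti * A * 1\<^sub>m n" by (simp only: T(3))
    also have "\<dots> = Ti * A" by (rule right_mult_one_mat[OF TA])
    finally show ?thesis .
  qed
  have 2: "T * (Ti * A) = A"
  proof -
    have "T * (Ti * A) = T * Ti * A" by (rule assoc_mult_mat[OF T(1) T(2) A, symmetric])
    also have "\<dots> = 1\<^sub>m n * A" by (simp only: T(3))
    also have "\<dots> = A" by (rule left_mult_one_mat[OF A])
    finally show ?thesis .
  qed
  have AU: "A = T * U * Ti"
  proof -
    have "T * U * Ti = T * (U * Ti)" by (rule assoc_mult_mat[OF T(1) U T(2)])
    thus ?thesis using 1 2 by simp
  qed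
  have "char_poly A = char_poly U" by (rule similar_char_poly_eq[OF A U T(1,2,3,4) AU])
  also have "\<dots> = (\<Prod>i<n. [:- (U $$ (i,i)), 1:])" by (rule char_poly_utri[OF U]) (use T(5) in \<open>simp only: U_def\<close>)
  finally have cp: "char_poly A = (\<Prod>i<n. [:- (U $$ (i,i)), 1:])" .
  have ut: "utri U" using T(5) by (simp only: U_def)
  show ?thesis by (intro exI[of _ T] exI[of _ Ti] exI[of _ U] conjI T(1-4) U ut AU cp)
qed

lemma kron_brauer:
  fixes A B :: "'f::alg_closed_field mat"
  assumes A: "A \<in> carrier_mat e e" and B: "B \<in> carrier_mat n n"
    and hm: "\<forall>x\<in>RU. \<forall>y\<in>RU. hat (x * y) = hat x * hat y"
    and rA: "\<forall>x. poly (char_poly A) x = 0 \<longrightarrow> x \<in> RU"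
    and rB: "\<forall>x. poly (char_poly B) x = 0 \<longrightarrow> x \<in> RU"
  shows "bcp hat (char_poly (kron A B)) = bcp hat (char_poly A) * bcp hat (char_poly B)"
proof -
  obtain T1 Ti1 U1 where T1: "T1 \<in> carrier_mat e e" "Ti1 \<in> carrier_mat e e" "T1 * Ti1 = 1\<^sub>m e" "Ti1 * T1 = 1\<^sub>m e"
    "U1 \<in> carrier_mat e e" "utri U1" "A = T1 * U1 * Ti1" "char_poly A = (\<Prod>i<e. [:- (U1 $$ (i,i)), 1:])"
    using triang_char[OF A] by blast
  obtain T2 Ti2 U2 where T2: "T2 \<in> carrier_mat n n" "Ti2 \<in> carrier_mat n n" "T2 * Ti2 = 1\<^sub>m n" "Ti2 * T2 = 1\<^sub>m n"
    "U2 \<in> carrier_mat n n" "utri U2" "B = T2 * U2 * Ti2" "char_poly B = (\<Prod>i<n. [:- (U2 $$ (i,i)), 1:])"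
    using triang_char[OF B] by blast
  let ?P = "kron T1 T2" and ?Q = "kron Ti1 Ti2" and ?U = "kron U1 U2"
  have P: "?P \<in> carrier_mat (e * n) (e * n)" using T1 T2 kron_carrier by blast
  have Q: "?Q \<in> carrier_mat (e * n) (e * n)" using T1 T2 kron_carrier by blast
  have Uc: "?U \<in> carrier_mat (e * n) (e * n)" using T1 T2 kron_carrier by blast
  have KAB: "kron A B \<in> carrier_mat (e * n) (e * n)" using A B kron_carrier by blast
  have PQ: "?P * ?Q = 1\<^sub>m (e * n)" using kron_mult[OF T1(1) T2(1) T1(2) T2(2)] T1(3) T2(3) kron_one by simp
  have QP: "?Q * ?P = 1\<^sub>m (e * n)" using kron_mult[OF T1(2) T2(2) T1(1) T2(1)] T1(4) T2(4) kron_one by simp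
  have eq: "kron A B = ?P * ?U * ?Q"
  proof -
    have "?P * ?U = kron (T1 * U1) (T2 * U2)" by (rule kron_mult[OF T1(1) T2(1) T1(5) T2(5)])
    moreover have "kron (T1 * U1) (T2 * U2) * ?Q = kron (T1 * U1 * Ti1) (T2 * U2 * Ti2)"
      by (rule kron_mult) (use T1 T2 in auto)
    ultimately show ?thesis using T1(7) T2(7) by simp
  qed
  have "char_poly (kron A B) = char_poly ?U" by (rule similar_char_poly_eq[OF KAB Uc P Q PQ QP eq])
  also have "\<dots> = (\<Prod>t<e * n. [:- (?U $$ (t,t)), 1:])"
    by (rule char_poly_utri[OF Uc kron_utri[OF T1(5) T2(5) T1(6) T2(6)]])
  finally have cK: "char_poly (kron A B) = (\<Prod>t<e * n. [:- (?U $$ (t,t)), 1:])" .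
  have r1: "U1 $$ (s,s) \<in> RU" if "s < e" for s using rA utri_char_root[OF A T1(8) that] by blast
  have r2: "U2 $$ (u,u) \<in> RU" if "u < n" for u using rB utri_char_root[OF B T2(8) that] by blast
  have "bcp hat (char_poly (kron A B)) = (\<Sum>t<e * n. hat (?U $$ (t,t)))" unfolding cK by (rule bcp_prod)
  also have "\<dots> = (\<Sum>t<e * n. hat (U1 $$ (t div n, t div n) * U2 $$ (t mod n, t mod n)))"
    by (intro sum.cong refl) (use T1 T2 in \<open>simp add: kron_index[of _ e e _ n n]\<close>)
  also have "\<dots> = (\<Sum>s<e. \<Sum>u<n. hat (U1 $$ (s, s) * U2 $$ (u, u)))"
    by (rule sum_div_mod[where f = "\<lambda>s u. hat (U1 $$ (s, s) * U2 $$ (u, u))"])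
  also have "\<dots> = (\<Sum>s<e. \<Sum>u<n. hat (U1 $$ (s, s)) * hat (U2 $$ (u, u)))"
    using hm r1 r2 by (intro sum.cong refl) auto
  also have "\<dots> = (\<Sum>s<e. hat (U1 $$ (s, s))) * (\<Sum>u<n. hat (U2 $$ (u, u)))"
    by (simp add: sum_product)
  also have "(\<Sum>s<e. hat (U1 $$ (s, s))) = bcp hat (char_poly A)" unfolding T1(8) by (rule bcp_prod[symmetric])
  also have "(\<Sum>u<n. hat (U2 $$ (u, u))) = bcp hat (char_poly B)" unfolding T2(8) by (rule bcp_prod[symmetric])
  finally show ?thesis .
qed


lemma conj_back:
  fixes A T Ti :: "'a::field mat"
  assumes A: "A \<in> carrier_mat n n" and T: "T \<in> carrier_mat n n" and Ti: "Ti \<in> carrier_mat n n"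
    and TTi: "T * Ti = 1\<^sub>m n"
  shows "A = T * (Ti * A * T) * Ti"
proof -
  have TA: "Ti * A \<in> carrier_mat n n" by (rule mult_carrier_mat[OF Ti A])
  have U: "Ti * A * T \<in> carrier_mat n n" by (rule mult_carrier_mat[OF TA T])
  have 1: "(Ti * A * T) * Ti = Ti * A"
  proof -
    have "(Ti * A * T) * Ti = Ti * A * (T * Ti)" by (rule assoc_mult_mat[OF TA T Ti])
    also have "\<dots> = Ti * A * 1\<^sub>m n" by (simp only: TTi)
    also have "\<dots> = Ti * A" by (rule right_mult_one_mat[OF TA])
    finally show ?thesis .
  qed
  have 2: "T * (Ti * A) = A"
  proof -
    have "T * (Ti * A) = T * Ti * A" by (rule assoc_mult_mat[OF T Ti A, symmetric])
    also have "\<dots> = 1\<^sub>m n * A" by (simp only: TTi)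
    also have "\<dots> = A" by (rule left_mult_one_mat[OF A])
    finally show ?thesis .
  qed
  have "T * (Ti * A * T) * Ti = T * ((Ti * A * T) * Ti)" by (rule assoc_mult_mat[OF T U Ti])
  thus ?thesis using 1 2 by simp
qed

lemma zero_mult_vec: "A \<in> carrier_mat n m \<Longrightarrow> A *\<^sub>v 0\<^sub>v m = 0\<^sub>v n"
  by (metis carrier_matD(1,2) mat_vec_zero_right)

lemma card_sum_complex:
  "of_nat (card {t. t < k \<and> P t}) * (c :: complex) = (\<Sum>t<k. if P t then c else 0)" for k :: nat
proof -
  have "(\<Sum>t<k. if P t then c else 0) = sum (\<lambda>_. c) {t \<in> {..<k}. P t}"
    by (rule sum.inter_filter[symmetric]) simp
  also have "\<dots> = of_nat (card {t \<in> {..<k}. P t}) * c" by simp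
  also have "{t \<in> {..<k}. P t} = {t. t < k \<and> P t}" by auto
  finally show ?thesis by simp
qed

lemma module_char:
  fixes G :: "('g, 'm) monoid_scheme" and Tr :: "'g \<Rightarrow> 'f::field mat"
    and Ss :: "(nat \<times> ('g \<Rightarrow> 'f mat)) list"
  assumes G: "group G" and rep: "is_rep G D Tr" and g: "g \<in> carrier G"
    and Ss_simple: "\<forall>S\<in>set Ss. is_simple G (fst S) (snd S)"
    and Ss_distinct: "\<forall>i<length Ss. \<forall>j<length Ss. i \<noteq> j \<longrightarrow>
                        \<not> rep_iso G (fst (Ss ! i)) (snd (Ss ! i)) (fst (Ss ! j)) (snd (Ss ! j))"
    and Ss_all: "\<forall>d (\<rho> :: 'g \<Rightarrow> 'f mat). is_simple G d \<rho> \<longrightarrow>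
                   (\<exists>i<length Ss. rep_iso G d \<rho> (fst (Ss ! i)) (snd (Ss ! i)))"
  shows "bcp hat (char_poly (Tr g)) =
    (\<Sum>i<length Ss. of_nat (comp_mult G D Tr (fst (Ss ! i)) (snd (Ss ! i))) * bcp hat (char_poly (snd (Ss ! i) g)))"
proof -
  let ?l = "length Ss"
  have r: "rcar G D Tr" by (rule rep_rcar[OF rep])
  have rS: "rcar G (fst (Ss ! i)) (snd (Ss ! i))" if "i < ?l" for i
    using Ss_simple that by (intro rep_rcar) (auto simp: is_simple_def)
  have mon: "monoid G" using G by (simp add: group.is_monoid)
  have Tg: "Tr g \<in> carrier_mat D D" using r g by (simp add: rcar_def)
  have sub0: "is_submodule G D Tr {0\<^sub>v D}" using r
    unfolding is_submodule_def is_subspace_def rcar_def by (auto simp: zero_mult_vec)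
  have subC: "is_submodule G D Tr (carrier_vec D)" using r
    unfolding is_submodule_def is_subspace_def rcar_def by auto
  obtain k Ws where s: "ser G D Tr {0\<^sub>v D} (carrier_vec D) k Ws"
    using ser_exists[OF sub0 subC] by force
  have cm: "comp_mult G D Tr (fst (Ss ! i)) (snd (Ss ! i)) = cnt G D Tr k Ws (fst (Ss ! i)) (snd (Ss ! i))"
    if "i < ?l" for i by (rule comp_mult_eq[OF r s rS[OF that]])
  have Wsub: "\<forall>i\<le>k. is_subspace D (Ws i)" using s by (auto simp: ser_def is_submodule_def)
  have Wmono: "\<forall>i<k. Ws i \<subseteq> Ws (Suc i)" using s by (auto simp: ser_def)
  have Wtop: "Ws k = carrier_vec D" using s by (simp add: ser_def)
  obtain P Pi a where Ta: "P \<in> carrier_mat D D" "Pi \<in> carrier_mat D D" "P * Pi = 1\<^sub>m D" "Pi * P = 1\<^sub>m D"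
    "\<forall>i\<le>k. a i \<le> D \<and> Ws i = coordsub D Pi (a i)" "\<forall>i<k. a i \<le> a (Suc i)" "a k = D"
    using adapted_T[OF Wsub Wmono Wtop] by blast
  interpret adapted D P Pi using Ta by unfold_locales auto
  have inv: "\<forall>h\<in>carrier G. \<forall>x\<in>Ws t. Tr h *\<^sub>v x \<in> Ws t" if "t \<le> k" for t
    using s that unfolding ser_def is_submodule_def by auto
  have eqs: "Ws t = coordsub D Pi (a t)" if "t \<le> k" for t using Ta(5) that by auto
  have a0: "a 0 = 0"
  proof (rule ccontr)
    assume ne: "a 0 \<noteq> 0"
    have "Ws 0 = {0\<^sub>v D}" using s by (simp add: ser_def)
    hence cz: "coordsub D Pi (a 0) = {0\<^sub>v D}" using Ta(5) by auto
    have n0: "0 < D" using ne Ta(5) by (metis le0 le_neq_implies_less less_le_trans neq0_conv)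
    have u: "unit_vec D 0 \<in> carrier_vec D" by simp
    have "P *\<^sub>v unit_vec D 0 \<in> coordsub D Pi (a 0)"
      unfolding coordsub_def using TiT_vec[OF u] T ne by (auto simp: unit_vec_def)
    hence "P *\<^sub>v unit_vec D 0 = 0\<^sub>v D" using cz by blast
    hence "Pi *\<^sub>v (P *\<^sub>v unit_vec D 0) = 0\<^sub>v D" using Ti by (metis carrier_matD(1,2) mat_vec_zero_right)
    hence "unit_vec D 0 = (0\<^sub>v D :: 'f vec)" using TiT_vec[OF u] by simp
    hence "unit_vec D 0 $ 0 = (0\<^sub>v D :: 'f vec) $ 0" by simp
    thus False using n0 by simp
  qed
  define \<sigma> where "\<sigma> t = (\<lambda>h. blk (Pi * Tr h * P) (a t) (a (Suc t)))" for t
  define e where "e t = a (Suc t) - a t" for t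
  have rs: "rcar G (e t) (\<sigma> t)" for t by (simp add: rcar_def \<sigma>_def e_def)
  have fi: "factor_iso G D Tr (Ws t) (Ws (Suc t)) (e t) (\<sigma> t)" if t: "t < k" for t
  proof -
    have le: "a t \<le> a (Suc t)" "a (Suc t) \<le> D" using Ta(5,6) t by auto
    have "factor_iso G D Tr (coordsub D Pi (a t)) (coordsub D Pi (a (Suc t))) (a (Suc t) - a t) (\<lambda>h. blk (Pi * Tr h * P) (a t) (a (Suc t)))"
    proof (rule fi_from_T[OF r le])
      show "\<forall>h\<in>carrier G. \<forall>x\<in>coordsub D Pi (a t). Tr h *\<^sub>v x \<in> coordsub D Pi (a t)"
        using inv[of t] eqs[of t] t by simp
      show "\<forall>h\<in>carrier G. \<forall>x\<in>coordsub D Pi (a (Suc t)). Tr h *\<^sub>v x \<in> coordsub D Pi (a (Suc t))"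
        using inv[of "Suc t"] eqs[of "Suc t"] t by simp
    qed
    thus ?thesis using eqs[of t] eqs[of "Suc t"] t by (simp add: \<sigma>_def e_def)
  qed
  have simple: "is_simple G (e t) (\<sigma> t)" if t: "t < k" for t
  proof (rule fi_simple[OF mon fi[OF t] rs r rep])
    show "is_submodule G D Tr (Ws (Suc t))" "is_submodule G D Tr (Ws t)" using s t by (auto simp: ser_def)
    show "Ws t \<subset> Ws (Suc t)" using s t by (auto simp: ser_def)
    show "\<forall>U. is_submodule G D Tr U \<and> Ws t \<subseteq> U \<and> U \<subseteq> Ws (Suc t) \<longrightarrow> U = Ws t \<or> U = Ws (Suc t)"
      using s t unfolding ser_def by blast
  qed
  define FI where "FI t i \<longleftrightarrow> factor_iso G D Tr (Ws t) (Ws (Suc t)) (fst (Ss ! i)) (snd (Ss ! i))" for t i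
  have Ym: "is_submodule G D Tr (Ws (Suc t))" if "t < k" for t using s that by (auto simp: ser_def)
  have ex: "\<exists>i<?l. FI t i" if t: "t < k" for t
  proof -
    obtain i where i: "i < ?l" "rep_iso G (e t) (\<sigma> t) (fst (Ss ! i)) (snd (Ss ! i))" using Ss_all simple[OF t] by blast
    have Yc: "Ws (Suc t) \<subseteq> carrier_vec D" using Ym[OF t] by (auto simp: is_submodule_def is_subspace_def)
    have "FI t i" unfolding FI_def by (rule fi_compose[OF fi[OF t] i(2) rs rS[OF i(1)] Yc r])
    thus ?thesis using i by blast
  qed
  have uniq: "i = i'" if t: "t < k" and i: "i < ?l" "FI t i" and i': "i' < ?l" "FI t i'" for t i i'
  proof (rule ccontr)
    assume ne: "i \<noteq> i'"
    have "rep_iso G (fst (Ss ! i)) (snd (Ss ! i)) (fst (Ss ! i')) (snd (Ss ! i'))"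
      using fi_iso[OF i(2)[unfolded FI_def] i'(2)[unfolded FI_def] rS[OF i(1)] rS[OF i'(1)] r Ym[OF t]] .
    thus False using Ss_distinct i(1) i'(1) ne by blast
  qed
  define idx where "idx t = (THE i. i < ?l \<and> FI t i)" for t
  have idx: "idx t < ?l \<and> FI t (idx t)" if t: "t < k" for t
  proof -
    obtain i where i: "i < ?l" "FI t i" using ex[OF t] by blast
    have "\<exists>!i. i < ?l \<and> FI t i" using i uniq[OF t] by blast
    thus ?thesis unfolding idx_def by (rule theI')
  qed
  have FI_iff: "FI t i \<longleftrightarrow> i = idx t" if t: "t < k" and i: "i < ?l" for t i
    using idx[OF t] uniq[OF t i(1) _ ] i by blast
  have cpeq: "char_poly (\<sigma> t g) = char_poly (snd (Ss ! idx t) g)" if t: "t < k" for t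
  proof -
    have "rep_iso G (e t) (\<sigma> t) (fst (Ss ! idx t)) (snd (Ss ! idx t))"
      by (rule fi_iso[OF fi[OF t] idx[OF t, THEN conjunct2, unfolded FI_def] rs rS[OF idx[OF t, THEN conjunct1]] r Ym[OF t]])
    thus ?thesis by (rule rep_iso_char_poly[OF _ rs rS[OF idx[OF t, THEN conjunct1]] g])
  qed
  define M where "M = Pi * Tr g * P"
  have Mc: "M \<in> carrier_mat D D" unfolding M_def using Ta Tg by simp
  have "char_poly (Tr g) = char_poly M"
    by (rule similar_char_poly_eq[OF Tg Mc Ta(1,2,3,4)]) (unfold M_def, rule conj_back[OF Tg Ta(1,2,3)])
  also have "\<dots> = char_poly (blk M 0 (a k))" using blk_full[OF Mc] Ta(7) by simp
  also have "\<dots> = (\<Prod>t<k. char_poly (blk M (a t) (a (Suc t))))"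
  proof (rule char_poly_blocks[of M D a k, OF Mc a0])
    show "\<forall>t<k. a t \<le> a (Suc t)" using Ta(6) .
    show "a k \<le> D" using Ta(7) by simp
    fix t i j assume t: "t \<le> k" and i: "a t \<le> i" "i < D" and j: "j < a t"
    show "M $$ (i, j) = 0" unfolding M_def
      by (rule zero_block[OF Tg _ j i]) (use inv[OF t] eqs[OF t] g in auto)
  qed
  also have "\<dots> = (\<Prod>t<k. char_poly (\<sigma> t g))" by (simp add: \<sigma>_def M_def)
  finally have cpT: "char_poly (Tr g) = (\<Prod>t<k. char_poly (\<sigma> t g))" .
  have "bcp hat (char_poly (Tr g)) = (\<Sum>t<k. bcp hat (char_poly (\<sigma> t g)))"
    unfolding cpT by (rule bcp_prod_set) (use char_poly_nonzero[OF blk_carrier] in \<open>auto simp: \<sigma>_def\<close>)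
  also have "\<dots> = (\<Sum>t<k. bcp hat (char_poly (snd (Ss ! idx t) g)))" using cpeq by simp
  also have "\<dots> = (\<Sum>t<k. \<Sum>i<?l. if i = idx t then bcp hat (char_poly (snd (Ss ! i) g)) else 0)"
    using idx by (intro sum.cong refl) (simp add: sum.delta')
  also have "\<dots> = (\<Sum>i<?l. \<Sum>t<k. if i = idx t then bcp hat (char_poly (snd (Ss ! i) g)) else 0)"
    by (rule sum.swap)
  also have "\<dots> = (\<Sum>i<?l. of_nat (comp_mult G D Tr (fst (Ss ! i)) (snd (Ss ! i))) * bcp hat (char_poly (snd (Ss ! i) g)))"
  proof (rule sum.cong[OF refl])
    fix i assume "i \<in> {..<?l}" hence i: "i < ?l" by simp
    have "of_nat (comp_mult G D Tr (fst (Ss ! i)) (snd (Ss ! i))) * bcp hat (char_poly (snd (Ss ! i) g))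
        = of_nat (card {t. t < k \<and> FI t i}) * bcp hat (char_poly (snd (Ss ! i) g))"
      using cm[OF i] by (simp add: cnt_def FI_def)
    also have "\<dots> = (\<Sum>t<k. if FI t i then bcp hat (char_poly (snd (Ss ! i) g)) else 0)" by (rule card_sum_complex)
    also have "\<dots> = (\<Sum>t<k. if i = idx t then bcp hat (char_poly (snd (Ss ! i) g)) else 0)"
      using FI_iff i by (intro sum.cong refl) auto
    finally show "(\<Sum>t<k. if i = idx t then bcp hat (char_poly (snd (Ss ! i) g)) else 0) =
        of_nat (comp_mult G D Tr (fst (Ss ! i)) (snd (Ss ! i))) * bcp hat (char_poly (snd (Ss ! i) g))" by simp
  qed
  finally show ?thesis .
qed


theorem proposition3p4:
  fixes G :: "('g, 'm) monoid_scheme"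
    and hat :: "'f::alg_closed_field \<Rightarrow> complex"
    and Ss :: "(nat \<times> ('g \<Rightarrow> 'f mat)) list"
    and n :: nat and V :: "'g \<Rightarrow> 'f mat" and g :: 'g
  assumes grp: "group G" and fin: "finite (carrier G)"
    and hat_iso: "bij_betw hat {x::'f. x ^ p'_part CHAR('f) (card (carrier G)) = 1}
                               {z::complex. z ^ p'_part CHAR('f) (card (carrier G)) = 1}"
    and hat_mult: "\<forall>x\<in>{x::'f. x ^ p'_part CHAR('f) (card (carrier G)) = 1}.
                   \<forall>y\<in>{x::'f. x ^ p'_part CHAR('f) (card (carrier G)) = 1}. hat (x * y) = hat x * hat y"
    and Ss_simple: "\<forall>S\<in>set Ss. is_simple G (fst S) (snd S)"
    and Ss_distinct: "\<forall>i<length Ss. \<forall>j<length Ss. i \<noteq> j \<longrightarrow>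
                        \<not> rep_iso G (fst (Ss ! i)) (snd (Ss ! i)) (fst (Ss ! j)) (snd (Ss ! j))"
    and Ss_all: "\<forall>d (\<rho> :: 'g \<Rightarrow> 'f mat). is_simple G d \<rho> \<longrightarrow>
                   (\<exists>i<length Ss. rep_iso G d \<rho> (fst (Ss ! i)) (snd (Ss ! i)))"
    and V_rep: "is_rep G n V"
    and g_reg: "p_regular G TYPE('f) g"
  shows "transpose_mat (s_vec hat Ss g) * map_mat of_nat (M_mat G Ss n V)
           = brauer_char hat V g \<cdot>\<^sub>m transpose_mat (s_vec hat Ss g)
       \<and> transpose_mat (s_vec hat Ss g) * map_mat of_int (L_mat G Ss n V)
           = (of_nat n - brauer_char hat V g) \<cdot>\<^sub>m transpose_mat (s_vec hat Ss g)"
proof -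
  let ?l = "length Ss"
  let ?q = "p'_part CHAR('f) (card (carrier G))"
  let ?RU = "{x::'f. x ^ ?q = 1}"
  let ?chi = "\<lambda>i. brauer_char hat (snd (Ss ! i)) g"
  let ?cV = "brauer_char hat V g"
  let ?M = "\<lambda>i j. comp_mult G (fst (Ss ! j) * n) (tensor_rep (snd (Ss ! j)) V) (fst (Ss ! i)) (snd (Ss ! i))"
  have g: "g \<in> carrier G" using g_reg by (simp add: p_regular_def)
  have repS: "is_rep G (fst (Ss ! i)) (snd (Ss ! i))" if "i < ?l" for i
    using Ss_simple that by (auto simp: is_simple_def)
  have col: "(\<Sum>i<?l. ?chi i * of_nat (?M i j)) = ?cV * ?chi j" if j: "j < ?l" for j
  proof -
    let ?e = "fst (Ss ! j)" and ?S = "snd (Ss ! j)"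
    have rS: "is_rep G ?e ?S" by (rule repS[OF j])
    have rT: "is_rep G (?e * n) (tensor_rep ?S V)" by (rule tensor_is_rep[OF rS V_rep])
    have Sg: "?S g \<in> carrier_mat ?e ?e" using rS g by (simp add: is_rep_def)
    have Vg: "V g \<in> carrier_mat n n" using V_rep g by (simp add: is_rep_def)
    have "brauer_char hat (tensor_rep ?S V) g = (\<Sum>i<?l. of_nat (?M i j) * ?chi i)"
      unfolding brauer_bcp by (rule module_char[OF grp rT g Ss_simple Ss_distinct Ss_all])
    moreover have "brauer_char hat (tensor_rep ?S V) g = ?chi j * ?cV"
      unfolding brauer_bcp tensor_rep_def
    proof (rule kron_brauer[OF Sg Vg hat_mult])
      show "\<forall>x. poly (char_poly (?S g)) x = 0 \<longrightarrow> x \<in> ?RU"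
        using root_unity[OF grp fin g_reg rS] by auto
      show "\<forall>x. poly (char_poly (V g)) x = 0 \<longrightarrow> x \<in> ?RU"
        using root_unity[OF grp fin g_reg V_rep] by auto
    qed
    ultimately show ?thesis by (simp add: mult.commute)
  qed
  have sv: "transpose_mat (s_vec hat Ss g) \<in> carrier_mat 1 ?l" by (simp add: s_vec_def)
  have sv_idx: "transpose_mat (s_vec hat Ss g) $$ (0, k) = ?chi k" if "k < ?l" for k
    using that by (simp add: s_vec_def)
  have Mc: "map_mat of_nat (M_mat G Ss n V) \<in> carrier_mat ?l ?l" by (simp add: M_mat_def)
  have M_idx: "map_mat of_nat (M_mat G Ss n V) $$ (k, j) = (of_nat (?M k j) :: complex)" if "k < ?l" "j < ?l" for k j
    using that by (simp add: M_mat_def)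
  have Lc: "map_mat of_int (L_mat G Ss n V) \<in> carrier_mat ?l ?l"
    by (rule carrier_matI) (simp_all add: L_mat_def M_mat_def)
  have L_idx: "map_mat of_int (L_mat G Ss n V) $$ (k, j) = (if k = j then of_nat n else 0) - (of_nat (?M k j) :: complex)"
    if "k < ?l" "j < ?l" for k j
    using that by (simp add: L_mat_def M_mat_def)
  have part1: "transpose_mat (s_vec hat Ss g) * map_mat of_nat (M_mat G Ss n V) = ?cV \<cdot>\<^sub>m transpose_mat (s_vec hat Ss g)"
  proof (rule eq_matI)
    fix i j assume i: "i < dim_row (?cV \<cdot>\<^sub>m transpose_mat (s_vec hat Ss g))" and j: "j < dim_col (?cV \<cdot>\<^sub>m transpose_mat (s_vec hat Ss g))"
    hence i0: "i = 0" and j': "j < ?l" using sv by auto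
    have "(transpose_mat (s_vec hat Ss g) * map_mat of_nat (M_mat G Ss n V)) $$ (i, j)
        = (\<Sum>k<?l. transpose_mat (s_vec hat Ss g) $$ (0, k) * map_mat of_nat (M_mat G Ss n V) $$ (k, j))"
      using sv Mc i0 j' by (subst mult_index_sum) auto
    also have "\<dots> = (\<Sum>k<?l. ?chi k * of_nat (?M k j))" using sv_idx M_idx j' by (intro sum.cong refl) auto
    also have "\<dots> = ?cV * ?chi j" by (rule col[OF j'])
    finally show "(transpose_mat (s_vec hat Ss g) * map_mat of_nat (M_mat G Ss n V)) $$ (i, j) = (?cV \<cdot>\<^sub>m transpose_mat (s_vec hat Ss g)) $$ (i, j)"
      using i0 j' sv sv_idx by simp
  qed (use sv Mc in auto)
  have part2: "transpose_mat (s_vec hat Ss g) * map_mat of_int (L_mat G Ss n V) = (of_nat n - ?cV) \<cdot>\<^sub>m transpose_mat (s_vec hat Ss g)"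
  proof (rule eq_matI)
    fix i j assume i: "i < dim_row ((of_nat n - ?cV) \<cdot>\<^sub>m transpose_mat (s_vec hat Ss g))" and j: "j < dim_col ((of_nat n - ?cV) \<cdot>\<^sub>m transpose_mat (s_vec hat Ss g))"
    hence i0: "i = 0" and j': "j < ?l" using sv by auto
    have "(transpose_mat (s_vec hat Ss g) * map_mat of_int (L_mat G Ss n V)) $$ (i, j)
        = (\<Sum>k<?l. transpose_mat (s_vec hat Ss g) $$ (0, k) * map_mat of_int (L_mat G Ss n V) $$ (k, j))"
      using sv Lc i0 j' by (subst mult_index_sum) auto
    also have "\<dots> = (\<Sum>k<?l. (if k = j then ?chi k * of_nat n else 0) - ?chi k * of_nat (?M k j))"
    proof (rule sum.cong[OF refl])
      fix k assume "k \<in> {..<?l}" hence k': "k < ?l" by simp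
      show "transpose_mat (s_vec hat Ss g) $$ (0, k) * map_mat of_int (L_mat G Ss n V) $$ (k, j)
          = (if k = j then ?chi k * of_nat n else 0) - ?chi k * of_nat (?M k j)"
        unfolding sv_idx[OF k'] L_idx[OF k' j'] by (simp add: right_diff_distrib)
    qed
    also have "\<dots> = (\<Sum>k<?l. if k = j then ?chi k * of_nat n else 0) - (\<Sum>k<?l. ?chi k * of_nat (?M k j))"
      by (rule sum_subtractf)
    also have "(\<Sum>k<?l. if k = j then ?chi k * of_nat n else 0) = ?chi j * of_nat n" using j' by (simp add: sum.delta')
    also have "(\<Sum>k<?l. ?chi k * of_nat (?M k j)) = ?cV * ?chi j" by (rule col[OF j'])
    finally show "(transpose_mat (s_vec hat Ss g) * map_mat of_int (L_mat G Ss n V)) $$ (i, j) = ((of_nat n - ?cV) \<cdot>\<^sub>m transpose_mat (s_vec hat Ss g)) $$ (i, j)"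
      using i0 j' sv sv_idx by (simp add: algebra_simps)
  qed (use sv Lc in auto)
  show ?thesis using part1 part2 by blast
qed


end
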